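(* Suppose there exist polynomials $p$ and $q$ and a constant $\gamma > 0$ such that $$\Omega(2^{\gamma n}/p(n)) \leq \chi(T^{\otimes n}) \leq O(q(n)2^{\gamma n}).$$ Then for every linear code $L\subseteq \mathbb{F}_2^m$ of block length $m$ and dimension $k < m/2$ we have $$\gamma \leq \frac{\log_2(\chi(\hat{L}))}{m - 2k}.$$
   Context: The stabilizer rank $\chi(\psi)$ of a state $\ket{\psi}$ is the minimum number $k$ of stabilizer states $\ket{\Phi_i}$ such that $\ket{\psi}=\sum_{i=1}^k c_i\ket{\Phi_i}$. Here $\ket{T} = 2^{-1/2}(\ket{0}+e^{i\pi/4}\ket{1})$ and $\ket{T^\perp} = Z\ket{T}$. For a linear space $L \subseteq \mathbb{F}_2^m$ of dimension $k$, the magic code state is $\ket{\hat{L}} = 2^{-k/2}\sum_{x \in L} \ket{\hat{x}}$, where for $x\in\mathbb{F}_2^m$, $\ket{\hat{x}} = \ket{\hat{x}_1}\otimes\cdots\otimes\ket{\hat{x}_m}$ with $\ket{\hat{0}} = \ket{T}$ and $\ket{\hat{1}} = \ket{T^\perp}$ (i.e. $x$ expanded in the magic basis $\{\ket{T},\ket{T^\perp}\}$). $\chi(\hat{L})$ denotes the stabilizer rank of $\ket{\hat{L}}$. *)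

theory Defs
  imports Complex_Main "HOL-Library.Landau_Symbols" "HOL-Computational_Algebra.Polynomial"
begin

text \<open>An n-qubit (unnormalised) vector is a function from bit strings (bool lists) to
  complex amplitudes; only strings of length n are meaningful (all states used below
  vanish on strings of any other length).\<close>

type_synonym qstate = "bool list \<Rightarrow> complex"

definition ket0 :: "nat \<Rightarrow> qstate" where
  "ket0 n = (\<lambda>x. if x = replicate n False then 1 else 0)"

definition hgate :: "nat \<Rightarrow> qstate \<Rightarrow> qstate" where
  "hgate j \<psi> = (\<lambda>x. (\<psi> (x[j := False]) + (if x ! j then -1 else 1) * \<psi> (x[j := True]))
                      / complex_of_real (sqrt 2))"

definition sgate :: "nat \<Rightarrow> qstate \<Rightarrow> qstate" where
  "sgate j \<psi> = (\<lambda>x. (if x ! j then \<i> else 1) * \<psi> x)"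

definition cnot :: "nat \<Rightarrow> nat \<Rightarrow> qstate \<Rightarrow> qstate" where
  "cnot a b \<psi> = (\<lambda>x. \<psi> (x[b := (x ! b \<noteq> x ! a)]))"

inductive_set stab_states :: "nat \<Rightarrow> qstate set" for n :: nat where
  init: "ket0 n \<in> stab_states n"
| H: "\<psi> \<in> stab_states n \<Longrightarrow> j < n \<Longrightarrow> hgate j \<psi> \<in> stab_states n"
| S: "\<psi> \<in> stab_states n \<Longrightarrow> j < n \<Longrightarrow> sgate j \<psi> \<in> stab_states n"
| CNOT: "\<psi> \<in> stab_states n \<Longrightarrow> a < n \<Longrightarrow> b < n \<Longrightarrow> a \<noteq> b \<Longrightarrow> cnot a b \<psi> \<in> stab_states n"

definition stab_rank :: "nat \<Rightarrow> qstate \<Rightarrow> nat" where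
  "stab_rank n \<psi> = (LEAST k. \<exists>c \<Phi>. (\<forall>i<k. \<Phi> i \<in> stab_states n) \<and>
                                   \<psi> = (\<lambda>x. \<Sum>i<k. c i * \<Phi> i x))"

definition omega :: complex where
  "omega = cis (pi / 4)"

definition T_tensor :: "nat \<Rightarrow> qstate" where
  "T_tensor n = (\<lambda>y. if length y = n then
       (\<Prod>j<n. (if y ! j then omega else 1) / complex_of_real (sqrt 2)) else 0)"

text \<open>Magic basis state |x^> = |x^_1> ... |x^_m>, |0^> = |T>, |1^> = |T^perp> = Z|T>.\<close>
definition magic_ket :: "nat \<Rightarrow> bool list \<Rightarrow> qstate" where
  "magic_ket m x = (\<lambda>y. if length y = m then
       (\<Prod>j<m. (if y ! j then (if x ! j then - omega else omega) else 1)
                 / complex_of_real (sqrt 2)) else 0)"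

text \<open>Linear codes L \<subseteq> F_2^m (vectors as bool lists of length m, addition = xor),
  of dimension k (over F_2 a subspace has dimension k iff it has 2^k elements).\<close>
definition xor_vec :: "bool list \<Rightarrow> bool list \<Rightarrow> bool list" where
  "xor_vec x y = map2 (\<noteq>) x y"

definition linear_code :: "nat \<Rightarrow> bool list set \<Rightarrow> bool" where
  "linear_code m L \<longleftrightarrow> L \<subseteq> {x. length x = m} \<and> replicate m False \<in> L \<and>
                        (\<forall>x\<in>L. \<forall>y\<in>L. xor_vec x y \<in> L)"

definition code_dim :: "bool list set \<Rightarrow> nat \<Rightarrow> bool" where
  "code_dim L k \<longleftrightarrow> card L = 2 ^ k"

definition magic_code_state :: "nat \<Rightarrow> nat \<Rightarrow> bool list set \<Rightarrow> qstate" where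
  "magic_code_state m k L = (\<lambda>y. complex_of_real (2 powr (- real k / 2)) *
                               (\<Sum>x\<in>L. magic_ket m x y))"

end

theory Submission
  imports Defs
begin


definition valid :: "nat \<Rightarrow> qstate \<Rightarrow> bool" where
  "valid n \<psi> \<longleftrightarrow> (\<forall>y. length y \<noteq> n \<longrightarrow> \<psi> y = 0)"

definition smul :: "complex \<Rightarrow> qstate \<Rightarrow> qstate" where
  "smul c \<psi> = (\<lambda>y. c * \<psi> y)"

definition sstab :: "nat \<Rightarrow> qstate set" where
  "sstab n = {smul c \<Phi> | c \<Phi>. \<Phi> \<in> stab_states n}"

lemma validD: "valid n \<psi> \<Longrightarrow> length y \<noteq> n \<Longrightarrow> \<psi> y = 0"
  by (simp add: valid_def)

lemma valid_hgate: "valid n \<psi> \<Longrightarrow> valid n (hgate j \<psi>)"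
  by (simp add: valid_def hgate_def)
lemma valid_sgate: "valid n \<psi> \<Longrightarrow> valid n (sgate j \<psi>)"
  by (simp add: valid_def sgate_def)
lemma valid_cnot: "valid n \<psi> \<Longrightarrow> valid n (cnot a b \<psi>)"
  by (simp add: valid_def cnot_def)
lemma valid_ket0: "valid n (ket0 n)"
  by (auto simp add: valid_def ket0_def)
lemma valid_smul: "valid n \<psi> \<Longrightarrow> valid n (smul c \<psi>)"
  by (simp add: valid_def smul_def)

lemma stab_valid: "\<psi> \<in> stab_states n \<Longrightarrow> valid n \<psi>"
  by (induction rule: stab_states.induct)
     (auto intro: valid_ket0 valid_hgate valid_sgate valid_cnot)

lemma sstab_valid: "\<psi> \<in> sstab n \<Longrightarrow> valid n \<psi>"
  by (auto simp: sstab_def intro: valid_smul stab_valid)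

lemma sstabI: "\<Phi> \<in> stab_states n \<Longrightarrow> smul c \<Phi> \<in> sstab n"
  unfolding sstab_def by blast

lemma sstabE: assumes "\<psi> \<in> sstab n" obtains c \<Phi> where "\<Phi> \<in> stab_states n" "\<psi> = smul c \<Phi>"
  using assms unfolding sstab_def by blast

lemma smul_1: "smul 1 \<psi> = \<psi>" by (simp add: smul_def)
lemma smul_smul: "smul a (smul b \<psi>) = smul (a*b) \<psi>" by (simp add: smul_def mult.assoc)

lemma stab_sstab: "\<psi> \<in> stab_states n \<Longrightarrow> \<psi> \<in> sstab n"
  using sstabI[of \<psi> n 1] by (simp add: smul_1)

lemma sstab_smul: "\<psi> \<in> sstab n \<Longrightarrow> smul c \<psi> \<in> sstab n"
  by (metis sstabE sstabI smul_smul)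

lemma zero_sstab: "(\<lambda>y. 0) \<in> sstab n"
proof -
  have "smul 0 (ket0 n) \<in> sstab n" by (rule sstabI, rule stab_states.init)
  then show ?thesis by (simp add: smul_def)
qed

lemma hgate_add: "hgate j (\<lambda>y. f y + g y) = (\<lambda>y. hgate j f y + hgate j g y)"
  by (auto simp: hgate_def add_divide_distrib algebra_simps)
lemma hgate_smul: "hgate j (smul c f) = smul c (hgate j f)"
  by (auto simp: hgate_def smul_def algebra_simps)
lemma sgate_add: "sgate j (\<lambda>y. f y + g y) = (\<lambda>y. sgate j f y + sgate j g y)"
  by (auto simp: sgate_def algebra_simps)
lemma sgate_smul: "sgate j (smul c f) = smul c (sgate j f)"
  by (auto simp: sgate_def smul_def algebra_simps)
lemma cnot_add: "cnot a b (\<lambda>y. f y + g y) = (\<lambda>y. cnot a b f y + cnot a b g y)"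
  by (auto simp: cnot_def)
lemma cnot_smul: "cnot a b (smul c f) = smul c (cnot a b f)"
  by (auto simp: cnot_def smul_def)

lemma sstab_hgate: "\<psi> \<in> sstab n \<Longrightarrow> j < n \<Longrightarrow> hgate j \<psi> \<in> sstab n"
  by (metis sstabE sstabI hgate_smul stab_states.H)
lemma sstab_sgate: "\<psi> \<in> sstab n \<Longrightarrow> j < n \<Longrightarrow> sgate j \<psi> \<in> sstab n"
  by (metis sstabE sstabI sgate_smul stab_states.S)
lemma sstab_cnot: "\<psi> \<in> sstab n \<Longrightarrow> a < n \<Longrightarrow> b < n \<Longrightarrow> a \<noteq> b \<Longrightarrow> cnot a b \<psi> \<in> sstab n"
  by (metis sstabE sstabI cnot_smul stab_states.CNOT)

lemma s2: "complex_of_real (sqrt 2) * complex_of_real (sqrt 2) = 2"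
  by (simp flip: of_real_mult)

lemma div_r2: "(X / complex_of_real (sqrt 2) + s * (Y / complex_of_real (sqrt 2))) / complex_of_real (sqrt 2) = (X + s * Y) / 2"
proof -
  define r where "r = complex_of_real (sqrt 2)"
  have r: "r * r = 2" "r \<noteq> 0" unfolding r_def using s2 by auto
  have "(X / r + s * (Y / r)) / r = (X + s * Y) / (r * r)"
    using r(2) by (simp add: field_simps)
  then show ?thesis using r(1) unfolding r_def by simp
qed

lemma hgate_hgate: assumes "valid n \<psi>" "j < n" shows "hgate j (hgate j \<psi>) = \<psi>"
proof
  fix y
  show "hgate j (hgate j \<psi>) y = \<psi> y"
  proof (cases "length y = n")
    case True
    then have jl: "j < length y" using assms by simp
    define A where "A = \<psi> (y[j := False])"
    define B where "B = \<psi> (y[j := True])"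
    have e: "hgate j (hgate j \<psi>) y = ((A + B) / complex_of_real (sqrt 2) + (if y ! j then -1 else 1) * ((A - B) / complex_of_real (sqrt 2))) / complex_of_real (sqrt 2)"
      unfolding hgate_def A_def B_def using jl by (simp add: algebra_simps)
    have e2: "\<dots> = ((A + B) + (if y ! j then -1 else 1) * (A - B)) / 2"
      using div_r2[of "A + B" "if y ! j then -1 else 1" "A - B"] by simp
    show ?thesis
    proof (cases "y ! j")
      case True
      then have "y[j := True] = y" using list_update_id[of y j] by simp
      then show ?thesis using True e e2 B_def by simp
    next
      case False
      then have "y[j := False] = y" using list_update_id[of y j] by simp
      then show ?thesis using False e e2 A_def by simp
    qed
  next
    case False
    then show ?thesis using assms valid_hgate[of n \<psi> j] valid_hgate[of n "hgate j \<psi>" j] by (simp add: validD)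
  qed
qed

lemma cnot_cnot: assumes "a \<noteq> b" shows "cnot a b (cnot a b \<psi>) = \<psi>"
proof
  fix y
  show "cnot a b (cnot a b \<psi>) y = \<psi> y"
  proof (cases "b < length y")
    case True
    have "((y ! b = (\<not> y ! a)) = (\<not> y ! a)) = y ! b" by auto
    then show ?thesis using assms True
      by (simp add: cnot_def)
  next
    case False
    then show ?thesis by (simp add: cnot_def list_update_beyond)
  qed
qed

lemma sgate4: "sgate j (sgate j (sgate j (sgate j \<psi>))) = \<psi>"
  by (auto simp: sgate_def)


definition sg :: "bool \<Rightarrow> complex" where "sg b = (if b then -1 else 1)"

lemma sg_sq: "sg b * sg b = 1" by (simp add: sg_def)
lemma sg_simps[simp]: "sg True = -1" "sg False = 1" by (simp_all add: sg_def)

definition zsv :: "nat \<Rightarrow> (nat \<Rightarrow> bool) \<Rightarrow> (nat \<Rightarrow> bool) \<Rightarrow> complex" where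
  "zsv n z x = (\<Prod>j<n. sg (z j \<and> x j))"

definition flip :: "(nat \<Rightarrow> bool) \<Rightarrow> bool list \<Rightarrow> bool list" where
  "flip xv y = map (\<lambda>j. y ! j \<noteq> xv j) [0..<length y]"

definition pauli :: "nat \<Rightarrow> nat \<times> (nat \<Rightarrow> bool) \<times> (nat \<Rightarrow> bool) \<Rightarrow> qstate \<Rightarrow> qstate" where
  "pauli n P \<psi> = (case P of (r, xv, zv) \<Rightarrow>
     (\<lambda>y. if length y = n then \<i> ^ r * zsv n zv (nth y) * \<psi> (flip xv y) else 0))"

lemma pauli_simp: "pauli n (r, xv, zv) \<psi> y = (if length y = n then \<i> ^ r * zsv n zv (nth y) * \<psi> (flip xv y) else 0)"
  by (simp add: pauli_def)

lemma flip_length[simp]: "length (flip xv y) = length y" by (simp add: flip_def)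
lemma flip_nth[simp]: "j < length y \<Longrightarrow> flip xv y ! j = (y ! j \<noteq> xv j)" by (simp add: flip_def)

lemma flip_update: "j < length y \<Longrightarrow> flip xv (y[j := c]) = (flip xv y)[j := (c \<noteq> xv j)]"
  by (rule nth_equalityI) (auto simp: nth_list_update)

lemma flip_fupd: "j < length y \<Longrightarrow> flip (xv(j := b)) y = (flip xv y)[j := (y ! j \<noteq> b)]"
  by (rule nth_equalityI) (auto simp: nth_list_update)

lemma flip_flip: "flip xv (flip xv' y) = flip (\<lambda>i. xv i \<noteq> xv' i) y"
  by (rule nth_equalityI) auto

lemma flip_false: "flip (\<lambda>_. False) y = y"
  by (rule nth_equalityI) auto

lemma zsv_pm: "zsv n z x = 1 \<or> zsv n z x = -1"
proof (induction n)
  case 0 then show ?case by (simp add: zsv_def)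
next
  case (Suc n)
  have "zsv (Suc n) z x = zsv n z x * sg (z n \<and> x n)" by (simp add: zsv_def)
  then show ?case using Suc by (auto simp: sg_def)
qed

lemma zsv_sq: "zsv n z x * zsv n z x = 1"
  using zsv_pm[of n z x] by auto

lemma zsv_remove: "j < n \<Longrightarrow> zsv n z x = sg (z j \<and> x j) * (\<Prod>i\<in>{..<n}-{j}. sg (z i \<and> x i))"
  unfolding zsv_def by (simp add: prod.remove)

lemma zsv_local:
  assumes "j < n" "\<And>i. i < n \<Longrightarrow> i \<noteq> j \<Longrightarrow> (z i \<and> x i) = (z' i \<and> x' i)"
  shows "zsv n z x = zsv n z' x' * sg (z j \<and> x j) * sg (z' j \<and> x' j)"
proof -
  have r: "(\<Prod>i\<in>{..<n}-{j}. sg (z i \<and> x i)) = (\<Prod>i\<in>{..<n}-{j}. sg (z' i \<and> x' i))"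
    using assms(2) by (intro prod.cong) auto
  show ?thesis using zsv_remove[OF assms(1), of z x] zsv_remove[OF assms(1), of z' x'] r
    by (simp add: algebra_simps sg_sq)
qed

lemma zsv_local2:
  assumes "a < n" "b < n" "a \<noteq> b" "\<And>i. i < n \<Longrightarrow> i \<noteq> a \<Longrightarrow> i \<noteq> b \<Longrightarrow> (z i \<and> x i) = (z' i \<and> x' i)"
  shows "zsv n z x = zsv n z' x' * sg (z a \<and> x a) * sg (z' a \<and> x' a) * sg (z b \<and> x b) * sg (z' b \<and> x' b)"
proof -
  define z1 where "z1 = z'(a := z a)"
  define x1 where "x1 = x'(a := x a)"
  have e1: "zsv n z x = zsv n z1 x1 * sg (z b \<and> x b) * sg (z1 b \<and> x1 b)"
    using assms by (intro zsv_local) (auto simp: z1_def x1_def)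
  have e2: "zsv n z1 x1 = zsv n z' x' * sg (z1 a \<and> x1 a) * sg (z' a \<and> x' a)"
    using assms by (intro zsv_local) (auto simp: z1_def x1_def)
  show ?thesis using e1 e2 assms(3) by (simp add: z1_def x1_def algebra_simps)
qed

lemma valid_pauli: "valid n (pauli n P \<psi>)"
  by (cases P) (simp add: valid_def pauli_simp)

lemma pauli_add: "pauli n P (\<lambda>y. f y + g y) = (\<lambda>y. pauli n P f y + pauli n P g y)"
  by (cases P) (auto simp: pauli_simp algebra_simps)
lemma pauli_diff: "pauli n P (\<lambda>y. f y - g y) = (\<lambda>y. pauli n P f y - pauli n P g y)"
  by (cases P) (auto simp: pauli_simp algebra_simps)
lemma pauli_smul: "pauli n P (smul c f) = smul c (pauli n P f)"
  by (cases P) (auto simp: pauli_simp smul_def algebra_simps)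

lemma pauli_id: "valid n \<psi> \<Longrightarrow> pauli n (r, \<lambda>_. False, \<lambda>_. False) \<psi> = smul (\<i> ^ r) \<psi>"
  by (auto simp: pauli_simp smul_def zsv_def flip_false validD)

lemma i_pow_mod: "\<i> ^ (r mod 4) = \<i> ^ r"
proof -
  have i4: "\<i> ^ 4 = 1"
  proof -
    have "(\<i>::complex) ^ 4 = (\<i> ^ 2) ^ 2" by (simp flip: power_mult)
    then show ?thesis by simp
  qed
  have "\<i> ^ r = \<i> ^ (4 * (r div 4) + r mod 4)" by (simp only: mult_div_mod_eq)
  also have "\<dots> = (\<i> ^ 4) ^ (r div 4) * \<i> ^ (r mod 4)" by (simp only: power_add power_mult)
  also have "\<dots> = \<i> ^ (r mod 4)" using i4 by simp
  finally show ?thesis by (rule sym)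
qed

lemma pauli_comp: "\<exists>R. \<forall>\<psi>. pauli n P (pauli n Q \<psi>) = pauli n R \<psi>"
proof -
  obtain r xv zv where P: "P = (r, xv, zv)" by (cases P)
  obtain r' xv' zv' where Q: "Q = (r', xv', zv')" by (cases Q)
  define c where "c = zsv n zv' xv"
  have zsplit: "zsv n zv' (nth (flip xv y)) = c * zsv n zv' (nth y)" if "length y = n" for y
  proof -
    have "(\<Prod>j<n. sg (zv' j \<and> flip xv y ! j)) = (\<Prod>j<n. sg (zv' j \<and> xv j) * sg (zv' j \<and> y ! j))"
      using that by (intro prod.cong) (auto simp: sg_def)
    also have "\<dots> = (\<Prod>j<n. sg (zv' j \<and> xv j)) * (\<Prod>j<n. sg (zv' j \<and> y ! j))"
      by (rule prod.distrib)
    finally show ?thesis unfolding c_def zsv_def .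
  qed
  have zmul0: "zsv n zv (nth y) * zsv n zv' (nth y) = zsv n (\<lambda>i. zv i \<noteq> zv' i) (nth y)" for y
  proof -
    have "(\<Prod>j<n. sg (zv j \<and> y ! j) * sg (zv' j \<and> y ! j)) = (\<Prod>j<n. sg ((zv j \<noteq> zv' j) \<and> y ! j))"
      by (intro prod.cong) (auto simp: sg_def)
    then show ?thesis unfolding zsv_def by (simp add: prod.distrib)
  qed
  have zmul: "zsv n (\<lambda>i. zv i \<noteq> zv' i) (nth y) = zsv n zv (nth y) * zsv n zv' (nth y)" for y
    using zmul0[of y] by simp
  obtain e where e: "c = \<i> ^ e"
    using zsv_pm[of n zv' xv] unfolding c_def by (metis power_0 power2_i power2_eq_square)
  show ?thesis
  proof (intro exI allI)
    fix \<psi>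
    show "pauli n P (pauli n Q \<psi>) = pauli n (r + r' + e, \<lambda>i. xv' i \<noteq> xv i, \<lambda>i. zv i \<noteq> zv' i) \<psi>"
    proof
      fix y
      show "pauli n P (pauli n Q \<psi>) y = pauli n (r + r' + e, \<lambda>i. xv' i \<noteq> xv i, \<lambda>i. zv i \<noteq> zv' i) \<psi> y"
      proof (cases "length y = n")
        case True
        then show ?thesis using zsplit[of y] zmul[of y] e
          by (simp add: P Q pauli_simp flip_flip power_add algebra_simps)
      next
        case False
        then show ?thesis by (simp add: P Q pauli_simp)
      qed
    qed
  qed
qed


lemma hgate_pauli:
  assumes "j < n"
  shows "hgate j (pauli n (r, xv, zv) \<psi>) =
         pauli n (r + (if xv j \<and> zv j then 2 else 0), xv(j := zv j), zv(j := xv j)) (hgate j \<psi>)"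
proof
  fix y
  show "hgate j (pauli n (r, xv, zv) \<psi>) y =
         pauli n (r + (if xv j \<and> zv j then 2 else 0), xv(j := zv j), zv(j := xv j)) (hgate j \<psi>) y"
  proof (cases "length y = n")
    case False
    then show ?thesis by (simp add: hgate_def pauli_simp)
  next
    case True
    then have jl: "j < length y" using assms by simp
    define u where "u = flip xv y"
    define Z where "Z = zsv n (zv(j := xv j)) (nth y)"
    have zc: "zsv n zv (nth (y[j := c])) = Z * sg (zv j \<and> c) * sg (xv j \<and> y ! j)" for c
    proof -
      have "zsv n zv (nth (y[j := c])) = zsv n (zv(j := xv j)) (nth y) * sg (zv j \<and> nth (y[j := c]) j) * sg ((zv(j := xv j)) j \<and> nth y j)"
        using assms by (rule zsv_local) (auto simp: nth_list_update)
      then show ?thesis using jl unfolding Z_def by simp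
    qed
    have fl: "flip xv (y[j := c]) = u[j := (c \<noteq> xv j)]" for c
      unfolding u_def using jl by (rule flip_update)
    have w: "flip (xv(j := zv j)) y = u[j := (y ! j \<noteq> zv j)]"
      unfolding u_def using jl by (rule flip_fupd)
    have lu: "length u = n" using True u_def by simp
    have L: "hgate j (pauli n (r, xv, zv) \<psi>) y =
      (\<i> ^ r * (Z * sg (zv j \<and> False) * sg (xv j \<and> y ! j)) * \<psi> (u[j := xv j]) +
       (if y ! j then -1 else 1) * (\<i> ^ r * (Z * sg (zv j \<and> True) * sg (xv j \<and> y ! j)) * \<psi> (u[j := (\<not> xv j)])))
       / complex_of_real (sqrt 2)"
      unfolding hgate_def using True by (simp add: pauli_simp zc fl)
    have R: "pauli n (r + (if xv j \<and> zv j then 2 else 0), xv(j := zv j), zv(j := xv j)) (hgate j \<psi>) y =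
       \<i> ^ (r + (if xv j \<and> zv j then 2 else 0)) * Z *
       ((\<psi> (u[j := False]) + (if y ! j \<noteq> zv j then -1 else 1) * \<psi> (u[j := True])) / complex_of_real (sqrt 2))"
      unfolding hgate_def using True lu jl by (simp add: pauli_simp w Z_def)
    show ?thesis unfolding L R
      by (cases "xv j"; cases "zv j"; cases "y ! j") (simp_all add: power_add field_simps)
  qed
qed

lemma sgate_pauli:
  assumes "j < n"
  shows "sgate j (pauli n (r, xv, zv) \<psi>) =
         pauli n (r + (if xv j then 3 else 0), xv, zv(j := (zv j \<noteq> xv j))) (sgate j \<psi>)"
proof
  fix y
  show "sgate j (pauli n (r, xv, zv) \<psi>) y =
         pauli n (r + (if xv j then 3 else 0), xv, zv(j := (zv j \<noteq> xv j))) (sgate j \<psi>) y"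
  proof (cases "length y = n")
    case False
    then show ?thesis by (simp add: sgate_def pauli_simp)
  next
    case True
    then have jl: "j < length y" using assms by simp
    define Z where "Z = zsv n (zv(j := (zv j \<noteq> xv j))) (nth y)"
    have zc: "zsv n zv (nth y) = Z * sg (zv j \<and> y ! j) * sg ((zv j \<noteq> xv j) \<and> y ! j)"
    proof -
      have "zsv n zv (nth y) = zsv n (zv(j := (zv j \<noteq> xv j))) (nth y) * sg (zv j \<and> nth y j) * sg ((zv(j := (zv j \<noteq> xv j))) j \<and> nth y j)"
        using assms by (rule zsv_local) auto
      then show ?thesis unfolding Z_def by simp
    qed
    have i3: "\<i> ^ 3 = - \<i>" by (simp add: power3_eq_cube)
    have L: "sgate j (pauli n (r, xv, zv) \<psi>) y = (if y ! j then \<i> else 1) * (\<i> ^ r * (Z * sg (zv j \<and> y ! j) * sg ((zv j \<noteq> xv j) \<and> y ! j)) * \<psi> (flip xv y))"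
      using True by (simp add: sgate_def pauli_simp zc)
    have R: "pauli n (r + (if xv j then 3 else 0), xv, zv(j := (zv j \<noteq> xv j))) (sgate j \<psi>) y
       = \<i> ^ (r + (if xv j then 3 else 0)) * Z * ((if (y ! j \<noteq> xv j) then \<i> else 1) * \<psi> (flip xv y))"
      using True jl by (simp add: sgate_def pauli_simp Z_def)
    show ?thesis unfolding L R
      by (cases "xv j"; cases "zv j"; cases "y ! j") (simp_all add: power_add i3 algebra_simps)
  qed
qed

lemma cnot_pauli:
  assumes "a < n" "b < n" "a \<noteq> b"
  shows "cnot a b (pauli n (r, xv, zv) \<psi>) =
         pauli n (r, xv(b := (xv b \<noteq> xv a)), zv(a := (zv a \<noteq> zv b))) (cnot a b \<psi>)"
proof
  fix y
  show "cnot a b (pauli n (r, xv, zv) \<psi>) y =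
         pauli n (r, xv(b := (xv b \<noteq> xv a)), zv(a := (zv a \<noteq> zv b))) (cnot a b \<psi>) y"
  proof (cases "length y = n")
    case False
    then show ?thesis by (simp add: cnot_def pauli_simp)
  next
    case True
    then have al: "a < length y" and bl: "b < length y" using assms by auto
    define y' where "y' = y[b := (y ! b \<noteq> y ! a)]"
    define w where "w = flip (xv(b := (xv b \<noteq> xv a))) y"
    have fl: "flip xv y' = w[b := (w ! b \<noteq> w ! a)]"
      unfolding y'_def w_def using al bl assms(3)
      by (intro nth_equalityI) (auto simp: nth_list_update)
    define Z where "Z = zsv n (zv(a := (zv a \<noteq> zv b))) (nth y)"
    have zc: "zsv n zv (nth y') = Z * sg (zv a \<and> y ! a) * sg ((zv a \<noteq> zv b) \<and> y ! a)
               * sg (zv b \<and> (y ! b \<noteq> y ! a)) * sg (zv b \<and> y ! b)"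
    proof -
      have "zsv n zv (nth y') = zsv n (zv(a := (zv a \<noteq> zv b))) (nth y) * sg (zv a \<and> nth y' a) * sg ((zv(a := (zv a \<noteq> zv b))) a \<and> nth y a)
         * sg (zv b \<and> nth y' b) * sg ((zv(a := (zv a \<noteq> zv b))) b \<and> nth y b)"
        using assms by (rule zsv_local2) (auto simp: nth_list_update y'_def)
      then show ?thesis unfolding Z_def y'_def using al bl assms(3) by (simp add: nth_list_update)
    qed
    have L: "cnot a b (pauli n (r, xv, zv) \<psi>) y = \<i> ^ r * zsv n zv (nth y') * \<psi> (flip xv y')"
      using True by (simp add: cnot_def pauli_simp y'_def)
    have R: "pauli n (r, xv(b := (xv b \<noteq> xv a)), zv(a := (zv a \<noteq> zv b))) (cnot a b \<psi>) y =
             \<i> ^ r * Z * \<psi> (w[b := (w ! b \<noteq> w ! a)])"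
      using True by (simp add: cnot_def pauli_simp Z_def w_def)
    show ?thesis unfolding L R zc fl
      by (cases "zv a"; cases "zv b"; cases "y ! a"; cases "y ! b") simp_all
  qed
qed

definition fwd :: "nat \<Rightarrow> (qstate \<Rightarrow> qstate) \<Rightarrow> bool" where
  "fwd n U \<longleftrightarrow> (\<forall>P. \<exists>P'. \<forall>\<psi>. valid n \<psi> \<longrightarrow> U (pauli n P \<psi>) = pauli n P' (U \<psi>))"
definition bwd :: "nat \<Rightarrow> (qstate \<Rightarrow> qstate) \<Rightarrow> bool" where
  "bwd n U \<longleftrightarrow> (\<forall>P. \<exists>P'. \<forall>\<psi>. valid n \<psi> \<longrightarrow> pauli n P (U \<psi>) = U (pauli n P' \<psi>))"

lemma fwd_hgate: "j < n \<Longrightarrow> fwd n (hgate j)"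
  unfolding fwd_def by (metis hgate_pauli prod_cases3)
lemma fwd_sgate: "j < n \<Longrightarrow> fwd n (sgate j)"
  unfolding fwd_def by (metis sgate_pauli prod_cases3)
lemma fwd_cnot: "a < n \<Longrightarrow> b < n \<Longrightarrow> a \<noteq> b \<Longrightarrow> fwd n (cnot a b)"
  unfolding fwd_def by (metis cnot_pauli prod_cases3)

lemma bwd_invol:
  assumes "fwd n U" "\<And>\<psi>. valid n \<psi> \<Longrightarrow> U (U \<psi>) = \<psi>" "\<And>\<psi>. valid n \<psi> \<Longrightarrow> valid n (U \<psi>)"
  shows "bwd n U"
  unfolding bwd_def
proof
  fix P
  obtain P' where P': "\<And>\<psi>. valid n \<psi> \<Longrightarrow> U (pauli n P \<psi>) = pauli n P' (U \<psi>)"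
    using assms(1) unfolding fwd_def by blast
  show "\<exists>P'. \<forall>\<psi>. valid n \<psi> \<longrightarrow> pauli n P (U \<psi>) = U (pauli n P' \<psi>)"
  proof (intro exI allI impI)
    fix \<psi> assume v: "valid n \<psi>"
    have "pauli n P (U \<psi>) = U (U (pauli n P (U \<psi>)))" using assms(2) valid_pauli by metis
    also have "\<dots> = U (pauli n P' (U (U \<psi>)))" using P' assms(3)[OF v] by simp
    also have "\<dots> = U (pauli n P' \<psi>)" using assms(2)[OF v] by simp
    finally show "pauli n P (U \<psi>) = U (pauli n P' \<psi>)" .
  qed
qed

lemma bwd_hgate: "j < n \<Longrightarrow> bwd n (hgate j)"
  by (rule bwd_invol) (auto intro: fwd_hgate hgate_hgate valid_hgate)
lemma bwd_cnot: "a < n \<Longrightarrow> b < n \<Longrightarrow> a \<noteq> b \<Longrightarrow> bwd n (cnot a b)"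
  by (rule bwd_invol) (auto intro: fwd_cnot cnot_cnot valid_cnot)

lemma bwd_sgate: assumes "j < n" shows "bwd n (sgate j)"
  unfolding bwd_def
proof
  fix P
  have f: "fwd n (sgate j)" using assms by (rule fwd_sgate)
  obtain P1 where P1: "\<And>\<psi>. valid n \<psi> \<Longrightarrow> sgate j (pauli n P \<psi>) = pauli n P1 (sgate j \<psi>)"
    using f unfolding fwd_def by blast
  obtain P2 where P2: "\<And>\<psi>. valid n \<psi> \<Longrightarrow> sgate j (pauli n P1 \<psi>) = pauli n P2 (sgate j \<psi>)"
    using f unfolding fwd_def by blast
  obtain P3 where P3: "\<And>\<psi>. valid n \<psi> \<Longrightarrow> sgate j (pauli n P2 \<psi>) = pauli n P3 (sgate j \<psi>)"
    using f unfolding fwd_def by blast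
  show "\<exists>P'. \<forall>\<psi>. valid n \<psi> \<longrightarrow> pauli n P (sgate j \<psi>) = sgate j (pauli n P' \<psi>)"
  proof (intro exI allI impI)
    fix \<psi> assume v: "valid n \<psi>"
    let ?S = "sgate j"
    have vs: "valid n (?S \<psi>)" "valid n (?S (?S \<psi>))" "valid n (?S (?S (?S \<psi>)))"
      using v by (auto intro: valid_sgate)
    have "pauli n P (?S \<psi>) = ?S (?S (?S (?S (pauli n P (?S \<psi>)))))" by (simp add: sgate4)
    also have "\<dots> = ?S (?S (?S (pauli n P1 (?S (?S \<psi>)))))" using P1 vs by simp
    also have "\<dots> = ?S (?S (pauli n P2 (?S (?S (?S \<psi>)))))" using P2 vs by simp
    also have "\<dots> = ?S (pauli n P3 (?S (?S (?S (?S \<psi>)))))" using P3 vs by simp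
    also have "\<dots> = ?S (pauli n P3 \<psi>)" by (simp add: sgate4)
    finally show "pauli n P (?S \<psi>) = ?S (pauli n P3 \<psi>)" .
  qed
qed


definition basis :: "bool list \<Rightarrow> qstate" where
  "basis w = (\<lambda>y. if y = w then 1 else 0)"

lemma ket0_basis: "ket0 n = basis (replicate n False)"
  by (simp add: ket0_def basis_def)

lemma zsv_cong: "(\<And>i. i < n \<Longrightarrow> x i = x' i) \<Longrightarrow> zsv n z x = zsv n z x'"
  unfolding zsv_def by (intro prod.cong) auto

lemma zsv_false: "zsv n z (\<lambda>_. False) = 1"
  by (simp add: zsv_def)

lemma pauli_ket0: "pauli n (r, xv, zv) (ket0 n) = smul (\<i> ^ r * zsv n zv xv) (basis (map xv [0..<n]))"
proof
  fix y
  show "pauli n (r, xv, zv) (ket0 n) y = smul (\<i> ^ r * zsv n zv xv) (basis (map xv [0..<n])) y"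
  proof (cases "length y = n")
    case True
    have eq: "(flip xv y = replicate n False) \<longleftrightarrow> (y = map xv [0..<n])"
      using True by (auto simp: list_eq_iff_nth_eq)
    have "y = map xv [0..<n] \<Longrightarrow> zsv n zv (nth y) = zsv n zv xv"
      by (rule zsv_cong) auto
    then show ?thesis using True eq by (auto simp: pauli_simp ket0_basis basis_def smul_def)
  next
    case False
    then show ?thesis by (auto simp: pauli_simp basis_def smul_def)
  qed
qed

lemma zsv_ipow: "\<exists>q. \<i> ^ r * zsv n z x = \<i> ^ q"
proof (cases "zsv n z x = 1")
  case True then show ?thesis by auto
next
  case False
  then have "zsv n z x = \<i> ^ 2" using zsv_pm[of n z x] by simp
  then show ?thesis by (metis power_add)
qed

definition xgate :: "nat \<Rightarrow> qstate \<Rightarrow> qstate" where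
  "xgate a \<psi> = (\<lambda>y. \<psi> (y[a := (\<not> y ! a)]))"

lemma xgate_hs: assumes "valid n \<psi>" "a < n"
  shows "hgate a (sgate a (sgate a (hgate a \<psi>))) = xgate a \<psi>"
proof
  fix y
  show "hgate a (sgate a (sgate a (hgate a \<psi>))) y = xgate a \<psi> y"
  proof (cases "length y = n")
    case True
    then have al: "a < length y" using assms by simp
    define A where "A = \<psi> (y[a := False])"
    define B where "B = \<psi> (y[a := True])"
    have e: "hgate a (sgate a (sgate a (hgate a \<psi>))) y =
      ((A + B) / complex_of_real (sqrt 2) + (- (if y ! a then -1 else 1)) * ((A - B) / complex_of_real (sqrt 2))) / complex_of_real (sqrt 2)"
      unfolding hgate_def sgate_def A_def B_def using al by (simp add: algebra_simps)
    have e2: "\<dots> = ((A + B) + (- (if y ! a then -1 else 1)) * (A - B)) / 2"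
      by (rule div_r2)
    show ?thesis
      using e e2 by (cases "y ! a") (auto simp: xgate_def A_def B_def)
  next
    case False
    have "valid n (hgate a (sgate a (sgate a (hgate a \<psi>))))"
      by (intro valid_hgate valid_sgate) (rule assms(1))
    then show ?thesis using assms False
      by (simp add: validD xgate_def)
  qed
qed

lemma stab_xgate: "\<psi> \<in> stab_states n \<Longrightarrow> a < n \<Longrightarrow> xgate a \<psi> \<in> stab_states n"
  using xgate_hs[OF stab_valid] by (metis stab_states.H stab_states.S)

lemma valid_xgate: "valid n \<psi> \<Longrightarrow> valid n (xgate a \<psi>)"
  by (simp add: valid_def xgate_def)

lemma xgate_pauli: "valid n \<psi> \<Longrightarrow> a < n \<Longrightarrow> xgate a \<psi> = pauli n (0, \<lambda>i. i = a, \<lambda>_. False) \<psi>"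
proof
  fix y assume v: "valid n \<psi>" and a: "a < n"
  show "xgate a \<psi> y = pauli n (0, \<lambda>i. i = a, \<lambda>_. False) \<psi> y"
  proof (cases "length y = n")
    case True
    have "flip (\<lambda>i. i = a) y = y[a := (\<not> y ! a)]"
      using True a by (intro nth_equalityI) (auto simp: nth_list_update)
    then show ?thesis using True by (simp add: xgate_def pauli_simp zsv_def)
  next
    case False
    then show ?thesis using v by (simp add: xgate_def pauli_simp validD)
  qed
qed

lemma spow: "(sgate j ^^ q) \<psi> y = (if y ! j then \<i> ^ q else 1) * \<psi> y"
  by (induction q) (auto simp: sgate_def)

lemma stab_spow: "\<psi> \<in> stab_states n \<Longrightarrow> j < n \<Longrightarrow> (sgate j ^^ q) \<psi> \<in> stab_states n"
  by (induction q) (auto intro: stab_states.S)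

definition cchain :: "nat \<Rightarrow> nat list \<Rightarrow> qstate \<Rightarrow> qstate" where
  "cchain j ts \<psi> = foldr (\<lambda>t. cnot j t) ts \<psi>"

lemma cchain_eval:
  assumes "distinct ts" "j \<notin> set ts"
  shows "cchain j ts \<psi> y = \<psi> (map (\<lambda>i. y ! i \<noteq> (i \<in> set ts \<and> y ! j)) [0..<length y])"
  using assms
proof (induction ts arbitrary: y)
  case Nil
  then show ?case by (simp add: cchain_def map_nth)
next
  case (Cons t ts)
  have "cchain j (t # ts) \<psi> y = cchain j ts \<psi> (y[t := (y ! t \<noteq> y ! j)])"
    by (simp add: cchain_def cnot_def)
  also have "\<dots> = \<psi> (map (\<lambda>i. y[t := (y ! t \<noteq> y ! j)] ! i \<noteq> (i \<in> set ts \<and> y[t := (y ! t \<noteq> y ! j)] ! j)) [0..<length y])"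
    using Cons by simp
  also have "map (\<lambda>i. y[t := (y ! t \<noteq> y ! j)] ! i \<noteq> (i \<in> set ts \<and> y[t := (y ! t \<noteq> y ! j)] ! j)) [0..<length y]
     = map (\<lambda>i. y ! i \<noteq> (i \<in> set (t # ts) \<and> y ! j)) [0..<length y]"
  proof (intro nth_equalityI)
    fix i assume "i < length (map (\<lambda>i. y[t := (y ! t \<noteq> y ! j)] ! i \<noteq> (i \<in> set ts \<and> y[t := (y ! t \<noteq> y ! j)] ! j)) [0..<length y])"
    then have i: "i < length y" by simp
    show "map (\<lambda>i. y[t := (y ! t \<noteq> y ! j)] ! i \<noteq> (i \<in> set ts \<and> y[t := (y ! t \<noteq> y ! j)] ! j)) [0..<length y] ! i
      = map (\<lambda>i. y ! i \<noteq> (i \<in> set (t # ts) \<and> y ! j)) [0..<length y] ! i"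
      using Cons.prems i by (cases "i = t") (auto simp: nth_list_update_neq)
  qed simp
  finally show ?case .
qed

lemma stab_cchain: "\<psi> \<in> stab_states n \<Longrightarrow> j < n \<Longrightarrow> \<forall>t\<in>set ts. t < n \<and> t \<noteq> j \<Longrightarrow> cchain j ts \<psi> \<in> stab_states n"
  by (induction ts) (auto simp: cchain_def intro: stab_states.CNOT)

lemma two_basis_sstab:
  assumes "j0 < n" "xv j0"
  shows "(\<lambda>y. basis (replicate n False) y + \<i> ^ q * basis (map xv [0..<n]) y) \<in> sstab n"
proof -
  define ts where "ts = filter (\<lambda>t. xv t \<and> t \<noteq> j0) [0..<n]"
  define \<Gamma> where "\<Gamma> = cchain j0 ts ((sgate j0 ^^ q) (hgate j0 (ket0 n)))"
  have st: "\<Gamma> \<in> stab_states n" unfolding \<Gamma>_def ts_def using assms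
    by (intro stab_cchain stab_spow stab_states.H stab_states.init) auto
  have dts: "distinct ts" "j0 \<notin> set ts" unfolding ts_def by auto
  have tsm: "i \<in> set ts \<longleftrightarrow> xv i \<and> i \<noteq> j0 \<and> i < n" for i unfolding ts_def by auto
  have hk: "hgate j0 (ket0 n) w = (if w[j0 := False] = replicate n False then 1 else 0) / complex_of_real (sqrt 2)"
    if "length w = n" for w
  proof -
    have "w[j0 := True] \<noteq> replicate n False"
      using that assms(1) by (metis length_list_update nth_list_update_eq nth_replicate)
    then show ?thesis unfolding hgate_def ket0_def by simp
  qed
  have G: "\<Gamma> = smul (1 / complex_of_real (sqrt 2)) (\<lambda>y. basis (replicate n False) y + \<i> ^ q * basis (map xv [0..<n]) y)"
  proof
    fix y
    show "\<Gamma> y = smul (1 / complex_of_real (sqrt 2)) (\<lambda>y. basis (replicate n False) y + \<i> ^ q * basis (map xv [0..<n]) y) y"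
    proof (cases "length y = n")
      case False
      have "valid n \<Gamma>" using st by (rule stab_valid)
      then show ?thesis using False by (auto simp: validD smul_def basis_def)
    next
      case True
      define g where "g = map (\<lambda>i. y ! i \<noteq> (i \<in> set ts \<and> y ! j0)) [0..<length y]"
      have lg: "length g = n" using True g_def by simp
      have gj: "g ! j0 = y ! j0" using True assms(1) dts(2) by (simp add: g_def)
      have Gy: "\<Gamma> y = (if y ! j0 then \<i> ^ q else 1) * ((if g[j0 := False] = replicate n False then 1 else 0) / complex_of_real (sqrt 2))"
        unfolding \<Gamma>_def using cchain_eval[OF dts] spow hk[OF lg] gj g_def by simp
      show ?thesis
      proof (cases "y ! j0")
        case False
        have "g = y" unfolding g_def using False by (intro nth_equalityI) auto
        moreover have "y[j0 := False] = y" using False list_update_id[of y j0] by simp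
        moreover have "y \<noteq> map xv [0..<n]" using False assms by auto
        ultimately show ?thesis using Gy False by (simp add: smul_def basis_def)
      next
        case True2: True
        have "(g[j0 := False] = replicate n False) \<longleftrightarrow> (y = map xv [0..<n])"
          unfolding g_def using True True2 assms tsm
          by (auto simp: list_eq_iff_nth_eq nth_list_update) (metis)+
        moreover have "y \<noteq> replicate n False"
        proof
          assume "y = replicate n False"
          then have "y ! j0 = False" using assms(1) by simp
          then show False using True2 by simp
        qed
        ultimately show ?thesis using Gy True2 by (simp add: smul_def basis_def)
      qed
    qed
  qed
  have "smul (complex_of_real (sqrt 2)) \<Gamma> \<in> sstab n" using st by (rule sstabI)
  moreover have "smul (complex_of_real (sqrt 2)) \<Gamma> = (\<lambda>y. basis (replicate n False) y + \<i> ^ q * basis (map xv [0..<n]) y)"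
    unfolding G smul_def by (auto simp: s2)
  ultimately show ?thesis by simp
qed


definition projinv :: "nat \<Rightarrow> qstate \<Rightarrow> bool" where
  "projinv n \<phi> \<longleftrightarrow> (\<forall>P. (\<lambda>y. \<phi> y + pauli n P \<phi> y) \<in> sstab n)"

lemma projinv_step:
  assumes "projinv n \<phi>" "valid n \<phi>" "bwd n U"
    and add: "\<And>f g. U (\<lambda>y. f y + g y) = (\<lambda>y. U f y + U g y)"
    and pres: "\<And>\<psi>. \<psi> \<in> sstab n \<Longrightarrow> U \<psi> \<in> sstab n"
  shows "projinv n (U \<phi>)"
  unfolding projinv_def
proof
  fix P
  obtain P' where P': "\<And>\<psi>. valid n \<psi> \<Longrightarrow> pauli n P (U \<psi>) = U (pauli n P' \<psi>)"
    using assms(3) unfolding bwd_def by blast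
  have "(\<lambda>y. U \<phi> y + pauli n P (U \<phi>) y) = U (\<lambda>y. \<phi> y + pauli n P' \<phi> y)"
    using P'[OF assms(2)] add by simp
  moreover have "U (\<lambda>y. \<phi> y + pauli n P' \<phi> y) \<in> sstab n"
    using assms(1) pres unfolding projinv_def by blast
  ultimately show "(\<lambda>y. U \<phi> y + pauli n P (U \<phi>) y) \<in> sstab n" by simp
qed

lemma projinv_ket0: "projinv n (ket0 n)"
  unfolding projinv_def
proof
  fix P :: "nat \<times> (nat \<Rightarrow> bool) \<times> (nat \<Rightarrow> bool)"
  obtain r xv zv where P: "P = (r, xv, zv)" by (cases P)
  obtain q where q: "\<i> ^ r * zsv n zv xv = \<i> ^ q" using zsv_ipow by blast
  show "(\<lambda>y. ket0 n y + pauli n P (ket0 n) y) \<in> sstab n"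
  proof (cases "\<exists>j0<n. xv j0")
    case True
    then obtain j0 where "j0 < n" "xv j0" by blast
    have "pauli n P (ket0 n) = smul (\<i> ^ q) (basis (map xv [0..<n]))"
      by (simp add: P pauli_ket0 q)
    then show ?thesis using two_basis_sstab[of j0 n xv q, OF \<open>j0 < n\<close> \<open>xv j0\<close>]
      by (simp add: ket0_basis smul_def)
  next
    case False
    then have "map xv [0..<n] = replicate n False" by (auto simp: list_eq_iff_nth_eq)
    moreover have "pauli n P (ket0 n) = smul (\<i> ^ q) (basis (map xv [0..<n]))"
      by (simp add: P pauli_ket0 q)
    ultimately have "(\<lambda>y. ket0 n y + pauli n P (ket0 n) y) = smul (1 + \<i> ^ q) (ket0 n)"
      by (auto simp: ket0_basis smul_def algebra_simps)
    then show ?thesis by (simp add: sstabI stab_states.init)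
  qed
qed

lemma projinv_stab: "\<phi> \<in> stab_states n \<Longrightarrow> projinv n \<phi>"
proof (induction rule: stab_states.induct)
  case init
  then show ?case by (rule projinv_ket0)
next
  case (H \<psi> j)
  show ?case
    by (rule projinv_step[OF H.IH stab_valid[OF H.hyps(1)] bwd_hgate[OF H.hyps(2)] hgate_add])
       (simp add: sstab_hgate H.hyps(2))
next
  case (S \<psi> j)
  show ?case
    by (rule projinv_step[OF S.IH stab_valid[OF S.hyps(1)] bwd_sgate[OF S.hyps(2)] sgate_add])
       (simp add: sstab_sgate S.hyps(2))
next
  case (CNOT \<psi> a b)
  show ?case
    by (rule projinv_step[OF CNOT.IH stab_valid[OF CNOT.hyps(1)] bwd_cnot[OF CNOT.hyps(2-4)] cnot_add])
       (simp add: sstab_cnot CNOT.hyps(2-4))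
qed

lemma lemmaP: "\<phi> \<in> stab_states n \<Longrightarrow> (\<lambda>y. \<phi> y + pauli n P \<phi> y) \<in> sstab n"
  using projinv_stab unfolding projinv_def by blast

definition eiginv :: "nat \<Rightarrow> qstate \<Rightarrow> bool" where
  "eiginv n \<phi> \<longleftrightarrow> (\<forall>P. (\<exists>l. pauli n P \<phi> = smul l \<phi>) \<or>
      (\<exists>g. pauli n g \<phi> = \<phi> \<and> pauli n P (pauli n g \<phi>) = smul (-1) (pauli n g (pauli n P \<phi>))))"

lemma eiginv_step:
  assumes "eiginv n \<phi>" "valid n \<phi>" "bwd n U" "fwd n U"
    and sm: "\<And>c f. U (smul c f) = smul c (U f)"
  shows "eiginv n (U \<phi>)"
  unfolding eiginv_def
proof
  fix P
  obtain P' where P': "\<And>\<psi>. valid n \<psi> \<Longrightarrow> pauli n P (U \<psi>) = U (pauli n P' \<psi>)"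
    using assms(3) unfolding bwd_def by blast
  from assms(1) have "(\<exists>l. pauli n P' \<phi> = smul l \<phi>) \<or>
      (\<exists>g. pauli n g \<phi> = \<phi> \<and> pauli n P' (pauli n g \<phi>) = smul (-1) (pauli n g (pauli n P' \<phi>)))"
    unfolding eiginv_def by blast
  then show "(\<exists>l. pauli n P (U \<phi>) = smul l (U \<phi>)) \<or>
      (\<exists>g. pauli n g (U \<phi>) = U \<phi> \<and> pauli n P (pauli n g (U \<phi>)) = smul (-1) (pauli n g (pauli n P (U \<phi>))))"
  proof
    assume "\<exists>l. pauli n P' \<phi> = smul l \<phi>"
    then obtain l where "pauli n P' \<phi> = smul l \<phi>" by blast
    then have "pauli n P (U \<phi>) = smul l (U \<phi>)" using P'[OF assms(2)] sm by simp
    then show ?thesis by blast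
  next
    assume "\<exists>g. pauli n g \<phi> = \<phi> \<and> pauli n P' (pauli n g \<phi>) = smul (-1) (pauli n g (pauli n P' \<phi>))"
    then obtain g where g1: "pauli n g \<phi> = \<phi>" and g2: "pauli n P' (pauli n g \<phi>) = smul (-1) (pauli n g (pauli n P' \<phi>))"
      by blast
    obtain g' where g': "\<And>\<psi>. valid n \<psi> \<Longrightarrow> U (pauli n g \<psi>) = pauli n g' (U \<psi>)"
      using assms(4) unfolding fwd_def by blast
    have h1: "pauli n g' (U \<phi>) = U \<phi>" using g'[OF assms(2)] g1 by simp
    have "pauli n P (pauli n g' (U \<phi>)) = pauli n P (U (pauli n g \<phi>))" using g'[OF assms(2)] by simp
    also have "\<dots> = U (pauli n P' (pauli n g \<phi>))" using P' valid_pauli by blast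
    also have "\<dots> = smul (-1) (U (pauli n g (pauli n P' \<phi>)))" using g2 sm by simp
    also have "\<dots> = smul (-1) (pauli n g' (U (pauli n P' \<phi>)))" using g' valid_pauli by simp
    also have "\<dots> = smul (-1) (pauli n g' (pauli n P (U \<phi>)))" using P'[OF assms(2)] by simp
    finally show ?thesis using h1 by blast
  qed
qed

lemma eiginv_ket0: "eiginv n (ket0 n)"
  unfolding eiginv_def
proof
  fix P :: "nat \<times> (nat \<Rightarrow> bool) \<times> (nat \<Rightarrow> bool)"
  obtain r xv zv where P: "P = (r, xv, zv)" by (cases P)
  show "(\<exists>l. pauli n P (ket0 n) = smul l (ket0 n)) \<or>
      (\<exists>g. pauli n g (ket0 n) = ket0 n \<and> pauli n P (pauli n g (ket0 n)) = smul (-1) (pauli n g (pauli n P (ket0 n))))"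
  proof (cases "\<exists>j0<n. xv j0")
    case True
    then obtain j0 where j0: "j0 < n" "xv j0" by blast
    define g where "g = (0::nat, \<lambda>_::nat. False, \<lambda>i. i = j0)"
    have g1: "pauli n g (ket0 n) = ket0 n"
      unfolding g_def pauli_ket0 by (simp add: zsv_false smul_def ket0_basis map_replicate_const)
    have g2: "pauli n g (basis (map xv [0..<n])) = smul (-1) (basis (map xv [0..<n]))"
    proof
      fix y
      show "pauli n g (basis (map xv [0..<n])) y = smul (-1) (basis (map xv [0..<n])) y"
      proof (cases "y = map xv [0..<n]")
        case True
        have "zsv n (\<lambda>i. i = j0) (nth y) = sg True * (\<Prod>i\<in>{..<n}-{j0}. sg ((i = j0) \<and> y ! i))"
          using zsv_remove[OF j0(1)] True j0 by simp
        also have "(\<Prod>i\<in>{..<n}-{j0}. sg ((i = j0) \<and> y ! i)) = 1" by (intro prod.neutral) auto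
        finally have "zsv n (\<lambda>i. i = j0) (nth y) = -1" by simp
        then show ?thesis using True by (simp add: g_def pauli_simp flip_false basis_def smul_def)
      next
        case False
        then show ?thesis by (simp add: g_def pauli_simp flip_false basis_def smul_def)
      qed
    qed
    have "pauli n P (pauli n g (ket0 n)) = smul (-1) (pauli n g (pauli n P (ket0 n)))"
      unfolding g1 P pauli_ket0 pauli_smul g2 by (simp add: smul_def algebra_simps)
    then show ?thesis using g1 by blast
  next
    case False
    then have "map xv [0..<n] = replicate n False" by (auto simp: list_eq_iff_nth_eq)
    moreover have "pauli n P (ket0 n) = smul (\<i> ^ r * zsv n zv xv) (basis (map xv [0..<n]))"
      by (simp add: P pauli_ket0)
    ultimately have "pauli n P (ket0 n) = smul (\<i> ^ r * zsv n zv xv) (ket0 n)"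
      by (simp add: ket0_basis)
    then show ?thesis by blast
  qed
qed

lemma eiginv_stab: "\<phi> \<in> stab_states n \<Longrightarrow> eiginv n \<phi>"
proof (induction rule: stab_states.induct)
  case init
  then show ?case by (rule eiginv_ket0)
next
  case (H \<psi> j)
  show ?case
    by (rule eiginv_step[OF H.IH stab_valid[OF H.hyps(1)] bwd_hgate[OF H.hyps(2)] fwd_hgate[OF H.hyps(2)] hgate_smul])
next
  case (S \<psi> j)
  show ?case
    by (rule eiginv_step[OF S.IH stab_valid[OF S.hyps(1)] bwd_sgate[OF S.hyps(2)] fwd_sgate[OF S.hyps(2)] sgate_smul])
next
  case (CNOT \<psi> a b)
  show ?case
    by (rule eiginv_step[OF CNOT.IH stab_valid[OF CNOT.hyps(1)] bwd_cnot[OF CNOT.hyps(2-4)] fwd_cnot[OF CNOT.hyps(2-4)] cnot_smul])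
qed


definition ext :: "nat \<Rightarrow> qstate \<Rightarrow> bool \<Rightarrow> qstate" where
  "ext n \<phi> b = (\<lambda>y. if length y = Suc n \<and> last y = b then \<phi> (butlast y) else 0)"

lemma ext_app[simp]: "ext n \<phi> b (z @ [c]) = (if length z = n \<and> c = b then \<phi> z else 0)"
  by (simp add: ext_def)
lemma ext_Nil[simp]: "ext n \<phi> b [] = 0"
  by (simp add: ext_def)

lemma ext_smul: "ext n (smul c \<phi>) b = smul c (ext n \<phi> b)"
  by (auto simp: ext_def smul_def)
lemma ext_add: "ext n (\<lambda>y. f y + g y) b = (\<lambda>y. ext n f b y + ext n g b y)"
  by (auto simp: ext_def)
lemma ext_diff: "ext n (\<lambda>y. f y - g y) b = (\<lambda>y. ext n f b y - ext n g b y)"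
  by (auto simp: ext_def)

lemma valid_ext: "valid (Suc n) (ext n \<phi> b)"
  by (simp add: valid_def ext_def)

lemma ket0_ext: "ket0 (Suc n) = ext n (ket0 n) False"
proof
  fix y show "ket0 (Suc n) y = ext n (ket0 n) False y"
    by (cases y rule: rev_exhaust) (auto simp: ket0_def replicate_append_same[symmetric])
qed

lemma upd_app: "j < length z \<Longrightarrow> (z @ [c])[j := v] = z[j := v] @ [c]"
  by (simp add: list_update_append)
lemma upd_app_last: "(z @ [c])[length z := v] = z @ [v]"
  by (simp add: list_update_append)

lemma hgate_ext: "j < n \<Longrightarrow> hgate j (ext n \<phi> b) = ext n (hgate j \<phi>) b"
proof
  fix y assume j: "j < n"
  show "hgate j (ext n \<phi> b) y = ext n (hgate j \<phi>) b y"
  proof (cases y rule: rev_exhaust)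
    case Nil then show ?thesis by (simp add: hgate_def)
  next
    case (snoc z c)
    show ?thesis
    proof (cases "length z = n")
      case True
      then show ?thesis using j by (simp add: snoc hgate_def upd_app nth_append)
    next
      case False
      then show ?thesis by (simp add: snoc hgate_def ext_def)
    qed
  qed
qed

lemma sgate_ext: "j < n \<Longrightarrow> sgate j (ext n \<phi> b) = ext n (sgate j \<phi>) b"
proof
  fix y assume j: "j < n"
  show "sgate j (ext n \<phi> b) y = ext n (sgate j \<phi>) b y"
  proof (cases y rule: rev_exhaust)
    case Nil then show ?thesis by (simp add: sgate_def)
  next
    case (snoc z c)
    show ?thesis
    proof (cases "length z = n")
      case True
      then show ?thesis using j by (simp add: snoc sgate_def nth_append)
    next
      case False
      then show ?thesis by (simp add: snoc sgate_def ext_def)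
    qed
  qed
qed

lemma cnot_ext: "a < n \<Longrightarrow> b < n \<Longrightarrow> cnot a b (ext n \<phi> c) = ext n (cnot a b \<phi>) c"
proof
  fix y assume ab: "a < n" "b < n"
  show "cnot a b (ext n \<phi> c) y = ext n (cnot a b \<phi>) c y"
  proof (cases y rule: rev_exhaust)
    case Nil then show ?thesis by (simp add: cnot_def)
  next
    case (snoc z d)
    show ?thesis
    proof (cases "length z = n")
      case True
      then show ?thesis using ab by (simp add: snoc cnot_def upd_app nth_append)
    next
      case False
      then show ?thesis by (simp add: snoc cnot_def ext_def)
    qed
  qed
qed

definition good :: "nat \<Rightarrow> qstate \<Rightarrow> bool" where
  "good n \<Phi> \<longleftrightarrow> (\<exists>\<phi> s. \<phi> \<in> stab_states n \<and>
     (\<Phi> = smul s (ext n \<phi> False) \<or> \<Phi> = smul s (ext n \<phi> True) \<or>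
      (\<exists>Q. \<Phi> = smul s (\<lambda>y. ext n \<phi> False y + ext n (pauli n Q \<phi>) True y))))"

lemma good_low:
  assumes "good n \<Phi>" "fwd n U"
    and ext: "\<And>\<phi> b. U (ext n \<phi> b) = ext n (U \<phi>) b"
    and add: "\<And>f g. U (\<lambda>y. f y + g y) = (\<lambda>y. U f y + U g y)"
    and sm: "\<And>c f. U (smul c f) = smul c (U f)"
    and st: "\<And>\<phi>. \<phi> \<in> stab_states n \<Longrightarrow> U \<phi> \<in> stab_states n"
  shows "good n (U \<Phi>)"
proof -
  obtain \<phi> s where \<phi>: "\<phi> \<in> stab_states n" and
    cases: "\<Phi> = smul s (ext n \<phi> False) \<or> \<Phi> = smul s (ext n \<phi> True) \<or>
      (\<exists>Q. \<Phi> = smul s (\<lambda>y. ext n \<phi> False y + ext n (pauli n Q \<phi>) True y))"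
    using assms(1) unfolding good_def by blast
  have U\<phi>: "U \<phi> \<in> stab_states n" using st \<phi> by blast
  from cases show ?thesis
  proof (elim disjE exE)
    assume "\<Phi> = smul s (ext n \<phi> False)"
    then show ?thesis using U\<phi> unfolding good_def by (metis sm ext)
  next
    assume "\<Phi> = smul s (ext n \<phi> True)"
    then show ?thesis using U\<phi> unfolding good_def by (metis sm ext)
  next
    fix Q assume Q: "\<Phi> = smul s (\<lambda>y. ext n \<phi> False y + ext n (pauli n Q \<phi>) True y)"
    obtain Q' where Q': "\<And>\<psi>. valid n \<psi> \<Longrightarrow> U (pauli n Q \<psi>) = pauli n Q' (U \<psi>)"
      using assms(2) unfolding fwd_def by blast
    have "U \<Phi> = smul s (\<lambda>y. ext n (U \<phi>) False y + ext n (pauli n Q' (U \<phi>)) True y)"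
      unfolding Q sm add ext Q'[OF stab_valid[OF \<phi>]] ..
    then show ?thesis using U\<phi> unfolding good_def by blast
  qed
qed

lemma good_hgate_low: "good n \<Phi> \<Longrightarrow> j < n \<Longrightarrow> good n (hgate j \<Phi>)"
  by (rule good_low) (auto simp: fwd_hgate hgate_ext hgate_add hgate_smul intro: stab_states.H)
lemma good_sgate_low: "good n \<Phi> \<Longrightarrow> j < n \<Longrightarrow> good n (sgate j \<Phi>)"
  by (rule good_low) (auto simp: fwd_sgate sgate_ext sgate_add sgate_smul intro: stab_states.S)
lemma good_cnot_low: "good n \<Phi> \<Longrightarrow> a < n \<Longrightarrow> b < n \<Longrightarrow> a \<noteq> b \<Longrightarrow> good n (cnot a b \<Phi>)"
  by (rule good_low) (auto simp: fwd_cnot cnot_ext cnot_add cnot_smul intro: stab_states.CNOT)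


lemma good_I1: "\<phi> \<in> stab_states n \<Longrightarrow> good n (smul s (ext n \<phi> False))"
  unfolding good_def by blast
lemma good_I2: "\<phi> \<in> stab_states n \<Longrightarrow> good n (smul s (ext n \<phi> True))"
  unfolding good_def by blast
lemma good_I3: "\<phi> \<in> stab_states n \<Longrightarrow> good n (smul s (\<lambda>y. ext n \<phi> False y + ext n (pauli n Q \<phi>) True y))"
  unfolding good_def by blast

lemma fun_eq_snoc:
  assumes "f [] = g []" "\<And>z c. f (z @ [c]) = g (z @ [c])"
  shows "f = g"
proof
  fix y show "f y = g y" using assms by (cases y rule: rev_exhaust) auto
qed

lemma ext_len: "length y \<noteq> Suc n \<Longrightarrow> ext n \<phi> b y = 0"
  by (simp add: ext_def)

lemma hgate_last_pair:
  "hgate n (\<lambda>y. ext n f False y + ext n g True y) =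
   smul (1 / complex_of_real (sqrt 2)) (\<lambda>y. ext n (\<lambda>y. f y + g y) False y + ext n (\<lambda>y. f y - g y) True y)"
proof (rule fun_eq_snoc)
  fix z c
  show "hgate n (\<lambda>y. ext n f False y + ext n g True y) (z @ [c]) =
    smul (1 / complex_of_real (sqrt 2)) (\<lambda>y. ext n (\<lambda>y. f y + g y) False y + ext n (\<lambda>y. f y - g y) True y) (z @ [c])"
  proof (cases "length z = n")
    case True
    then have u: "(z @ [c])[n := b] = z @ [b]" for b using upd_app_last by metis
    show ?thesis using True by (cases c) (auto simp: hgate_def smul_def u nth_append field_simps)
  next
    case False
    then show ?thesis by (simp add: hgate_def smul_def ext_len)
  qed
qed (simp add: hgate_def smul_def)


definition pair :: "nat \<Rightarrow> qstate \<Rightarrow> qstate \<Rightarrow> qstate" where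
  "pair n f g = (\<lambda>y. ext n f False y + ext n g True y)"

definition good2 :: "nat \<Rightarrow> qstate \<Rightarrow> bool" where
  "good2 n \<Phi> \<longleftrightarrow> (\<exists>\<phi> s. \<phi> \<in> stab_states n \<and>
     (\<Phi> = smul s (pair n \<phi> (\<lambda>_. 0)) \<or> \<Phi> = smul s (pair n (\<lambda>_. 0) \<phi>) \<or>
      (\<exists>Q. \<Phi> = smul s (pair n \<phi> (pauli n Q \<phi>)))))"

lemma ext_zero: "ext n (\<lambda>_. 0) b = (\<lambda>_. 0)"
  by (auto simp: ext_def)

lemma good_good2: "good n \<Phi> \<longleftrightarrow> good2 n \<Phi>"
  unfolding good_def good2_def pair_def ext_zero by simp

lemma pair_smul: "pair n (smul c f) (smul c g) = smul c (pair n f g)"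
  by (auto simp: pair_def ext_def smul_def algebra_simps)

lemma pair_eqI: "(\<And>z. length z = n \<Longrightarrow> f z = f' z) \<Longrightarrow> (\<And>z. length z = n \<Longrightarrow> g z = g' z) \<Longrightarrow> pair n f g = pair n f' g'"
  by (auto simp: pair_def ext_def)

lemma pauli_sq: "\<exists>e::nat. pauli n Q (pauli n Q \<psi>) = smul (\<i> ^ (2 * e)) \<psi> \<or> (\<forall>y. \<psi> y = 0) \<or> \<not> valid n \<psi>"
proof -
  obtain r xv zv where Q: "Q = (r, xv, zv)" by (cases Q)
  obtain e0 :: nat where e0: "zsv n zv xv = \<i> ^ (2 * e0)"
    using zsv_pm[of n zv xv] by (metis power_0 power2_i mult_0_right mult_1_right)
  have "valid n \<psi> \<Longrightarrow> pauli n Q (pauli n Q \<psi>) = smul (\<i> ^ (2 * (r + e0))) \<psi>"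
  proof
    fix y assume v: "valid n \<psi>"
    show "pauli n Q (pauli n Q \<psi>) y = smul (\<i> ^ (2 * (r + e0))) \<psi> y"
    proof (cases "length y = n")
      case True
      have z: "zsv n zv (nth (flip xv y)) = zsv n zv xv * zsv n zv (nth y)"
      proof -
        have "(\<Prod>j<n. sg (zv j \<and> flip xv y ! j)) = (\<Prod>j<n. sg (zv j \<and> xv j) * sg (zv j \<and> y ! j))"
          using True by (intro prod.cong) (auto simp: sg_def)
        then show ?thesis unfolding zsv_def by (simp add: prod.distrib)
      qed
      have ff: "flip xv (flip xv y) = y" by (rule nth_equalityI) auto
      have "pauli n Q (pauli n Q \<psi>) y = \<i> ^ r * \<i> ^ r * zsv n zv xv * (zsv n zv (nth y) * zsv n zv (nth y)) * \<psi> y"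
        using True by (simp add: Q pauli_simp z ff algebra_simps)
      then show ?thesis using zsv_sq e0 by (simp add: smul_def power_add power_mult power2_eq_square algebra_simps)
    next
      case False
      then show ?thesis using v by (simp add: Q pauli_simp smul_def validD)
    qed
  qed
  then show ?thesis by blast
qed

lemma eig_vals:
  assumes "valid n \<phi>" "\<exists>y. \<phi> y \<noteq> 0" "pauli n Q \<phi> = smul l \<phi>"
  shows "l = 1 \<or> l = -1 \<or> l = \<i> \<or> l = -\<i>"
proof -
  obtain e :: nat where e: "pauli n Q (pauli n Q \<phi>) = smul (\<i> ^ (2 * e)) \<phi>"
    using pauli_sq[of n Q \<phi>] assms(1,2) by blast
  obtain y where y: "\<phi> y \<noteq> 0" using assms(2) by blast
  have "pauli n Q (pauli n Q \<phi>) = smul (l * l) \<phi>"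
    using assms(3) by (simp add: pauli_smul smul_smul)
  then have "l * l * \<phi> y = \<i> ^ (2 * e) * \<phi> y" using e by (metis smul_def)
  then have ll: "l * l = \<i> ^ (2 * e)" using y by simp
  have "\<i> ^ (2 * e) = (-1 :: complex) ^ e" by (simp add: power_mult)
  then have "l * l = 1 \<or> l * l = -1" using ll by (metis neg_one_even_power neg_one_odd_power)
  then show ?thesis
  proof
    assume "l * l = 1"
    then have "(l - 1) * (l + 1) = 0" by (simp add: algebra_simps)
    then show ?thesis by (auto simp: eq_neg_iff_add_eq_0)
  next
    assume "l * l = -1"
    then have "(l - \<i>) * (l + \<i>) = 0" by (simp add: algebra_simps)
    then show ?thesis by (auto simp: eq_neg_iff_add_eq_0)
  qed
qed

lemma good2_zero: "\<phi> \<in> stab_states n \<Longrightarrow> good2 n (\<lambda>_. 0)"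
  unfolding good2_def by (rule exI[of _ \<phi>], rule exI[of _ 0]) (auto simp: smul_def)

lemma good2_smul: "good2 n \<Phi> \<Longrightarrow> good2 n (smul c \<Phi>)"
  unfolding good2_def by (metis smul_smul)

lemma hcase:
  assumes \<phi>: "\<phi> \<in> stab_states n"
  shows "good2 n (pair n (\<lambda>y. \<phi> y + pauli n Q \<phi> y) (\<lambda>y. \<phi> y - pauli n Q \<phi> y))"
proof -
  have v: "valid n \<phi>" using \<phi> by (rule stab_valid)
  have "eiginv n \<phi>" using \<phi> by (rule eiginv_stab)
  then have "(\<exists>l. pauli n Q \<phi> = smul l \<phi>) \<or>
      (\<exists>g. pauli n g \<phi> = \<phi> \<and> pauli n Q (pauli n g \<phi>) = smul (-1) (pauli n g (pauli n Q \<phi>)))"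
    unfolding eiginv_def by blast
  then show ?thesis
  proof (elim disjE exE conjE)
    fix l assume l: "pauli n Q \<phi> = smul l \<phi>"
    show ?thesis
    proof (cases "\<exists>y. \<phi> y \<noteq> 0")
      case False
      then have "pair n (\<lambda>y. \<phi> y + pauli n Q \<phi> y) (\<lambda>y. \<phi> y - pauli n Q \<phi> y) = (\<lambda>_. 0)"
        by (auto simp: l smul_def pair_def ext_def)
      then show ?thesis using good2_zero[OF \<phi>] by simp
    next
      case True
      have lv: "l = 1 \<or> l = -1 \<or> l = \<i> \<or> l = -\<i>" by (rule eig_vals[OF v True l])
      have i3: "\<i> ^ 3 = - \<i>" by (simp add: power3_eq_cube)
      from lv show ?thesis
      proof (elim disjE)
        assume "l = 1"
        then have "pair n (\<lambda>y. \<phi> y + pauli n Q \<phi> y) (\<lambda>y. \<phi> y - pauli n Q \<phi> y) = smul 2 (pair n \<phi> (\<lambda>_. 0))"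
          unfolding pair_smul[symmetric] using l by (intro pair_eqI) (auto simp: smul_def)
        then show ?thesis using \<phi> unfolding good2_def by blast
      next
        assume "l = -1"
        then have "pair n (\<lambda>y. \<phi> y + pauli n Q \<phi> y) (\<lambda>y. \<phi> y - pauli n Q \<phi> y) = smul 2 (pair n (\<lambda>_. 0) \<phi>)"
          unfolding pair_smul[symmetric] using l by (intro pair_eqI) (auto simp: smul_def)
        then show ?thesis using \<phi> unfolding good2_def by blast
      next
        assume li: "l = \<i>"
        have "pair n (\<lambda>y. \<phi> y + pauli n Q \<phi> y) (\<lambda>y. \<phi> y - pauli n Q \<phi> y) = smul (1 + \<i>) (pair n \<phi> (pauli n (3, \<lambda>_. False, \<lambda>_. False) \<phi>))"
          unfolding pair_smul[symmetric] pauli_id[OF v] using l li i3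
          by (intro pair_eqI) (auto simp: smul_def algebra_simps)
        then show ?thesis using \<phi> unfolding good2_def by blast
      next
        assume li: "l = -\<i>"
        have "pair n (\<lambda>y. \<phi> y + pauli n Q \<phi> y) (\<lambda>y. \<phi> y - pauli n Q \<phi> y) = smul (1 - \<i>) (pair n \<phi> (pauli n (1, \<lambda>_. False, \<lambda>_. False) \<phi>))"
          unfolding pair_smul[symmetric] pauli_id[OF v] using l li
          by (intro pair_eqI) (auto simp: smul_def algebra_simps)
        then show ?thesis using \<phi> unfolding good2_def by blast
      qed
    qed
  next
    fix g assume g1: "pauli n g \<phi> = \<phi>" and g2: "pauli n Q (pauli n g \<phi>) = smul (-1) (pauli n g (pauli n Q \<phi>))"
    define \<psi> where "\<psi> = (\<lambda>y. \<phi> y + pauli n Q \<phi> y)"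
    have "\<psi> \<in> sstab n" unfolding \<psi>_def using \<phi> by (rule lemmaP)
    then obtain c \<phi>' where \<phi>': "\<phi>' \<in> stab_states n" "\<psi> = smul c \<phi>'" by (rule sstabE)
    have g3: "pauli n Q \<phi> = smul (-1) (pauli n g (pauli n Q \<phi>))" using g1 g2 by simp
    have "pauli n g \<psi> = (\<lambda>y. \<phi> y - pauli n Q \<phi> y)"
    proof
      fix y
      have "pauli n Q \<phi> y = - pauli n g (pauli n Q \<phi>) y" using g3 by (simp add: smul_def fun_eq_iff)
      then show "pauli n g \<psi> y = \<phi> y - pauli n Q \<phi> y"
        unfolding \<psi>_def pauli_add using g1 by simp
    qed
    then have "pair n \<psi> (\<lambda>y. \<phi> y - pauli n Q \<phi> y) = smul c (pair n \<phi>' (pauli n g \<phi>'))"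
      using \<phi>'(2) by (simp add: pauli_smul pair_smul[symmetric])
    then show ?thesis using \<phi>'(1) unfolding \<psi>_def good2_def by blast
  qed
qed


lemma hgate_pair: "hgate n (pair n f g) = smul (1 / complex_of_real (sqrt 2)) (pair n (\<lambda>y. f y + g y) (\<lambda>y. f y - g y))"
  unfolding pair_def by (rule hgate_last_pair)

lemma good2_hgate_last: assumes "good2 n \<Phi>" shows "good2 n (hgate n \<Phi>)"
proof -
  obtain \<phi> s where \<phi>: "\<phi> \<in> stab_states n" and
    cs: "\<Phi> = smul s (pair n \<phi> (\<lambda>_. 0)) \<or> \<Phi> = smul s (pair n (\<lambda>_. 0) \<phi>) \<or>
      (\<exists>Q. \<Phi> = smul s (pair n \<phi> (pauli n Q \<phi>)))"
    using assms unfolding good2_def by blast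
  have v: "valid n \<phi>" using \<phi> by (rule stab_valid)
  from cs show ?thesis
  proof (elim disjE exE)
    assume "\<Phi> = smul s (pair n \<phi> (\<lambda>_. 0))"
    then have "hgate n \<Phi> = smul (s * (1 / complex_of_real (sqrt 2))) (pair n \<phi> (pauli n (0, \<lambda>_. False, \<lambda>_. False) \<phi>))"
      by (simp add: hgate_smul hgate_pair smul_smul pauli_id[OF v] smul_1)
    then show ?thesis using \<phi> unfolding good2_def by blast
  next
    assume "\<Phi> = smul s (pair n (\<lambda>_. 0) \<phi>)"
    moreover have "pair n (\<lambda>y. 0 + \<phi> y) (\<lambda>y. 0 - \<phi> y) = pair n \<phi> (pauli n (2, \<lambda>_. False, \<lambda>_. False) \<phi>)"
      by (intro pair_eqI) (simp_all add: pauli_id[OF v] smul_def)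
    ultimately have "hgate n \<Phi> = smul (s * (1 / complex_of_real (sqrt 2))) (pair n \<phi> (pauli n (2, \<lambda>_. False, \<lambda>_. False) \<phi>))"
      by (simp add: hgate_smul hgate_pair smul_smul)
    then show ?thesis using \<phi> unfolding good2_def by blast
  next
    fix Q assume "\<Phi> = smul s (pair n \<phi> (pauli n Q \<phi>))"
    then have "hgate n \<Phi> = smul (s * (1 / complex_of_real (sqrt 2))) (pair n (\<lambda>y. \<phi> y + pauli n Q \<phi> y) (\<lambda>y. \<phi> y - pauli n Q \<phi> y))"
      by (simp add: hgate_smul hgate_pair smul_smul)
    then show ?thesis using hcase[OF \<phi>, of Q] good2_smul by metis
  qed
qed

lemma good2_second:
  assumes "good2 n \<Phi>"
    and sm: "\<And>c f. U (smul c f) = smul c (U f)"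
    and pr: "\<And>f g. U (pair n f g) = pair n f (T g)"
    and tsm: "\<And>c f. T (smul c f) = smul c (T f)"
    and tst: "\<And>\<phi>. \<phi> \<in> stab_states n \<Longrightarrow> T \<phi> \<in> sstab n"
    and tp: "\<And>Q. \<exists>R. \<forall>\<phi>. valid n \<phi> \<longrightarrow> T (pauli n Q \<phi>) = pauli n R \<phi>"
    and t0: "T (\<lambda>_. 0) = (\<lambda>_. 0)"
  shows "good2 n (U \<Phi>)"
proof -
  obtain \<phi> s where \<phi>: "\<phi> \<in> stab_states n" and
    cs: "\<Phi> = smul s (pair n \<phi> (\<lambda>_. 0)) \<or> \<Phi> = smul s (pair n (\<lambda>_. 0) \<phi>) \<or>
      (\<exists>Q. \<Phi> = smul s (pair n \<phi> (pauli n Q \<phi>)))"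
    using assms(1) unfolding good2_def by blast
  have v: "valid n \<phi>" using \<phi> by (rule stab_valid)
  from cs show ?thesis
  proof (elim disjE exE)
    assume "\<Phi> = smul s (pair n \<phi> (\<lambda>_. 0))"
    then have "U \<Phi> = smul s (pair n \<phi> (\<lambda>_. 0))" by (simp add: sm pr t0)
    then show ?thesis using \<phi> unfolding good2_def by blast
  next
    assume a: "\<Phi> = smul s (pair n (\<lambda>_. 0) \<phi>)"
    obtain c \<phi>' where \<phi>': "\<phi>' \<in> stab_states n" "T \<phi> = smul c \<phi>'" using tst[OF \<phi>] by (rule sstabE)
    have "pair n (\<lambda>_. 0) (smul c \<phi>') = smul c (pair n (\<lambda>_. 0) \<phi>')"
      by (simp add: pair_smul[symmetric]) (simp add: smul_def)
    then have "U \<Phi> = smul (s * c) (pair n (\<lambda>_. 0) \<phi>')" using a \<phi>' by (simp add: sm pr smul_smul)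
    then show ?thesis using \<phi>' unfolding good2_def by blast
  next
    fix Q assume a: "\<Phi> = smul s (pair n \<phi> (pauli n Q \<phi>))"
    obtain R where R: "\<And>\<phi>. valid n \<phi> \<Longrightarrow> T (pauli n Q \<phi>) = pauli n R \<phi>" using tp by blast
    have "U \<Phi> = smul s (pair n \<phi> (pauli n R \<phi>))" using a R[OF v] by (simp add: sm pr)
    then show ?thesis using \<phi> unfolding good2_def by blast
  qed
qed

lemma pauli_suc: "pauli n (Suc r, xv, zv) \<psi> = smul \<i> (pauli n (r, xv, zv) \<psi>)"
  by (auto simp: pauli_simp smul_def)

lemma good2_sgate_last: assumes "good2 n \<Phi>" shows "good2 n (sgate n \<Phi>)"
proof (rule good2_second[where T = "smul \<i>", OF assms])
  show "sgate n (smul c f) = smul c (sgate n f)" for c f by (rule sgate_smul)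
  show "sgate n (pair n f g) = pair n f (smul \<i> g)" for f g
    by (rule fun_eq_snoc) (auto simp: pair_def sgate_def ext_def smul_def nth_append)
  show "smul \<i> (smul c f) = smul c (smul \<i> f)" for c f by (simp add: smul_smul mult.commute)
  show "smul \<i> \<phi> \<in> sstab n" if "\<phi> \<in> stab_states n" for \<phi> using that by (rule sstabI)
  show "\<exists>R. \<forall>\<phi>. valid n \<phi> \<longrightarrow> smul \<i> (pauli n Q \<phi>) = pauli n R \<phi>" for Q
    by (cases Q) (metis pauli_suc)
  show "smul \<i> (\<lambda>_. 0) = (\<lambda>_. 0)" by (simp add: smul_def)
qed

lemma xgate_smul: "xgate a (smul c f) = smul c (xgate a f)"
  by (simp add: xgate_def smul_def)

lemma good2_cnot_last: assumes "good2 n \<Phi>" and a: "a < n" shows "good2 n (cnot n a \<Phi>)"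
proof (rule good2_second[where T = "xgate a", OF assms(1)])
  show "cnot n a (smul c f) = smul c (cnot n a f)" for c f by (rule cnot_smul)
  show "cnot n a (pair n f g) = pair n f (xgate a g)" for f g
  proof (rule fun_eq_snoc)
    fix z c
    show "cnot n a (pair n f g) (z @ [c]) = pair n f (xgate a g) (z @ [c])"
    proof (cases "length z = n")
      case True
      have u: "(z @ [d])[a := v] = z[a := v] @ [d]" for v d using True a by (simp add: upd_app)
      show ?thesis using True a by (cases c) (auto simp: pair_def cnot_def xgate_def u nth_append)
    next
      case False
      then show ?thesis by (simp add: pair_def cnot_def ext_len)
    qed
  qed (simp add: pair_def cnot_def)
  show "xgate a (smul c f) = smul c (xgate a f)" for c f by (rule xgate_smul)
  show "xgate a \<phi> \<in> sstab n" if "\<phi> \<in> stab_states n" for \<phi> using that a by (intro stab_sstab stab_xgate)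
  show "\<exists>R. \<forall>\<phi>. valid n \<phi> \<longrightarrow> xgate a (pauli n Q \<phi>) = pauli n R \<phi>" for Q
  proof -
    obtain R where "\<And>\<psi>. pauli n (0, \<lambda>i. i = a, \<lambda>_. False) (pauli n Q \<psi>) = pauli n R \<psi>"
      using pauli_comp by blast
    then show ?thesis using xgate_pauli[OF valid_pauli a] by metis
  qed
  show "xgate a (\<lambda>_. 0) = (\<lambda>_. 0)" by (simp add: xgate_def)
qed

definition czg :: "nat \<Rightarrow> nat \<Rightarrow> qstate \<Rightarrow> qstate" where
  "czg a b \<psi> = (\<lambda>y. sg (y ! a \<and> y ! b) * \<psi> y)"

definition zg :: "nat \<Rightarrow> qstate \<Rightarrow> qstate" where
  "zg a \<psi> = (\<lambda>y. sg (y ! a) * \<psi> y)"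

lemma zg_ss: "zg a \<psi> = sgate a (sgate a \<psi>)"
  by (auto simp: zg_def sgate_def)

lemma zg_pauli: "valid n \<psi> \<Longrightarrow> a < n \<Longrightarrow> zg a \<psi> = pauli n (0, \<lambda>_. False, \<lambda>i. i = a) \<psi>"
proof
  fix y assume v: "valid n \<psi>" and a: "a < n"
  show "zg a \<psi> y = pauli n (0, \<lambda>_. False, \<lambda>i. i = a) \<psi> y"
  proof (cases "length y = n")
    case True
    have "zsv n (\<lambda>i. i = a) (nth y) = sg (y ! a) * (\<Prod>i\<in>{..<n}-{a}. sg ((i = a) \<and> y ! i))"
      using zsv_remove[OF a] by simp
    also have "(\<Prod>i\<in>{..<n}-{a}. sg ((i = a) \<and> y ! i)) = 1" by (intro prod.neutral) auto
    finally show ?thesis using True by (simp add: zg_def pauli_simp flip_false)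
  next
    case False
    then show ?thesis using v by (simp add: zg_def pauli_simp validD)
  qed
qed

lemma good2_czg_last: assumes "good2 n \<Phi>" and a: "a < n" shows "good2 n (czg a n \<Phi>)"
proof (rule good2_second[where T = "zg a", OF assms(1)])
  show "czg a n (smul c f) = smul c (czg a n f)" for c f by (simp add: czg_def smul_def algebra_simps)
  show "czg a n (pair n f g) = pair n f (zg a g)" for f g
  proof (rule fun_eq_snoc)
    fix z c
    show "czg a n (pair n f g) (z @ [c]) = pair n f (zg a g) (z @ [c])"
    proof (cases "length z = n")
      case True
      show ?thesis using True a by (cases c) (auto simp: pair_def czg_def zg_def nth_append)
    next
      case False
      then show ?thesis by (simp add: pair_def czg_def ext_len)
    qed
  qed (simp add: pair_def czg_def)
  show "zg a (smul c f) = smul c (zg a f)" for c f by (simp add: zg_def smul_def algebra_simps)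
  show "zg a \<phi> \<in> sstab n" if "\<phi> \<in> stab_states n" for \<phi>
    using that a by (simp add: zg_ss stab_sstab stab_states.S)
  show "\<exists>R. \<forall>\<phi>. valid n \<phi> \<longrightarrow> zg a (pauli n Q \<phi>) = pauli n R \<phi>" for Q
  proof -
    obtain R where "\<And>\<psi>. pauli n (0, \<lambda>_. False, \<lambda>i. i = a) (pauli n Q \<psi>) = pauli n R \<psi>"
      using pauli_comp by blast
    then show ?thesis using zg_pauli[OF valid_pauli a] by metis
  qed
  show "zg a (\<lambda>_. 0) = (\<lambda>_. 0)" by (simp add: zg_def)
qed

lemma cnot_via_cz:
  assumes "valid (Suc n) \<Psi>" "a < n"
  shows "cnot a n \<Psi> = hgate n (czg a n (hgate n \<Psi>))"
proof
  fix y
  show "cnot a n \<Psi> y = hgate n (czg a n (hgate n \<Psi>)) y"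
  proof (cases "length y = Suc n")
    case True
    then have nl: "n < length y" and al: "a < length y" using assms by auto
    define A where "A = \<Psi> (y[n := False])"
    define B where "B = \<Psi> (y[n := True])"
    have e: "hgate n (czg a n (hgate n \<Psi>)) y =
      ((A + B) / complex_of_real (sqrt 2) + (sg (y ! n) * sg (y ! a)) * ((A - B) / complex_of_real (sqrt 2))) / complex_of_real (sqrt 2)"
      unfolding hgate_def czg_def A_def B_def using nl al assms(2)
      by (cases "y ! n"; cases "y ! a") (simp_all add: nth_list_update algebra_simps)
    have e2: "\<dots> = ((A + B) + (sg (y ! n) * sg (y ! a)) * (A - B)) / 2"
      by (rule div_r2)
    have yF: "\<not> y ! n \<Longrightarrow> y[n := False] = y" using list_update_id[of y n] by simp
    have yT: "y ! n \<Longrightarrow> y[n := True] = y" using list_update_id[of y n] by simp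
    show ?thesis using e e2 yF yT
      by (cases "y ! n"; cases "y ! a") (simp_all add: cnot_def A_def B_def)
  next
    case False
    have "valid (Suc n) (hgate n (czg a n (hgate n \<Psi>)))"
      using assms(1) by (intro valid_hgate) (simp add: valid_def czg_def hgate_def)
    then show ?thesis using False assms(1) by (simp add: validD cnot_def)
  qed
qed

lemma good2_stab: "\<Phi> \<in> stab_states (Suc n) \<Longrightarrow> good2 n \<Phi>"
proof (induction rule: stab_states.induct)
  case init
  have "ket0 (Suc n) = smul 1 (pair n (ket0 n) (\<lambda>_. 0))"
    by (simp add: smul_1 pair_def ext_zero ket0_ext)
  then show ?case unfolding good2_def using stab_states.init by blast
next
  case (H \<psi> j)
  show ?case
  proof (cases "j < n")
    case True then show ?thesis using H.IH good_hgate_low by (simp add: good_good2[symmetric])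
  next
    case False
    then have "j = n" using H.hyps(2) by simp
    then show ?thesis using H.IH good2_hgate_last by simp
  qed
next
  case (S \<psi> j)
  show ?case
  proof (cases "j < n")
    case True then show ?thesis using S.IH good_sgate_low by (simp add: good_good2[symmetric])
  next
    case False
    then have "j = n" using S.hyps(2) by simp
    then show ?thesis using S.IH good2_sgate_last by simp
  qed
next
  case (CNOT \<psi> a b)
  show ?case
  proof (cases "a < n \<and> b < n")
    case True then show ?thesis using CNOT.IH CNOT.hyps good_cnot_low by (simp add: good_good2[symmetric])
  next
    case False
    then have "a = n \<and> b < n \<or> b = n \<and> a < n" using CNOT.hyps(2-4) by auto
    then show ?thesis
    proof
      assume "a = n \<and> b < n"
      then show ?thesis using CNOT.IH good2_cnot_last by simp
    next
      assume ab: "b = n \<and> a < n"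
      have "cnot a b \<psi> = hgate n (czg a n (hgate n \<psi>))"
        using ab cnot_via_cz[OF stab_valid[OF CNOT.hyps(1)]] by simp
      then show ?thesis using CNOT.IH ab by (simp add: good2_hgate_last good2_czg_last)
    qed
  qed
qed

lemma restrict_last:
  assumes "\<Phi> \<in> stab_states (Suc n)"
  shows "(\<lambda>z. \<Phi> (z @ [False])) \<in> sstab n"
proof -
  obtain \<phi> s where \<phi>: "\<phi> \<in> stab_states n" and
    cs: "\<Phi> = smul s (pair n \<phi> (\<lambda>_. 0)) \<or> \<Phi> = smul s (pair n (\<lambda>_. 0) \<phi>) \<or>
      (\<exists>Q. \<Phi> = smul s (pair n \<phi> (pauli n Q \<phi>)))"
    using good2_stab[OF assms] unfolding good2_def by blast
  have v: "valid n \<phi>" using \<phi> by (rule stab_valid)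
  have e: "(\<lambda>z. \<Phi> (z @ [False])) = smul s \<phi> \<or> (\<lambda>z. \<Phi> (z @ [False])) = (\<lambda>_. 0)"
    using cs v by (auto simp: pair_def smul_def fun_eq_iff validD)
  then show ?thesis using sstabI[OF \<phi>] zero_sstab by metis
qed

lemma restrict_last_T:
  assumes "\<Phi> \<in> stab_states (Suc n)"
  shows "(\<lambda>z. \<Phi> (z @ [True])) \<in> sstab n"
proof -
  have "xgate n \<Phi> \<in> stab_states (Suc n)" using assms by (rule stab_xgate) simp
  then have "(\<lambda>z. xgate n \<Phi> (z @ [False])) \<in> sstab n" by (rule restrict_last)
  moreover have "(\<lambda>z. xgate n \<Phi> (z @ [False])) = (\<lambda>z. \<Phi> (z @ [True]))"
  proof
    fix z
    show "xgate n \<Phi> (z @ [False]) = \<Phi> (z @ [True])"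
    proof (cases "length z = n")
      case True
      then show ?thesis using upd_app_last[of z False True] by (simp add: xgate_def nth_append)
    next
      case False
      have v: "valid (Suc n) \<Phi>" using assms by (rule stab_valid)
      then show ?thesis using False
        by (simp add: xgate_def validD)
    qed
  qed
  ultimately show ?thesis by simp
qed


lemma xor_vec_length[simp]: "length (xor_vec x y) = min (length x) (length y)"
  by (simp add: xor_vec_def)
lemma xor_vec_nth[simp]: "i < length x \<Longrightarrow> i < length y \<Longrightarrow> xor_vec x y ! i = (x ! i \<noteq> y ! i)"
  by (simp add: xor_vec_def)

definition aff1 :: "nat \<Rightarrow> (bool list \<Rightarrow> bool) \<Rightarrow> bool" where
  "aff1 n g \<longleftrightarrow> (\<forall>y y'. length y = n \<longrightarrow> length y' = n \<longrightarrow>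
      g (xor_vec y y') = ((g y \<noteq> g y') \<noteq> g (replicate n False)))"

lemma aff1_cong: assumes "aff1 n g" "\<And>y. length y = n \<Longrightarrow> g y = g' y" shows "aff1 n g'"
  using assms unfolding aff1_def by (metis length_replicate min.idem xor_vec_length)

definition affine :: "nat \<Rightarrow> nat \<Rightarrow> (bool list \<Rightarrow> bool list) \<Rightarrow> bool" where
  "affine n K h \<longleftrightarrow> (\<forall>y. length y = n \<longrightarrow> length (h y) = K) \<and> (\<forall>i<K. aff1 n (\<lambda>y. h y ! i))"

definition par :: "nat set \<Rightarrow> bool list \<Rightarrow> bool" where
  "par S y = odd (card {j\<in>S. y ! j})"

definition ind :: "nat \<Rightarrow> nat set \<Rightarrow> bool list" where
  "ind n T = map (\<lambda>j. j \<in> T) [0..<n]"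

lemma aff1_repr:
  assumes "aff1 n g" "length y = n"
  shows "g y = (g (replicate n False) \<noteq> par {j. j < n \<and> g (ind n {j}) \<noteq> g (replicate n False)} y)"
proof -
  define g0 where "g0 = g (replicate n False)"
  define S where "S = {j. j < n \<and> g (ind n {j}) \<noteq> g0}"
  have main: "T \<subseteq> {..<n} \<Longrightarrow> g (ind n T) = (g0 \<noteq> odd (card {j\<in>T. j \<in> S}))" if "finite T" for T
    using that
  proof (induction T rule: finite_induct)
    case empty
    have "ind n {} = replicate n False" by (simp add: ind_def map_replicate_const)
    then show ?case by (simp add: g0_def)
  next
    case (insert j T)
    have jn: "j < n" using insert.prems by auto
    have e: "ind n (insert j T) = xor_vec (ind n T) (ind n {j})"
      using insert.hyps(2) by (intro nth_equalityI) (auto simp: ind_def)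
    have "g (ind n (insert j T)) = ((g (ind n T) \<noteq> g (ind n {j})) \<noteq> g0)"
      unfolding e g0_def using assms(1) unfolding aff1_def by (simp add: ind_def)
    also have "\<dots> = ((g0 \<noteq> odd (card {i\<in>T. i \<in> S})) \<noteq> (j \<in> S))"
      using insert.IH insert.prems jn unfolding S_def by auto
    also have "\<dots> = (g0 \<noteq> odd (card {i\<in>insert j T. i \<in> S}))"
    proof (cases "j \<in> S")
      case True
      have "{i\<in>insert j T. i \<in> S} = insert j {i\<in>T. i \<in> S}" using True by auto
      then have "card {i\<in>insert j T. i \<in> S} = Suc (card {i\<in>T. i \<in> S})"
        using insert.hyps by simp
      then show ?thesis using True by simp
    next
      case False
      have "{i\<in>insert j T. i \<in> S} = {i\<in>T. i \<in> S}" using False by auto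
      then show ?thesis using False by simp
    qed
    finally show ?case .
  qed
  have y: "y = ind n {j. j < n \<and> y ! j}"
    using assms(2) by (intro nth_equalityI) (auto simp: ind_def)
  have "g y = (g0 \<noteq> odd (card {i\<in>{j. j < n \<and> y ! j}. i \<in> S}))"
    using main[of "{j. j < n \<and> y ! j}"] y by auto
  moreover have "{i\<in>{j. j < n \<and> y ! j}. i \<in> S} = {j\<in>S. y ! j}" unfolding S_def by auto
  ultimately show ?thesis unfolding par_def S_def g0_def by simp
qed

definition tchain :: "nat \<Rightarrow> nat list \<Rightarrow> qstate \<Rightarrow> qstate" where
  "tchain t ss \<psi> = foldr (\<lambda>s. cnot s t) ss \<psi>"

lemma tchain_eval:
  assumes "distinct ss" "t \<notin> set ss" "t < length y"
  shows "tchain t ss \<psi> y = \<psi> (y[t := (y ! t \<noteq> par (set ss) y)])"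
  using assms
proof (induction ss arbitrary: y)
  case Nil
  then show ?case by (simp add: tchain_def par_def)
next
  case (Cons s ss)
  have "tchain t (s # ss) \<psi> y = tchain t ss \<psi> (y[t := (y ! t \<noteq> y ! s)])"
    by (simp add: tchain_def cnot_def)
  also have "\<dots> = \<psi> ((y[t := (y ! t \<noteq> y ! s)])[t := ((y[t := (y ! t \<noteq> y ! s)]) ! t \<noteq> par (set ss) (y[t := (y ! t \<noteq> y ! s)]))])"
    using Cons by simp
  also have "par (set ss) (y[t := (y ! t \<noteq> y ! s)]) = par (set ss) y"
    unfolding par_def using Cons.prems by (intro arg_cong[where f="\<lambda>A. odd (card A)"]) (auto simp: nth_list_update)
  also have "par (set (s # ss)) y = (y ! s \<noteq> par (set ss) y)"
  proof (cases "y ! s")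
    case True
    have "{j\<in>set (s # ss). y ! j} = insert s {j\<in>set ss. y ! j}" using True by auto
    then show ?thesis using True Cons.prems by (simp add: par_def)
  next
    case False
    have "{j\<in>set (s # ss). y ! j} = {j\<in>set ss. y ! j}" using False by auto
    then show ?thesis using False by (simp add: par_def)
  qed
  moreover have "\<And>a b c :: bool. ((a \<noteq> b) \<noteq> c) = (a \<noteq> (b \<noteq> c))" by auto
  ultimately show ?case using Cons.prems by simp
qed

lemma stab_tchain: "\<psi> \<in> stab_states n \<Longrightarrow> t < n \<Longrightarrow> \<forall>s\<in>set ss. s < n \<and> s \<noteq> t \<Longrightarrow> tchain t ss \<psi> \<in> stab_states n"
  by (induction ss) (auto simp: tchain_def intro: stab_states.CNOT)

lemma par_app: "S \<subseteq> {..<length y} \<Longrightarrow> par S (y @ w) = par S y"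
  unfolding par_def by (intro arg_cong[where f="\<lambda>A. odd (card A)"]) (auto simp: nth_append)

lemma sub_lemma:
  "\<forall>\<Psi> h. \<Psi> \<in> stab_states (n + K) \<longrightarrow> affine n K h \<longrightarrow>
      (\<lambda>y. if length y = n then \<Psi> (y @ h y) else 0) \<in> sstab n"
proof (induction K)
  case 0
  show ?case
  proof (intro allI impI)
    fix \<Psi> h assume st: "\<Psi> \<in> stab_states (n + 0)" and af: "affine n 0 h"
    have "(\<lambda>y. if length y = n then \<Psi> (y @ h y) else 0) = \<Psi>"
    proof
      fix y
      show "(if length y = n then \<Psi> (y @ h y) else 0) = \<Psi> y"
        using af stab_valid[OF st] by (auto simp: affine_def validD)
    qed
    then show "(\<lambda>y. if length y = n then \<Psi> (y @ h y) else 0) \<in> sstab n"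
      using st by (simp add: stab_sstab)
  qed
next
  case (Suc K)
  show ?case
  proof (intro allI impI)
    fix \<Psi> h assume st: "\<Psi> \<in> stab_states (n + Suc K)" and af: "affine n (Suc K) h"
    define h' where "h' = (\<lambda>y. butlast (h y))"
    define g where "g = (\<lambda>y. h y ! K)"
    define g0 where "g0 = g (replicate n False)"
    define S where "S = {j. j < n \<and> g (ind n {j}) \<noteq> g0}"
    have Sn: "S \<subseteq> {..<n}" unfolding S_def by auto
    define ss where "ss = sorted_list_of_set S"
    have fS: "finite S" using Sn finite_subset by blast
    have ssS: "set ss = S" "distinct ss" unfolding ss_def using fS by auto
    have af': "affine n K h'"
      unfolding affine_def
    proof (intro conjI allI impI)
      fix y :: "bool list" assume "length y = n" then show "length (h' y) = K"
        using af unfolding affine_def h'_def by simp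
    next
      fix i assume i: "i < K"
      have "aff1 n (\<lambda>y. h y ! i)" using af i unfolding affine_def by simp
      then show "aff1 n (\<lambda>y. h' y ! i)"
        by (rule aff1_cong) (use af i in \<open>auto simp: h'_def affine_def nth_butlast\<close>)
    qed
    have ag: "aff1 n g" using af unfolding affine_def g_def by simp
    have hsplit: "h y = h' y @ [g y]" if "length y = n" for y
    proof -
      have "length (h y) = Suc K" using af that unfolding affine_def by simp
      then show ?thesis unfolding h'_def g_def
        by (metis append_butlast_last_id diff_Suc_1 last_conv_nth length_butlast list.size(3) nat.distinct(1))
    qed
    have grep: "g y = (g0 \<noteq> par S y)" if "length y = n" for y
      using aff1_repr[OF ag that] unfolding S_def g0_def by simp
    define t where "t = n + K"
    define \<Psi>1 where "\<Psi>1 = tchain t ss \<Psi>"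
    have st1: "\<Psi>1 \<in> stab_states (Suc (n + K))"
      unfolding \<Psi>1_def using st ssS Sn unfolding t_def
      by (intro stab_tchain) auto
    have "(\<lambda>z. \<Psi>1 (z @ [g0])) \<in> sstab (n + K)"
      using restrict_last[OF st1] restrict_last_T[OF st1] by (cases g0) auto
    then obtain c \<Phi>' where \<Phi>': "\<Phi>' \<in> stab_states (n + K)" "(\<lambda>z. \<Psi>1 (z @ [g0])) = smul c \<Phi>'"
      by (rule sstabE)
    have IH: "(\<lambda>y. if length y = n then \<Phi>' (y @ h' y) else 0) \<in> sstab n"
      using Suc.IH \<Phi>'(1) af' by blast
    have eq: "(\<lambda>y. if length y = n then \<Psi> (y @ h y) else 0) =
              smul c (\<lambda>y. if length y = n then \<Phi>' (y @ h' y) else 0)"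
    proof
      fix y
      show "(if length y = n then \<Psi> (y @ h y) else 0) = smul c (\<lambda>y. if length y = n then \<Phi>' (y @ h' y) else 0) y"
      proof (cases "length y = n")
        case True
        have lh': "length (h' y) = K" using af' True unfolding affine_def by simp
        have "c * \<Phi>' (y @ h' y) = \<Psi>1 ((y @ h' y) @ [g0])" using \<Phi>'(2) by (metis smul_def)
        also have "\<dots> = \<Psi> (((y @ h' y) @ [g0])[t := (((y @ h' y) @ [g0]) ! t \<noteq> par S ((y @ h' y) @ [g0]))])"
          unfolding \<Psi>1_def using ssS Sn True lh' unfolding t_def
          by (subst tchain_eval) auto
        also have "((y @ h' y) @ [g0]) ! t = g0" using True lh' unfolding t_def by (simp add: nth_append)
        also have "par S ((y @ h' y) @ [g0]) = par S y"
          using Sn True by (simp add: par_app)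
        also have "((y @ h' y) @ [g0])[t := (g0 \<noteq> par S y)] = (y @ h' y) @ [g0 \<noteq> par S y]"
          using True lh' upd_app_last[of "y @ h' y" g0] unfolding t_def by simp
        also have "\<dots> = y @ h y" using hsplit[OF True] grep[OF True] by simp
        finally show ?thesis using True by (simp add: smul_def)
      next
        case False
        then show ?thesis by (simp add: smul_def)
      qed
    qed
    show "(\<lambda>y. if length y = n then \<Psi> (y @ h y) else 0) \<in> sstab n"
      unfolding eq using IH by (rule sstab_smul)
  qed
qed

lemma substitution:
  assumes "\<Psi> \<in> stab_states (n + K)" "affine n K h"
  shows "(\<lambda>y. if length y = n then \<Psi> (y @ h y) else 0) \<in> sstab n"
  using sub_lemma assms by blast


definition tensor :: "nat \<Rightarrow> nat \<Rightarrow> qstate \<Rightarrow> qstate \<Rightarrow> qstate" where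
  "tensor n1 n2 \<psi> \<phi> = (\<lambda>y. if length y = n1 + n2 then \<psi> (take n1 y) * \<phi> (drop n1 y) else 0)"

lemma tensor_app: "length y = n1 \<Longrightarrow> length w = n2 \<Longrightarrow> tensor n1 n2 \<psi> \<phi> (y @ w) = \<psi> y * \<phi> w"
  by (simp add: tensor_def)

lemma valid_tensor: "valid (n1 + n2) (tensor n1 n2 \<psi> \<phi>)"
  by (simp add: valid_def tensor_def)

lemma tensor_ket0: "tensor n1 n2 (ket0 n1) (ket0 n2) = ket0 (n1 + n2)"
proof
  fix y
  show "tensor n1 n2 (ket0 n1) (ket0 n2) y = ket0 (n1 + n2) y"
  proof (cases "length y = n1 + n2")
    case True
    have sp: "(\<forall>i<n1+n2. P i) \<longleftrightarrow> (\<forall>i<n1. P i) \<and> (\<forall>i<n2. P (n1 + i))" for P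
      by (auto, metis add_diff_inverse_nat add_less_cancel_left)
    have "y = replicate (n1 + n2) False \<longleftrightarrow> (\<forall>i<n1+n2. \<not> y ! i)"
      using True by (auto simp: list_eq_iff_nth_eq)
    moreover have "take n1 y = replicate n1 False \<longleftrightarrow> (\<forall>i<n1. \<not> y ! i)"
      using True by (auto simp: list_eq_iff_nth_eq)
    moreover have "drop n1 y = replicate n2 False \<longleftrightarrow> (\<forall>i<n2. \<not> y ! (n1 + i))"
      using True by (auto simp: list_eq_iff_nth_eq)
    ultimately have "y = replicate (n1 + n2) False \<longleftrightarrow> take n1 y = replicate n1 False \<and> drop n1 y = replicate n2 False"
      using sp by simp
    then show ?thesis using True by (auto simp: tensor_def ket0_def)
  next
    case False then show ?thesis by (auto simp: tensor_def ket0_def)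
  qed
qed

lemma tensor_hgate_r: "valid n2 \<phi> \<Longrightarrow> j < n2 \<Longrightarrow> tensor n1 n2 \<psi> (hgate j \<phi>) = hgate (n1 + j) (tensor n1 n2 \<psi> \<phi>)"
proof
  fix y assume v: "valid n2 \<phi>" and j: "j < n2"
  show "tensor n1 n2 \<psi> (hgate j \<phi>) y = hgate (n1 + j) (tensor n1 n2 \<psi> \<phi>) y"
  proof (cases "length y = n1 + n2")
    case True
    then show ?thesis using j by (simp add: tensor_def hgate_def drop_update_swap algebra_simps)
  next
    case False then show ?thesis by (simp add: tensor_def hgate_def)
  qed
qed

lemma tensor_sgate_r: "j < n2 \<Longrightarrow> tensor n1 n2 \<psi> (sgate j \<phi>) = sgate (n1 + j) (tensor n1 n2 \<psi> \<phi>)"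
proof
  fix y assume j: "j < n2"
  show "tensor n1 n2 \<psi> (sgate j \<phi>) y = sgate (n1 + j) (tensor n1 n2 \<psi> \<phi>) y"
  proof (cases "length y = n1 + n2")
    case True
    then show ?thesis using j by (simp add: tensor_def sgate_def algebra_simps)
  next
    case False then show ?thesis by (simp add: tensor_def sgate_def)
  qed
qed

lemma tensor_cnot_r: "a < n2 \<Longrightarrow> b < n2 \<Longrightarrow> tensor n1 n2 \<psi> (cnot a b \<phi>) = cnot (n1 + a) (n1 + b) (tensor n1 n2 \<psi> \<phi>)"
proof
  fix y assume ab: "a < n2" "b < n2"
  show "tensor n1 n2 \<psi> (cnot a b \<phi>) y = cnot (n1 + a) (n1 + b) (tensor n1 n2 \<psi> \<phi>) y"
  proof (cases "length y = n1 + n2")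
    case True
    then show ?thesis using ab by (simp add: tensor_def cnot_def drop_update_swap)
  next
    case False then show ?thesis by (simp add: tensor_def cnot_def)
  qed
qed

lemma tensor_hgate_l: "j < n1 \<Longrightarrow> tensor n1 n2 (hgate j \<psi>) \<phi> = hgate j (tensor n1 n2 \<psi> \<phi>)"
proof
  fix y assume j: "j < n1"
  show "tensor n1 n2 (hgate j \<psi>) \<phi> y = hgate j (tensor n1 n2 \<psi> \<phi>) y"
  proof (cases "length y = n1 + n2")
    case True
    then show ?thesis using j by (simp add: tensor_def hgate_def take_update_swap algebra_simps add_divide_distrib)
  next
    case False then show ?thesis by (simp add: tensor_def hgate_def)
  qed
qed

lemma tensor_sgate_l: "j < n1 \<Longrightarrow> tensor n1 n2 (sgate j \<psi>) \<phi> = sgate j (tensor n1 n2 \<psi> \<phi>)"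
proof
  fix y assume j: "j < n1"
  show "tensor n1 n2 (sgate j \<psi>) \<phi> y = sgate j (tensor n1 n2 \<psi> \<phi>) y"
  proof (cases "length y = n1 + n2")
    case True
    then show ?thesis using j by (simp add: tensor_def sgate_def algebra_simps)
  next
    case False then show ?thesis by (simp add: tensor_def sgate_def)
  qed
qed

lemma tensor_cnot_l: "a < n1 \<Longrightarrow> b < n1 \<Longrightarrow> tensor n1 n2 (cnot a b \<psi>) \<phi> = cnot a b (tensor n1 n2 \<psi> \<phi>)"
proof
  fix y assume ab: "a < n1" "b < n1"
  show "tensor n1 n2 (cnot a b \<psi>) \<phi> y = cnot a b (tensor n1 n2 \<psi> \<phi>) y"
  proof (cases "length y = n1 + n2")
    case True
    then show ?thesis using ab by (simp add: tensor_def cnot_def take_update_swap)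
  next
    case False then show ?thesis by (simp add: tensor_def cnot_def)
  qed
qed

lemma stab_tensor_ket0: "\<phi> \<in> stab_states n2 \<Longrightarrow> tensor n1 n2 (ket0 n1) \<phi> \<in> stab_states (n1 + n2)"
proof (induction rule: stab_states.induct)
  case init
  then show ?case by (simp add: tensor_ket0 stab_states.init)
next
  case (H \<psi> j)
  then show ?case by (simp add: tensor_hgate_r stab_valid stab_states.H)
next
  case (S \<psi> j)
  then show ?case by (simp add: tensor_sgate_r stab_states.S)
next
  case (CNOT \<psi> a b)
  then show ?case by (simp add: tensor_cnot_r stab_states.CNOT)
qed

lemma stab_tensor: "\<psi> \<in> stab_states n1 \<Longrightarrow> \<phi> \<in> stab_states n2 \<Longrightarrow> tensor n1 n2 \<psi> \<phi> \<in> stab_states (n1 + n2)"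
proof (induction rule: stab_states.induct)
  case init
  then show ?case by (rule stab_tensor_ket0)
next
  case (H \<psi> j)
  then show ?case by (simp add: tensor_hgate_l stab_states.H)
next
  case (S \<psi> j)
  then show ?case by (simp add: tensor_sgate_l stab_states.S)
next
  case (CNOT \<psi> a b)
  then show ?case by (simp add: tensor_cnot_l stab_states.CNOT)
qed

lemma basis_ind_stab: "finite T \<Longrightarrow> T \<subseteq> {..<n} \<Longrightarrow> basis (ind n T) \<in> stab_states n"
proof (induction T rule: finite_induct)
  case empty
  have "ind n {} = replicate n False" by (simp add: ind_def map_replicate_const)
  then show ?case by (simp add: ket0_basis[symmetric] stab_states.init)
next
  case (insert j T)
  have jn: "j < n" using insert.prems by auto
  have "basis (ind n (insert j T)) = xgate j (basis (ind n T))"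
  proof
    fix y
    show "basis (ind n (insert j T)) y = xgate j (basis (ind n T)) y"
    proof (cases "length y = n")
      case True
      have "(y = ind n (insert j T)) \<longleftrightarrow> (y[j := (\<not> y ! j)] = ind n T)"
        using True jn insert.hyps(2)
        by (auto simp: list_eq_iff_nth_eq ind_def nth_list_update)
      then show ?thesis by (simp add: basis_def xgate_def)
    next
      case False
      have l1: "length (y[j := (\<not> y ! j)]) \<noteq> n" using False by simp
      have l2: "length (ind n T) = n" "length (ind n (insert j T)) = n" by (simp_all add: ind_def)
      have "y[j := (\<not> y ! j)] \<noteq> ind n T" using l1 l2(1) by metis
      moreover have "y \<noteq> ind n (insert j T)" using False l2(2) by metis
      ultimately have "y[j := (\<not> y ! j)] \<noteq> ind n T" "y \<noteq> ind n (insert j T)" by auto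
      then show ?thesis by (simp add: basis_def xgate_def)
    qed
  qed
  then show ?case using insert jn by (simp add: stab_xgate)
qed

lemma basis_stab: "length w = n \<Longrightarrow> basis w \<in> stab_states n"
proof -
  assume w: "length w = n"
  have "w = ind n {j. j < n \<and> w ! j}" using w by (intro nth_equalityI) (auto simp: ind_def)
  then show ?thesis using basis_ind_stab[of "{j. j < n \<and> w ! j}" n] by auto
qed

definition decomp :: "nat \<Rightarrow> qstate \<Rightarrow> nat \<Rightarrow> bool" where
  "decomp n \<psi> k \<longleftrightarrow> (\<exists>c \<Phi>. (\<forall>i<k. \<Phi> i \<in> stab_states n) \<and> \<psi> = (\<lambda>x. \<Sum>i<k. c i * \<Phi> i x))"

lemma stab_rank_alt: "stab_rank n \<psi> = (LEAST k. decomp n \<psi> k)"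
  by (simp add: stab_rank_def decomp_def)

lemma rank_le: "decomp n \<psi> k \<Longrightarrow> stab_rank n \<psi> \<le> k"
  unfolding stab_rank_alt by (rule Least_le)

lemma decomp_set:
  assumes "finite I" "\<And>i. i \<in> I \<Longrightarrow> \<Phi> i \<in> stab_states n" "\<psi> = (\<lambda>x. \<Sum>i\<in>I. c i * \<Phi> i x)"
  shows "decomp n \<psi> (card I)"
proof -
  obtain h where h: "bij_betw h {0..<card I} I" using ex_bij_betw_nat_finite[OF assms(1)] by blast
  have "\<psi> = (\<lambda>x. \<Sum>p<card I. c (h p) * \<Phi> (h p) x)"
  proof
    fix x
    have "(\<Sum>i\<in>I. c i * \<Phi> i x) = (\<Sum>p\<in>{0..<card I}. c (h p) * \<Phi> (h p) x)"
      using sum.reindex_bij_betw[OF h, of "\<lambda>i. c i * \<Phi> i x"] by simp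
    then show "\<psi> x = (\<Sum>p<card I. c (h p) * \<Phi> (h p) x)" using assms(3) by (simp add: atLeast0LessThan)
  qed
  moreover have "\<forall>p<card I. \<Phi> (h p) \<in> stab_states n"
    using h assms(2) bij_betwE by fastforce
  ultimately show ?thesis unfolding decomp_def
    by (intro exI[of _ "c \<circ> h"] exI[of _ "\<Phi> \<circ> h"]) auto
qed

lemma rank_set:
  assumes "finite I" "\<And>i. i \<in> I \<Longrightarrow> \<Phi> i \<in> stab_states n" "\<psi> = (\<lambda>x. \<Sum>i\<in>I. c i * \<Phi> i x)"
  shows "stab_rank n \<psi> \<le> card I"
  by (rule rank_le, rule decomp_set[OF assms])

lemma rank_sstab_sum:
  assumes "finite I" "\<And>i. i \<in> I \<Longrightarrow> F i \<in> sstab n" "\<psi> = (\<lambda>x. \<Sum>i\<in>I. F i x)"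
  shows "stab_rank n \<psi> \<le> card I"
proof -
  have "\<forall>i\<in>I. \<exists>p. snd p \<in> stab_states n \<and> F i = smul (fst p) (snd p)"
  proof
    fix i assume "i \<in> I"
    then obtain c \<Phi> where "\<Phi> \<in> stab_states n" "F i = smul c \<Phi>" by (rule sstabE[OF assms(2)])
    then show "\<exists>p. snd p \<in> stab_states n \<and> F i = smul (fst p) (snd p)" by (intro exI[of _ "(c, \<Phi>)"]) simp
  qed
  from bchoice[OF this] obtain f where f: "\<forall>i\<in>I. snd (f i) \<in> stab_states n \<and> F i = smul (fst (f i)) (snd (f i))" ..
  define c where "c = (\<lambda>i. fst (f i))"
  define \<Phi> where "\<Phi> = (\<lambda>i. snd (f i))"
  have cP: "\<And>i. i \<in> I \<Longrightarrow> \<Phi> i \<in> stab_states n \<and> F i = smul (c i) (\<Phi> i)"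
    using f unfolding c_def \<Phi>_def by blast
  have "\<psi> = (\<lambda>x. \<Sum>i\<in>I. c i * \<Phi> i x)"
    using assms(3) cP by (auto simp: smul_def intro!: sum.cong)
  then show ?thesis using assms(1) cP by (intro rank_set) auto
qed


lemma decomp_exists: assumes "valid n \<psi>" shows "\<exists>k. decomp n \<psi> k"
proof -
  define W where "W = {w :: bool list. length w = n}"
  have fW: "finite W" unfolding W_def using finite_lists_length_eq[of "UNIV :: bool set" n] by simp
  have eq: "\<psi> = (\<lambda>x. \<Sum>w\<in>W. \<psi> w * basis w x)"
  proof
    fix x
    show "\<psi> x = (\<Sum>w\<in>W. \<psi> w * basis w x)"
    proof (cases "x \<in> W")
      case True
      have "(\<Sum>w\<in>W. \<psi> w * basis w x) = (\<Sum>w\<in>W. if w = x then \<psi> x else 0)"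
        by (intro sum.cong) (auto simp: basis_def)
      then show ?thesis using True fW by simp
    next
      case False
      then have "\<psi> x = 0" using assms unfolding W_def by (simp add: validD)
      moreover have "(\<Sum>w\<in>W. \<psi> w * basis w x) = 0"
        using False by (intro sum.neutral) (auto simp: basis_def)
      ultimately show ?thesis by simp
    qed
  qed
  have "decomp n \<psi> (card W)"
    by (rule decomp_set[OF fW _ eq]) (simp add: W_def basis_stab)
  then show ?thesis by (rule exI)
qed

lemma rank_decomp: "valid n \<psi> \<Longrightarrow> decomp n \<psi> (stab_rank n \<psi>)"
  unfolding stab_rank_alt by (rule LeastI_ex, rule decomp_exists)

lemma decomp_smul: assumes "decomp n \<psi> k" shows "decomp n (smul a \<psi>) k"
proof -
  obtain c \<Phi> where d: "\<forall>i<k. \<Phi> i \<in> stab_states n" "\<psi> = (\<lambda>x. \<Sum>i<k. c i * \<Phi> i x)"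
    using assms unfolding decomp_def by blast
  have "smul a \<psi> = (\<lambda>x. \<Sum>i<k. (a * c i) * \<Phi> i x)"
    unfolding d(2) by (auto simp: smul_def sum_distrib_left algebra_simps)
  then show ?thesis using d(1) unfolding decomp_def
    by (intro exI[of _ "\<lambda>i. a * c i"] exI[of _ \<Phi>]) auto
qed

lemma rank_smul: assumes "valid n \<psi>" shows "stab_rank n (smul a \<psi>) \<le> stab_rank n \<psi>"
  by (rule rank_le, rule decomp_smul, rule rank_decomp[OF assms])

lemma decomp_tensor:
  assumes "decomp n1 \<psi> k1" "decomp n2 \<phi> k2"
  shows "decomp (n1 + n2) (tensor n1 n2 \<psi> \<phi>) (k1 * k2)"
proof -
  obtain c \<Phi> where d1: "\<forall>i<k1. \<Phi> i \<in> stab_states n1" "\<psi> = (\<lambda>x. \<Sum>i<k1. c i * \<Phi> i x)"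
    using assms(1) unfolding decomp_def by blast
  obtain d \<Theta> where d2: "\<forall>i<k2. \<Theta> i \<in> stab_states n2" "\<phi> = (\<lambda>x. \<Sum>i<k2. d i * \<Theta> i x)"
    using assms(2) unfolding decomp_def by blast
  define I where "I = {..<k1} \<times> {..<k2}"
  have "tensor n1 n2 \<psi> \<phi> = (\<lambda>x. \<Sum>p\<in>I. (c (fst p) * d (snd p)) * tensor n1 n2 (\<Phi> (fst p)) (\<Theta> (snd p)) x)"
  proof
    fix x
    show "tensor n1 n2 \<psi> \<phi> x = (\<Sum>p\<in>I. (c (fst p) * d (snd p)) * tensor n1 n2 (\<Phi> (fst p)) (\<Theta> (snd p)) x)"
    proof (cases "length x = n1 + n2")
      case True
      have "tensor n1 n2 \<psi> \<phi> x = (\<Sum>i<k1. c i * \<Phi> i (take n1 x)) * (\<Sum>j<k2. d j * \<Theta> j (drop n1 x))"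
        using True unfolding d1(2) d2(2) by (simp add: tensor_def)
      also have "\<dots> = (\<Sum>i<k1. \<Sum>j<k2. (c i * \<Phi> i (take n1 x)) * (d j * \<Theta> j (drop n1 x)))"
        by (simp add: sum_product)
      also have "\<dots> = (\<Sum>p\<in>I. (c (fst p) * \<Phi> (fst p) (take n1 x)) * (d (snd p) * \<Theta> (snd p) (drop n1 x)))"
        unfolding I_def by (simp add: sum.cartesian_product split_beta)
      also have "\<dots> = (\<Sum>p\<in>I. (c (fst p) * d (snd p)) * tensor n1 n2 (\<Phi> (fst p)) (\<Theta> (snd p)) x)"
        using True by (intro sum.cong) (auto simp: tensor_def)
      finally show ?thesis .
    next
      case False
      then show ?thesis by (simp add: tensor_def)
    qed
  qed
  moreover have "finite I" unfolding I_def by simp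
  moreover have "\<And>p. p \<in> I \<Longrightarrow> tensor n1 n2 (\<Phi> (fst p)) (\<Theta> (snd p)) \<in> stab_states (n1 + n2)"
    unfolding I_def using d1(1) d2(1) by (auto intro: stab_tensor)
  ultimately have "decomp (n1 + n2) (tensor n1 n2 \<psi> \<phi>) (card I)"
    by (intro decomp_set) auto
  then show ?thesis unfolding I_def by (simp add: card_cartesian_product)
qed

lemma rank_tensor:
  assumes "valid n1 \<psi>" "valid n2 \<phi>"
  shows "stab_rank (n1 + n2) (tensor n1 n2 \<psi> \<phi>) \<le> stab_rank n1 \<psi> * stab_rank n2 \<phi>"
  by (rule rank_le, rule decomp_tensor, rule rank_decomp[OF assms(1)], rule rank_decomp[OF assms(2)])


definition zerov :: "nat \<Rightarrow> bool list" where "zerov m = replicate m False"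

definition dotp :: "bool list \<Rightarrow> bool list \<Rightarrow> bool" where
  "dotp x y = odd (\<Sum>j<length x. if x ! j \<and> y ! j then 1 else 0 :: nat)"

definition dual :: "nat \<Rightarrow> bool list set \<Rightarrow> bool list set" where
  "dual m L = {y. length y = m \<and> (\<forall>x\<in>L. \<not> dotp x y)}"

definition supp_in :: "nat set \<Rightarrow> bool list \<Rightarrow> bool" where
  "supp_in J a \<longleftrightarrow> (\<forall>i<length a. a ! i \<longrightarrow> i \<in> J)"

definition DecP :: "nat \<Rightarrow> bool list set \<Rightarrow> nat set \<Rightarrow> bool" where
  "DecP m V J \<longleftrightarrow> (\<forall>y. length y = m \<longrightarrow> (\<exists>!a. length a = m \<and> supp_in J a \<and> xor_vec y a \<in> V))"

lemma xor_comm: "xor_vec x y = xor_vec y x"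
  by (rule nth_equalityI) auto
lemma xor_assoc: "length x = length y \<Longrightarrow> length y = length z \<Longrightarrow> xor_vec (xor_vec x y) z = xor_vec x (xor_vec y z)"
  by (rule nth_equalityI) auto
lemma xor_self: "xor_vec x x = zerov (length x)"
  by (rule nth_equalityI) (auto simp: zerov_def)
lemma xor_zero: "length x = m \<Longrightarrow> xor_vec x (zerov m) = x"
  by (rule nth_equalityI) (auto simp: zerov_def)
lemma xor_zero_l: "length x = m \<Longrightarrow> xor_vec (zerov m) x = x"
  by (rule nth_equalityI) (auto simp: zerov_def)
lemma xor_cancel: "length x = length y \<Longrightarrow> xor_vec (xor_vec x y) y = x"
  by (rule nth_equalityI) auto
lemma xor_cancel_l: "length x = length y \<Longrightarrow> xor_vec x (xor_vec x y) = y"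
  by (rule nth_equalityI) auto
lemma zerov_length[simp]: "length (zerov m) = m" by (simp add: zerov_def)
lemma zerov_nth[simp]: "i < m \<Longrightarrow> zerov m ! i = False" by (simp add: zerov_def)

lemma odd_sum_xor:
  "odd (\<Sum>j<n. if P j \<and> (Q j \<noteq> R j) then 1 else 0 :: nat) =
   (odd (\<Sum>j<n. if P j \<and> Q j then 1 else 0 :: nat) \<noteq> odd (\<Sum>j<n. if P j \<and> R j then 1 else 0 :: nat))"
proof -
  have e: "(\<Sum>j<n. if P j \<and> (Q j \<noteq> R j) then 1 else 0 :: nat) + 2 * (\<Sum>j<n. if P j \<and> Q j \<and> R j then 1 else 0 :: nat)
     = (\<Sum>j<n. if P j \<and> Q j then 1 else 0 :: nat) + (\<Sum>j<n. if P j \<and> R j then 1 else 0 :: nat)"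
    by (simp add: sum.distrib[symmetric] sum_distrib_left) (intro sum.cong, auto)
  show ?thesis using arg_cong[OF e, of odd] by simp
qed

lemma dotp_xor_r: "length y = length x \<Longrightarrow> length z = length x \<Longrightarrow> dotp x (xor_vec y z) = (dotp x y \<noteq> dotp x z)"
proof -
  assume l: "length y = length x" "length z = length x"
  have "(\<Sum>j<length x. if x ! j \<and> xor_vec y z ! j then 1 else 0 :: nat) = (\<Sum>j<length x. if x ! j \<and> (y ! j \<noteq> z ! j) then 1 else 0)"
    using l by (intro sum.cong) auto
  then show ?thesis unfolding dotp_def using odd_sum_xor by simp
qed

lemma dotp_xor_l: "length x' = length x \<Longrightarrow> dotp (xor_vec x x') y = (dotp x y \<noteq> dotp x' y)"
proof -
  assume l: "length x' = length x"
  have "(\<Sum>j<length x. if xor_vec x x' ! j \<and> y ! j then 1 else 0 :: nat) = (\<Sum>j<length x. if y ! j \<and> (x ! j \<noteq> x' ! j) then 1 else 0)"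
    using l by (intro sum.cong) auto
  moreover have "(\<Sum>j<length x. if x ! j \<and> y ! j then 1 else 0 :: nat) = (\<Sum>j<length x. if y ! j \<and> x ! j then 1 else 0)"
    by (intro sum.cong) auto
  moreover have "(\<Sum>j<length x'. if x' ! j \<and> y ! j then 1 else 0 :: nat) = (\<Sum>j<length x. if y ! j \<and> x' ! j then 1 else 0)"
    using l by (intro sum.cong) auto
  ultimately show ?thesis unfolding dotp_def using l odd_sum_xor[where n="length x" and P="\<lambda>j. y ! j" and Q="\<lambda>j. x ! j" and R="\<lambda>j. x' ! j"] by simp
qed

lemma dotp_zero_r: "dotp x (zerov m) = False" if "length x \<le> m"
  using that unfolding dotp_def by (subst sum.neutral) auto

lemma dotp_zero_l: "dotp (zerov m) y = False"
  unfolding dotp_def by (subst sum.neutral) auto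

lemma dual_xor: "y \<in> dual m L \<Longrightarrow> y' \<in> dual m L \<Longrightarrow> L \<subseteq> {x. length x = m} \<Longrightarrow> xor_vec y y' \<in> dual m L"
  unfolding dual_def by (auto simp: dotp_xor_r subset_iff)

lemma dual_zero: "L \<subseteq> {x. length x = m} \<Longrightarrow> zerov m \<in> dual m L"
  unfolding dual_def by (auto simp: dotp_zero_r subset_iff)

lemma linear_dual: "L \<subseteq> {x. length x = m} \<Longrightarrow> linear_code m (dual m L)"
  unfolding linear_code_def using dual_xor dual_zero[unfolded zerov_def] by (auto simp: dual_def)

definition unitv :: "nat \<Rightarrow> nat \<Rightarrow> bool list" where "unitv m j = (zerov m)[j := True]"

lemma unitv_length[simp]: "length (unitv m j) = m" by (simp add: unitv_def)
lemma unitv_nth: "i < m \<Longrightarrow> j < m \<Longrightarrow> unitv m j ! i = (i = j)" by (simp add: unitv_def nth_list_update)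


lemma dotp_unitv: "length x = m \<Longrightarrow> j < m \<Longrightarrow> dotp x (unitv m j) = x ! j"
proof -
  assume a: "length x = m" "j < m"
  have "(\<Sum>i<m. if x ! i \<and> unitv m j ! i then 1 else 0 :: nat) = (\<Sum>i<m. if i = j then (if x ! j then 1 else 0) else 0)"
    using a by (intro sum.cong) (auto simp: unitv_nth)
  also have "\<dots> = (if x ! j then 1 else 0)" using a by simp
  finally show ?thesis unfolding dotp_def using a by simp
qed

lemma supp_in_length_zero: "length a = m \<Longrightarrow> supp_in {} a \<Longrightarrow> a = zerov m"
  unfolding supp_in_def by (intro nth_equalityI) auto

lemma info_set:
  "linear_code m L \<Longrightarrow> card L = 2 ^ k \<Longrightarrow> \<exists>J. J \<subseteq> {..<m} \<and> card J = k \<and> DecP m (dual m L) J"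
proof (induction k arbitrary: L)
  case 0
  have z: "zerov m \<in> L" using 0(1) unfolding linear_code_def zerov_def by simp
  have "finite L" using 0(2) by (intro card_ge_0_finite) simp
  then have L: "L = {zerov m}" using 0(2) z by (metis card_1_singletonE power_0 singletonD)
  have "DecP m (dual m L) {}"
    unfolding DecP_def
  proof (intro allI impI)
    fix y :: "bool list" assume y: "length y = m"
    show "\<exists>!a. length a = m \<and> supp_in {} a \<and> xor_vec y a \<in> dual m L"
    proof (rule ex1I[of _ "zerov m"])
      show "length (zerov m) = m \<and> supp_in {} (zerov m) \<and> xor_vec y (zerov m) \<in> dual m L"
        using y by (simp add: L supp_in_def xor_zero dual_def dotp_zero_l)
    next
      fix a assume "length a = m \<and> supp_in {} a \<and> xor_vec y a \<in> dual m L"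
      then show "a = zerov m" using supp_in_length_zero by blast
    qed
  qed
  then show ?case by (intro exI[of _ "{}"]) auto
next
  case (Suc k)
  have lin: "L \<subseteq> {x. length x = m}" "zerov m \<in> L" "\<And>x y. x \<in> L \<Longrightarrow> y \<in> L \<Longrightarrow> xor_vec x y \<in> L"
    using Suc.prems(1) unfolding linear_code_def zerov_def by auto
  have fin: "finite L" using Suc.prems(2) by (intro card_ge_0_finite) simp
  have "\<exists>x0\<in>L. x0 \<noteq> zerov m"
  proof (rule ccontr)
    assume "\<not> ?thesis"
    then have "L \<subseteq> {zerov m}" by auto
    then have "card L \<le> card {zerov m}" by (intro card_mono) simp_all
    then have "card L \<le> 1" by simp
    moreover have "(2::nat) \<le> 2 ^ Suc k" by simp
    ultimately show False using Suc.prems(2) by linarith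
  qed
  then obtain x0 where x0: "x0 \<in> L" "x0 \<noteq> zerov m" by blast
  have lx0: "length x0 = m" using x0(1) lin(1) by auto
  have "\<exists>j<m. x0 ! j"
  proof (rule ccontr)
    assume "\<not> (\<exists>j<m. x0 ! j)"
    then have "x0 = zerov m" using lx0 by (intro nth_equalityI) auto
    then show False using x0(2) by simp
  qed
  then obtain j0 where j0: "j0 < m" "x0 ! j0" by blast
  define L0 where "L0 = {x\<in>L. \<not> x ! j0}"
  have lin0: "linear_code m L0"
    unfolding linear_code_def L0_def using lin j0(1)
    by (auto simp: zerov_def subset_iff)
  have img: "L - L0 = xor_vec x0 ` L0"
  proof
    show "L - L0 \<subseteq> xor_vec x0 ` L0"
    proof
      fix x assume x: "x \<in> L - L0"
      then have lx: "length x = m" "x ! j0" using lin(1) L0_def by auto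
      have "xor_vec x0 x \<in> L0" using x lin(3)[OF x0(1)] lx lx0 j0 unfolding L0_def by auto
      moreover have "x = xor_vec x0 (xor_vec x0 x)" using lx lx0 by (simp add: xor_cancel_l)
      ultimately show "x \<in> xor_vec x0 ` L0" by blast
    qed
  next
    show "xor_vec x0 ` L0 \<subseteq> L - L0"
      using lin(3)[OF x0(1)] lin(1) lx0 j0 unfolding L0_def by auto
  qed
  have inj: "inj_on (xor_vec x0) L0"
  proof (rule inj_onI)
    fix x y assume xy: "x \<in> L0" "y \<in> L0" "xor_vec x0 x = xor_vec x0 y"
    have "length x = m" "length y = m" using xy(1,2) lin(1) L0_def by auto
    then have "x = xor_vec x0 (xor_vec x0 x)" "y = xor_vec x0 (xor_vec x0 y)" using lx0 by (simp_all add: xor_cancel_l)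
    then show "x = y" using xy(3) by simp
  qed
  have sub: "L0 \<subseteq> L" unfolding L0_def by auto
  have "card (L - L0) = card L - card L0" using fin sub by (intro card_Diff_subset) (auto intro: finite_subset)
  moreover have "card L0 \<le> card L" using fin sub by (intro card_mono)
  ultimately have "card L = card L0 + card (L - L0)" by simp
  also have "card (L - L0) = card L0" unfolding img using inj by (rule card_image)
  finally have "card L0 = 2 ^ k" using Suc.prems(2) by simp
  then obtain J0 where J0: "J0 \<subseteq> {..<m}" "card J0 = k" "DecP m (dual m L0) J0"
    using Suc.IH lin0 by blast
  define e where "e = unitv m j0"
  have le: "length e = m" by (simp add: e_def)
  have L0m: "L0 \<subseteq> {x. length x = m}" using lin(1) L0_def by auto
  have edual: "e \<in> dual m L0"
    unfolding dual_def e_def using L0m j0(1) by (auto simp: dotp_unitv L0_def subset_iff)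
  have ex1: "\<And>y. length y = m \<Longrightarrow> \<exists>!a. length a = m \<and> supp_in J0 a \<and> xor_vec y a \<in> dual m L0"
    using J0(3) unfolding DecP_def by blast
  have j0J0: "j0 \<notin> J0"
  proof
    assume j: "j0 \<in> J0"
    have "length (zerov m) = m \<and> supp_in J0 (zerov m) \<and> xor_vec (zerov m) (zerov m) \<in> dual m L0"
      using dual_zero[OF L0m] by (simp add: supp_in_def xor_zero)
    moreover have "length e = m \<and> supp_in J0 e \<and> xor_vec (zerov m) e \<in> dual m L0"
      using le edual j j0(1) by (auto simp: supp_in_def xor_zero_l e_def unitv_nth)
    moreover have "e \<noteq> zerov m"
    proof
      assume "e = zerov m"
      then have "e ! j0 = False" using j0(1) by simp
      then show False using j0(1) by (simp add: e_def unitv_nth)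
    qed
    ultimately show False using ex1[of "zerov m"] by auto
  qed
  have dualL: "dual m L = {w\<in>dual m L0. \<not> dotp x0 w}"
  proof
    show "dual m L \<subseteq> {w\<in>dual m L0. \<not> dotp x0 w}" using x0(1) unfolding dual_def L0_def by auto
  next
    show "{w\<in>dual m L0. \<not> dotp x0 w} \<subseteq> dual m L"
    proof
      fix w assume w: "w \<in> {w\<in>dual m L0. \<not> dotp x0 w}"
      have "\<not> dotp x w" if x: "x \<in> L" for x
      proof (cases "x ! j0")
        case False
        then show ?thesis using w x unfolding dual_def L0_def by auto
      next
        case True
        have lx: "length x = m" using x lin(1) by auto
        have x': "xor_vec x0 x \<in> L0" using lin(3)[OF x0(1) x] lx lx0 j0 True unfolding L0_def by auto
        have "x = xor_vec x0 (xor_vec x0 x)" using lx lx0 by (simp add: xor_cancel_l)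
        then have "dotp x w = dotp (xor_vec x0 (xor_vec x0 x)) w" by simp
        also have "\<dots> = (dotp x0 w \<noteq> dotp (xor_vec x0 x) w)"
          using lx lx0 by (intro dotp_xor_l) simp
        finally have "dotp x w = (dotp x0 w \<noteq> dotp (xor_vec x0 x) w)" .
        then show ?thesis using w x' unfolding dual_def by auto
      qed
      then show "w \<in> dual m L" using w unfolding dual_def by auto
    qed
  qed
  have dec: "DecP m (dual m L) (insert j0 J0)"
    unfolding DecP_def
  proof (intro allI impI)
    fix y :: "bool list" assume ly: "length y = m"
    obtain a0 where a0: "length a0 = m" "supp_in J0 a0" "xor_vec y a0 \<in> dual m L0"
      using ex1[OF ly] by blast
    have uniq0: "\<And>a. length a = m \<Longrightarrow> supp_in J0 a \<Longrightarrow> xor_vec y a \<in> dual m L0 \<Longrightarrow> a = a0"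
      using ex1[OF ly] a0 by blast
    let ?P = "\<lambda>a. length a = m \<and> supp_in (insert j0 J0) a \<and> xor_vec y a \<in> dual m L"
    have dx0e: "dotp x0 e" using lx0 j0 by (simp add: e_def dotp_unitv)
    show "\<exists>!a. ?P a"
    proof (rule ex_ex1I)
      show "\<exists>a. ?P a"
      proof (cases "dotp x0 (xor_vec y a0)")
        case False
        then show ?thesis using a0 unfolding dualL supp_in_def by (intro exI[of _ a0]) auto
      next
        case True
        have "xor_vec (xor_vec y a0) e \<in> dual m L0" using dual_xor[OF a0(3) edual L0m] .
        moreover have "\<not> dotp x0 (xor_vec (xor_vec y a0) e)"
          using True dx0e ly a0(1) le lx0 by (simp add: dotp_xor_r)
        moreover have "supp_in (insert j0 J0) (xor_vec a0 e)"
          using a0(1,2) le j0(1) unfolding supp_in_def e_def by (auto simp: unitv_nth)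
        ultimately show ?thesis unfolding dualL using ly a0(1) le
          by (intro exI[of _ "xor_vec a0 e"]) (simp add: xor_assoc)
      qed
    next
      have red: "a[j0 := False] = a0" if Pa: "?P a" for a
      proof (rule uniq0)
        show "length (a[j0 := False]) = m" using Pa by simp
        show "supp_in J0 (a[j0 := False])" using Pa unfolding supp_in_def by (metis length_list_update nth_list_update_eq nth_list_update_neq insertE)
        have "a[j0 := False] = xor_vec a (if a ! j0 then e else zerov m)"
          using Pa j0(1) by (intro nth_equalityI) (auto simp: e_def unitv_nth nth_list_update)
        then have "xor_vec y (a[j0 := False]) = xor_vec (xor_vec y a) (if a ! j0 then e else zerov m)"
          using Pa ly le by (simp add: xor_assoc)
        moreover have "xor_vec y a \<in> dual m L0" using Pa dualL by auto
        ultimately show "xor_vec y (a[j0 := False]) \<in> dual m L0"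
          using dual_xor[OF _ edual L0m] Pa ly by (cases "a ! j0") (auto simp: xor_zero)
      qed
      fix a a' assume Pa: "?P a" and Pa': "?P a'"
      have r: "a[j0 := False] = a'[j0 := False]" using red[OF Pa] red[OF Pa'] by simp
      have ne: "a ! i = a' ! i" if "i \<noteq> j0" for i
        using arg_cong[OF r, of "\<lambda>l. l ! i"] that by simp
      show "a = a'"
      proof (cases "a ! j0 = a' ! j0")
        case True
        then show ?thesis using ne Pa Pa' by (intro nth_equalityI) (simp, metis)
      next
        case False
        have "a' = xor_vec a e"
        proof (intro nth_equalityI)
          show "length a' = length (xor_vec a e)" using Pa Pa' le by simp
          fix i assume i: "i < length a'"
          show "a' ! i = xor_vec a e ! i"
          proof (cases "i = j0")
            case True
            then show ?thesis using False i Pa Pa' le j0(1) by (auto simp: e_def unitv_nth)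
          next
            case ne2: False
            then show ?thesis using ne[OF ne2] i Pa Pa' le j0(1) by (auto simp: e_def unitv_nth)
          qed
        qed
        then have "dotp x0 (xor_vec y a') = (dotp x0 (xor_vec y a) \<noteq> dotp x0 e)"
          using Pa ly le lx0 by (simp add: xor_assoc[symmetric] dotp_xor_r)
        then show ?thesis using Pa Pa' dx0e unfolding dualL by auto
      qed
    qed
  qed
  have "insert j0 J0 \<subseteq> {..<m}" using J0(1) j0(1) by auto
  moreover have "card (insert j0 J0) = Suc k"
    using J0(1,2) j0J0 finite_subset[OF J0(1)] by simp
  ultimately show ?case using dec by blast
qed


definition fT :: "bool \<Rightarrow> complex" where "fT b = (if b then omega else 1)"

definition psiV :: "bool list set \<Rightarrow> nat \<Rightarrow> qstate" where
  "psiV V m = (\<lambda>y. if y \<in> V then T_tensor m y else 0)"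

lemma prod_sg: "(\<Prod>j<(n::nat). sg (b j)) = sg (odd (\<Sum>j<n. if b j then 1 else 0 :: nat))"
  by (induction n) (auto simp: sg_def)

lemma magic_ket_dotp:
  assumes "length x = m" "length y = m"
  shows "magic_ket m x y = sg (dotp x y) * T_tensor m y"
proof -
  have "(\<Prod>j<m. (if y ! j then (if x ! j then - omega else omega) else 1) / complex_of_real (sqrt 2))
      = (\<Prod>j<m. sg (x ! j \<and> y ! j) * ((if y ! j then omega else 1) / complex_of_real (sqrt 2)))"
    by (intro prod.cong) (auto simp: sg_def)
  also have "\<dots> = (\<Prod>j<m. sg (x ! j \<and> y ! j)) * (\<Prod>j<m. (if y ! j then omega else 1) / complex_of_real (sqrt 2))"
    by (rule prod.distrib)
  also have "(\<Prod>j<m. sg (x ! j \<and> y ! j)) = sg (dotp x y)"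
    unfolding prod_sg dotp_def using assms by simp
  finally show ?thesis using assms by (simp add: magic_ket_def T_tensor_def)
qed

lemma char_sum:
  assumes "linear_code m L" "finite L" "length y = m"
  shows "(\<Sum>x\<in>L. sg (dotp x y)) = (if y \<in> dual m L then of_nat (card L) else 0)"
proof (cases "y \<in> dual m L")
  case True
  then have "(\<Sum>x\<in>L. sg (dotp x y)) = (\<Sum>x\<in>L. 1)" unfolding dual_def by (intro sum.cong) auto
  then show ?thesis using True by simp
next
  case False
  have Lm: "L \<subseteq> {x. length x = m}" and cl: "\<And>x z. x \<in> L \<Longrightarrow> z \<in> L \<Longrightarrow> xor_vec x z \<in> L"
    using assms(1) unfolding linear_code_def by auto
  obtain x0 where x0: "x0 \<in> L" "dotp x0 y" using False assms(3) unfolding dual_def by auto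
  have lx0: "length x0 = m" using x0 Lm by auto
  have bij: "bij_betw (xor_vec x0) L L"
  proof (rule bij_betw_imageI)
    show "inj_on (xor_vec x0) L"
    proof (rule inj_onI)
      fix x z assume xz: "x \<in> L" "z \<in> L" "xor_vec x0 x = xor_vec x0 z"
      have "length x = m" "length z = m" using xz(1,2) Lm by auto
      then have "x = xor_vec x0 (xor_vec x0 x)" "z = xor_vec x0 (xor_vec x0 z)" using lx0 by (simp_all add: xor_cancel_l)
      then show "x = z" using xz(3) by simp
    qed
    show "xor_vec x0 ` L = L"
    proof
      show "xor_vec x0 ` L \<subseteq> L" using cl x0(1) by auto
      show "L \<subseteq> xor_vec x0 ` L"
      proof
        fix x assume x: "x \<in> L"
        then have "x = xor_vec x0 (xor_vec x0 x)" using Lm lx0 by (auto simp: xor_cancel_l)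
        then show "x \<in> xor_vec x0 ` L" using cl[OF x0(1) x] by blast
      qed
    qed
  qed
  define S where "S = (\<Sum>x\<in>L. sg (dotp x y))"
  have "S = (\<Sum>x\<in>L. sg (dotp (xor_vec x0 x) y))"
    unfolding S_def using sum.reindex_bij_betw[OF bij, of "\<lambda>x. sg (dotp x y)"] by simp
  also have "\<dots> = (\<Sum>x\<in>L. - sg (dotp x y))"
  proof (intro sum.cong refl)
    fix x assume x: "x \<in> L"
    have "length x = length x0" using x Lm lx0 by auto
    then have "dotp (xor_vec x0 x) y = (dotp x0 y \<noteq> dotp x y)" by (rule dotp_xor_l)
    then show "sg (dotp (xor_vec x0 x) y) = - sg (dotp x y)" using x0(2) by (auto simp: sg_def)
  qed
  also have "\<dots> = - S" unfolding S_def by (simp add: sum_negf)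
  finally have "S = 0" by simp
  then show ?thesis using False S_def by simp
qed

lemma magic_code_psiV:
  assumes "linear_code m L" "code_dim L k"
  shows "magic_code_state m k L = smul (complex_of_real (2 powr (- real k / 2)) * of_nat (card L)) (psiV (dual m L) m)"
proof
  fix y
  have fin: "finite L" using assms(2) unfolding code_dim_def by (intro card_ge_0_finite) simp
  have Lm: "L \<subseteq> {x. length x = m}" using assms(1) unfolding linear_code_def by auto
  show "magic_code_state m k L y = smul (complex_of_real (2 powr (- real k / 2)) * of_nat (card L)) (psiV (dual m L) m) y"
  proof (cases "length y = m")
    case True
    have "(\<Sum>x\<in>L. magic_ket m x y) = (\<Sum>x\<in>L. sg (dotp x y) * T_tensor m y)"
      using Lm True by (intro sum.cong) (auto simp: magic_ket_dotp)
    also have "\<dots> = (\<Sum>x\<in>L. sg (dotp x y)) * T_tensor m y" by (simp add: sum_distrib_right)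
    also have "\<dots> = (if y \<in> dual m L then of_nat (card L) else 0) * T_tensor m y"
      using char_sum[OF assms(1) fin True] by simp
    finally show ?thesis by (simp add: magic_code_state_def smul_def psiV_def)
  next
    case False
    have "magic_ket m x y = 0" for x using False by (simp add: magic_ket_def)
    moreover have "y \<notin> dual m L" using False unfolding dual_def by auto
    ultimately show ?thesis by (simp add: magic_code_state_def smul_def psiV_def)
  qed
qed

lemma valid_magic: "valid m (magic_code_state m k L)"
  by (simp add: valid_def magic_code_state_def magic_ket_def)

lemma valid_psiV: "V \<subseteq> {x. length x = m} \<Longrightarrow> valid m (psiV V m)"
  by (auto simp: valid_def psiV_def T_tensor_def)

lemma rank_psiV_magic:
  assumes "linear_code m L" "code_dim L k"
  shows "stab_rank m (psiV (dual m L) m) \<le> stab_rank m (magic_code_state m k L)"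
proof -
  define c where "c = complex_of_real (2 powr (- real k / 2)) * of_nat (card L)"
  have "card L > 0" using assms(2) unfolding code_dim_def by simp
  then have c0: "c \<noteq> 0" unfolding c_def by simp
  have "psiV (dual m L) m = smul (1 / c) (magic_code_state m k L)"
    using magic_code_psiV[OF assms] c0 unfolding c_def[symmetric] by (simp add: smul_smul smul_1)
  then show ?thesis using rank_smul[OF valid_magic] by metis
qed


definition onesv :: "nat \<Rightarrow> qstate" where "onesv m = (\<lambda>y. if length y = m then 1 else 0)"

lemma decomp_1: "\<Phi> \<in> stab_states n \<Longrightarrow> decomp n (smul c \<Phi>) 1"
  unfolding decomp_def by (intro exI[of _ "\<lambda>_. c"] exI[of _ "\<lambda>_. \<Phi>"]) (auto simp: smul_def)

lemma decomp_ones: "decomp m (onesv m) 1"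
proof (induction m)
  case 0
  have "onesv 0 = smul 1 (ket0 0)" by (auto simp: onesv_def ket0_def smul_def)
  then show ?case using decomp_1[OF stab_states.init] by metis
next
  case (Suc m)
  define o1 where "o1 = smul (complex_of_real (sqrt 2)) (hgate 0 (ket0 1))"
  have d1: "decomp 1 o1 1" unfolding o1_def
    by (intro decomp_1 stab_states.H stab_states.init) simp
  have o1v: "o1 = onesv 1"
  proof
    fix y show "o1 y = onesv 1 y"
    proof (cases "length y = 1")
      case True
      then obtain b where "y = [b]" by (metis One_nat_def length_0_conv length_Suc_conv)
      then show ?thesis by (cases b) (auto simp: o1_def smul_def hgate_def ket0_def onesv_def)
    next
      case False
      then show ?thesis by (auto simp: o1_def smul_def hgate_def ket0_def onesv_def dest!: arg_cong[where f=length])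
    qed
  qed
  have "tensor 1 m (onesv 1) (onesv m) = onesv (Suc m)"
    by (auto simp: tensor_def onesv_def)
  then show ?case using decomp_tensor[OF d1 Suc.IH] o1v by simp
qed

lemma sub_rank:
  assumes "decomp (n + K) \<Psi> r" "affine n K h"
  shows "stab_rank n (\<lambda>y. if length y = n then \<Psi> (y @ h y) else 0) \<le> r"
proof -
  obtain c \<Phi> where d: "\<forall>i<r. \<Phi> i \<in> stab_states (n + K)" "\<Psi> = (\<lambda>x. \<Sum>i<r. c i * \<Phi> i x)"
    using assms(1) unfolding decomp_def by blast
  define F where "F = (\<lambda>i. smul (c i) (\<lambda>y. if length y = n then \<Phi> i (y @ h y) else 0))"
  have "F i \<in> sstab n" if "i \<in> {..<r}" for i
    unfolding F_def using that d(1) by (intro sstab_smul substitution[OF _ assms(2)]) auto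
  moreover have "(\<lambda>y. if length y = n then \<Psi> (y @ h y) else 0) = (\<lambda>y. \<Sum>i\<in>{..<r}. F i y)"
    unfolding F_def d(2) by (auto simp: smul_def)
  ultimately show ?thesis using rank_sstab_sum[of "{..<r}" F n] by simp
qed

lemma prod_add_split: "(\<Prod>i<(a::nat)+b. f i) = (\<Prod>i<a. f i) * (\<Prod>i<b. f (a + i))"
  by (induction b) (auto simp: algebra_simps)

lemma fT_not: "fT b * fT (\<not> b) = omega"
  by (cases b) (auto simp: fT_def)

lemma T_tensor_tt: "length y = m \<Longrightarrow> T_tensor m y = (\<Prod>j<m. fT (y ! j)) / complex_of_real (sqrt 2) ^ m"
  by (simp add: T_tensor_def fT_def prod_dividef)

lemma omega_nz: "omega \<noteq> 0" by (simp add: omega_def)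


lemma supp_in_xor: "supp_in J a \<Longrightarrow> supp_in J b \<Longrightarrow> length a = length b \<Longrightarrow> supp_in J (xor_vec a b)"
  unfolding supp_in_def by auto

lemma supp_in_zero: "supp_in J (zerov m)"
  unfolding supp_in_def by auto

lemma single_shot:
  assumes lin: "linear_code m V" and J: "J \<subseteq> {..<m}" "card J = K" and dec: "DecP m V J"
  shows "stab_rank m (T_tensor m) \<le> stab_rank m (psiV V m) * stab_rank (2 * K) (T_tensor (2 * K))"
proof -
  have Vm: "V \<subseteq> {x. length x = m}" and V0: "zerov m \<in> V" and Vx: "\<And>x y. x \<in> V \<Longrightarrow> y \<in> V \<Longrightarrow> xor_vec x y \<in> V"
    using lin unfolding linear_code_def zerov_def by auto
  define P where "P = (\<lambda>y a. length a = m \<and> supp_in J a \<and> xor_vec y a \<in> V)"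
  define a where "a = (\<lambda>y. THE b. P y b)"
  have ex1: "\<And>y. length y = m \<Longrightarrow> \<exists>!b. P y b" using dec unfolding DecP_def P_def by blast
  have aP: "P y (a y)" if "length y = m" for y unfolding a_def using theI'[OF ex1[OF that]] .
  have aU: "a y = b" if "length y = m" "P y b" for y b unfolding a_def using the1_equality[OF ex1[OF that(1)] that(2)] .
  define v where "v = (\<lambda>y. xor_vec y (a y))"
  have la: "length (a y) = m" if "length y = m" for y using aP[OF that] P_def by simp
  have lv: "length (v y) = m" if "length y = m" for y using la[OF that] that by (simp add: v_def)
  have vV: "v y \<in> V" if "length y = m" for y using aP[OF that] P_def v_def by simp
  have suppa: "supp_in J (a y)" if "length y = m" for y using aP[OF that] P_def by simp
  have a_lin: "a (xor_vec y y') = xor_vec (a y) (a y')" if "length y = m" "length y' = m" for y y'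
  proof (rule aU)
    show "length (xor_vec y y') = m" using that by simp
    have "xor_vec (xor_vec y y') (xor_vec (a y) (a y')) = xor_vec (v y) (v y')"
      using that la by (intro nth_equalityI) (auto simp: v_def)
    then show "P (xor_vec y y') (xor_vec (a y) (a y'))"
      unfolding P_def using that la suppa vV Vx by (auto intro: supp_in_xor)
  qed
  have a0: "a (zerov m) = zerov m"
    by (rule aU) (auto simp: P_def supp_in_zero xor_zero V0)
  have v_nth: "v y ! i = (y ! i \<noteq> a y ! i)" if "length y = m" "i < m" for y i
    using that la by (simp add: v_def)
  have v_off: "v y ! i = y ! i" if "length y = m" "i < m" "i \<notin> J" for y i
    using v_nth[OF that(1,2)] suppa[OF that(1)] that la unfolding supp_in_def by auto
  have aff_v: "aff1 m (\<lambda>y. v y ! i)" if "i < m" for i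
    unfolding aff1_def
  proof (intro allI impI)
    fix y y' :: "bool list" assume y: "length y = m" "length y' = m"
    have "v (xor_vec y y') ! i = ((y ! i \<noteq> y' ! i) \<noteq> (a y ! i \<noteq> a y' ! i))"
      using v_nth[of "xor_vec y y'" i] a_lin[OF y] y la that by simp
    moreover have "v (replicate m False) ! i = False"
      using v_nth[of "zerov m" i] a0 that by (simp add: zerov_def)
    ultimately show "v (xor_vec y y') ! i = ((v y ! i \<noteq> v y' ! i) \<noteq> v (replicate m False) ! i)"
      using v_nth[OF y(1) that] v_nth[OF y(2) that] by auto
  qed
  have aff_y: "aff1 m (\<lambda>y. y ! j)" if "j < m" for j
    unfolding aff1_def using that by auto
  have aff_nv: "aff1 m (\<lambda>y. \<not> v y ! j)" if "j < m" for j
    using aff_v[OF that] unfolding aff1_def by auto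
  define js where "js = sorted_list_of_set J"
  have fJ: "finite J" using J(1) finite_subset by blast
  have js: "set js = J" "distinct js" "length js = K" using fJ J(2) by (auto simp: js_def)
  have jsm: "js ! i < m" if "i < K" for i using js J(1) that by (metis lessThan_iff nth_mem subsetD)
  define h where "h = (\<lambda>y. v y @ map (\<lambda>j. y ! j) js @ map (\<lambda>j. \<not> v y ! j) js)"
  have lh: "length (h y) = m + 2 * K" if "length y = m" for y using lv[OF that] js by (simp add: h_def)
  have aff: "affine m (m + 2 * K) h"
    unfolding affine_def
  proof (intro conjI allI impI)
    fix y :: "bool list" assume "length y = m" then show "length (h y) = m + 2 * K" by (rule lh)
  next
    fix i assume i: "i < m + 2 * K"
    show "aff1 m (\<lambda>y. h y ! i)"
    proof (cases "i < m")
      case True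
      show ?thesis by (rule aff1_cong[OF aff_v[OF True]]) (simp add: h_def nth_append lv True)
    next
      case False
      show ?thesis
      proof (cases "i < m + K")
        case True
        have "aff1 m (\<lambda>y. y ! (js ! (i - m)))" using jsm True False by (intro aff_y) auto
        moreover have "i - m < K" using True False by arith
        ultimately show ?thesis by (rule_tac aff1_cong) (use False True js(3) in \<open>simp_all add: h_def nth_append lv\<close>)
      next
        case False2: False
        have "aff1 m (\<lambda>y. \<not> v y ! (js ! (i - m - K)))" using jsm False2 i by (intro aff_nv) auto
        moreover have "\<not> i - m < K" "i - m - K < K" using False2 i by arith+
        ultimately show ?thesis by (rule_tac aff1_cong) (use False False2 js(3) in \<open>simp_all add: h_def nth_append lv\<close>)
      qed
    qed
  qed
  define \<Psi> where "\<Psi> = tensor m (m + 2 * K) (onesv m) (tensor m (2 * K) (psiV V m) (T_tensor (2 * K)))"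
  define s where "s = complex_of_real (sqrt 2)"
  have s0: "s \<noteq> 0" by (simp add: s_def)
  define tt where "tt = (\<lambda>n u. \<Prod>j<n. fT (u ! j))"
  have keyprod: "tt m (v y) * tt (2 * K) (map (\<lambda>j. y ! j) js @ map (\<lambda>j. \<not> v y ! j) js) = omega ^ K * tt m y"
    if y: "length y = m" for y
  proof -
    define w where "w = map (\<lambda>j. y ! j) js @ map (\<lambda>j. \<not> v y ! j) js"
    have "tt (2 * K) w = (\<Prod>i<K. fT (w ! i)) * (\<Prod>i<K. fT (w ! (K + i)))"
      unfolding tt_def using prod_add_split[of "\<lambda>i. fT (w ! i)" K K] by (simp add: mult_2)
    also have "(\<Prod>i<K. fT (w ! i)) = (\<Prod>i<K. fT (y ! (js ! i)))"
      unfolding w_def using js(3) by (intro prod.cong) (auto simp: nth_append)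
    also have "(\<Prod>i<K. fT (w ! (K + i))) = (\<Prod>i<K. fT (\<not> v y ! (js ! i)))"
      unfolding w_def using js(3) by (intro prod.cong) (auto simp: nth_append)
    finally have tw: "tt (2 * K) w = (\<Prod>i<K. fT (y ! (js ! i))) * (\<Prod>i<K. fT (\<not> v y ! (js ! i)))" .
    have bij: "bij_betw ((!) js) {..<K} J" using bij_betw_nth[OF js(2)] js by simp
    have r1: "(\<Prod>i<K. fT (y ! (js ! i))) = (\<Prod>j\<in>J. fT (y ! j))"
      using prod.reindex_bij_betw[OF bij, of "\<lambda>j. fT (y ! j)"] by simp
    have r2: "(\<Prod>i<K. fT (\<not> v y ! (js ! i))) = (\<Prod>j\<in>J. fT (\<not> v y ! j))"
      using prod.reindex_bij_betw[OF bij, of "\<lambda>j. fT (\<not> v y ! j)"] by simp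
    have sp: "(\<Prod>j<m. f j) = (\<Prod>j\<in>J. f j) * (\<Prod>j\<in>{..<m}-J. f j)" for f :: "nat \<Rightarrow> complex"
      using prod.subset_diff[OF J(1), of f] by (simp add: mult.commute)
    have off: "(\<Prod>j\<in>{..<m}-J. fT (v y ! j)) = (\<Prod>j\<in>{..<m}-J. fT (y ! j))"
      using v_off[OF y] by (intro prod.cong) auto
    have "tt m (v y) * tt (2 * K) w
       = (\<Prod>j\<in>J. fT (v y ! j)) * (\<Prod>j\<in>{..<m}-J. fT (y ! j)) * ((\<Prod>j\<in>J. fT (y ! j)) * (\<Prod>j\<in>J. fT (\<not> v y ! j)))"
    proof -
      have A: "tt m (v y) = (\<Prod>j\<in>J. fT (v y ! j)) * (\<Prod>j\<in>{..<m}-J. fT (y ! j))"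
        unfolding tt_def sp[of "\<lambda>j. fT (v y ! j)"] off ..
      show ?thesis by (simp only: A tw r1 r2)
    qed
    also have "\<dots> = (\<Prod>j\<in>J. fT (v y ! j) * fT (\<not> v y ! j)) * ((\<Prod>j\<in>J. fT (y ! j)) * (\<Prod>j\<in>{..<m}-J. fT (y ! j)))"
      by (simp add: prod.distrib algebra_simps)
    also have "(\<Prod>j\<in>J. fT (v y ! j) * fT (\<not> v y ! j)) = omega ^ K"
      using J(2) by (simp add: fT_not)
    also have "(\<Prod>j\<in>J. fT (y ! j)) * (\<Prod>j\<in>{..<m}-J. fT (y ! j)) = tt m y"
      unfolding tt_def sp ..
    finally show ?thesis unfolding w_def .
  qed
  have Teq: "T_tensor m = smul (s ^ (2 * K) / omega ^ K) (\<lambda>y. if length y = m then \<Psi> (y @ h y) else 0)"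
  proof
    fix y
    show "T_tensor m y = smul (s ^ (2 * K) / omega ^ K) (\<lambda>y. if length y = m then \<Psi> (y @ h y) else 0) y"
    proof (cases "length y = m")
      case True
      have lw: "length (map (\<lambda>j. y ! j) js @ map (\<lambda>j. \<not> v y ! j) js) = 2 * K" using js by simp
      have "\<Psi> (y @ h y) = onesv m y * (psiV V m (v y) * T_tensor (2 * K) (map (\<lambda>j. y ! j) js @ map (\<lambda>j. \<not> v y ! j) js))"
        unfolding \<Psi>_def h_def using True lh[OF True] lv[OF True] lw
        by (simp add: tensor_app tensor_def[of m "2 * K"] h_def)
      also have "\<dots> = tt m (v y) / s ^ m * (tt (2 * K) (map (\<lambda>j. y ! j) js @ map (\<lambda>j. \<not> v y ! j) js) / s ^ (2 * K))"
        using True vV[OF True] lv[OF True] lw by (simp add: onesv_def psiV_def T_tensor_tt tt_def s_def)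
      also have "\<dots> = omega ^ K * tt m y / (s ^ m * s ^ (2 * K))"
        using keyprod[OF True] by (simp add: field_simps)
      finally have e: "\<Psi> (y @ h y) = omega ^ K * tt m y / (s ^ m * s ^ (2 * K))" .
      have "T_tensor m y = tt m y / s ^ m" using True by (simp add: T_tensor_tt tt_def s_def)
      then have t1: "T_tensor m y * s ^ m = tt m y" using s0 by simp
      have t2: "\<Psi> (y @ h y) * (s ^ m * s ^ (2 * K)) = omega ^ K * tt m y" using e s0 by simp
      have "s ^ m * (T_tensor m y * omega ^ K) = s ^ m * (\<Psi> (y @ h y) * s ^ (2 * K))"
        using t1 t2 by (simp add: algebra_simps)
      then have "T_tensor m y * omega ^ K = \<Psi> (y @ h y) * s ^ (2 * K)" using s0 by simp
      then show ?thesis using True omega_nz by (simp add: smul_def field_simps)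
    next
      case False
      then show ?thesis by (simp add: T_tensor_def smul_def)
    qed
  qed
  have vPsi: "valid m (psiV V m)" using Vm by (rule valid_psiV)
  have vT: "valid (2 * K) (T_tensor (2 * K))" by (simp add: valid_def T_tensor_def)
  have dPsi: "decomp (m + (m + 2 * K)) \<Psi> (1 * (stab_rank m (psiV V m) * stab_rank (2 * K) (T_tensor (2 * K))))"
    unfolding \<Psi>_def
    by (intro decomp_tensor decomp_ones rank_decomp vPsi vT)
  have "stab_rank m (\<lambda>y. if length y = m then \<Psi> (y @ h y) else 0) \<le> stab_rank m (psiV V m) * stab_rank (2 * K) (T_tensor (2 * K))"
    using sub_rank[OF dPsi aff] by simp
  moreover have "valid m (\<lambda>y. if length y = m then \<Psi> (y @ h y) else 0)" by (simp add: valid_def)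
  ultimately show ?thesis unfolding Teq using rank_smul order_trans by blast
qed


definition prodset :: "bool list set \<Rightarrow> bool list set \<Rightarrow> bool list set" where
  "prodset V1 V2 = {a @ b | a b. a \<in> V1 \<and> b \<in> V2}"

definition shiftset :: "nat \<Rightarrow> nat set \<Rightarrow> nat set" where
  "shiftset m J = (\<lambda>j. m + j) ` J"

lemma xor_vec_append: "length a = length a' \<Longrightarrow> xor_vec (a @ b) (a' @ b') = xor_vec a a' @ xor_vec b b'"
  by (simp add: xor_vec_def)

lemma prodset_mem:
  assumes "V1 \<subseteq> {x. length x = m1}" "length y = m1 + m2"
  shows "y \<in> prodset V1 V2 \<longleftrightarrow> take m1 y \<in> V1 \<and> drop m1 y \<in> V2"
proof
  assume "y \<in> prodset V1 V2"
  then obtain a b where "y = a @ b" "a \<in> V1" "b \<in> V2" unfolding prodset_def by blast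
  moreover then have "length a = m1" using assms(1) by auto
  ultimately show "take m1 y \<in> V1 \<and> drop m1 y \<in> V2" by simp
next
  assume "take m1 y \<in> V1 \<and> drop m1 y \<in> V2"
  then show "y \<in> prodset V1 V2" unfolding prodset_def by (metis (mono_tags, lifting) append_take_drop_id mem_Collect_eq)
qed

lemma linear_prod:
  assumes "linear_code m1 V1" "linear_code m2 V2"
  shows "linear_code (m1 + m2) (prodset V1 V2)"
proof -
  have V1: "V1 \<subseteq> {x. length x = m1}" "replicate m1 False \<in> V1" "\<And>x y. x \<in> V1 \<Longrightarrow> y \<in> V1 \<Longrightarrow> xor_vec x y \<in> V1"
    using assms(1) unfolding linear_code_def by auto
  have V2: "V2 \<subseteq> {x. length x = m2}" "replicate m2 False \<in> V2" "\<And>x y. x \<in> V2 \<Longrightarrow> y \<in> V2 \<Longrightarrow> xor_vec x y \<in> V2"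
    using assms(2) unfolding linear_code_def by auto
  show ?thesis unfolding linear_code_def
  proof (intro conjI ballI)
    show "prodset V1 V2 \<subseteq> {x. length x = m1 + m2}" using V1(1) V2(1) unfolding prodset_def by (auto simp: subset_iff)
    show "replicate (m1 + m2) False \<in> prodset V1 V2"
      using V1(2) V2(2) unfolding prodset_def by (auto simp: replicate_add)
    fix x y assume x: "x \<in> prodset V1 V2" and y: "y \<in> prodset V1 V2"
    obtain a b where ab: "x = a @ b" "a \<in> V1" "b \<in> V2" using x unfolding prodset_def by blast
    obtain a' b' where ab': "y = a' @ b'" "a' \<in> V1" "b' \<in> V2" using y unfolding prodset_def by blast
    have "length a = length a'" using ab(2) ab'(2) V1(1) by auto
    then have "xor_vec x y = xor_vec a a' @ xor_vec b b'" using ab ab' by (simp add: xor_vec_append)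
    then show "xor_vec x y \<in> prodset V1 V2" using V1(3) V2(3) ab ab' unfolding prodset_def by blast
  qed
qed

lemma dec_prod:
  assumes "linear_code m1 V1" "linear_code m2 V2" "DecP m1 V1 J1" "DecP m2 V2 J2" "J1 \<subseteq> {..<m1}"
  shows "DecP (m1 + m2) (prodset V1 V2) (J1 \<union> shiftset m1 J2)"
  unfolding DecP_def
proof (intro allI impI)
  have V1m: "V1 \<subseteq> {x. length x = m1}" using assms(1) unfolding linear_code_def by auto
  have V2m: "V2 \<subseteq> {x. length x = m2}" using assms(2) unfolding linear_code_def by auto
  fix y :: "bool list" assume ly: "length y = m1 + m2"
  define J where "J = J1 \<union> shiftset m1 J2"
  obtain a1 where a1: "length a1 = m1" "supp_in J1 a1" "xor_vec (take m1 y) a1 \<in> V1"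
    and u1: "\<And>b. length b = m1 \<Longrightarrow> supp_in J1 b \<Longrightarrow> xor_vec (take m1 y) b \<in> V1 \<Longrightarrow> b = a1"
    using assms(3) ly unfolding DecP_def by (metis length_take min.absorb2 le_add1)
  obtain a2 where a2: "length a2 = m2" "supp_in J2 a2" "xor_vec (drop m1 y) a2 \<in> V2"
    and u2: "\<And>b. length b = m2 \<Longrightarrow> supp_in J2 b \<Longrightarrow> xor_vec (drop m1 y) b \<in> V2 \<Longrightarrow> b = a2"
    using assms(4) ly unfolding DecP_def by (metis length_drop add_diff_cancel_left')
  let ?Q = "\<lambda>a. length a = m1 + m2 \<and> supp_in J a \<and> xor_vec y a \<in> prodset V1 V2"
  have split: "xor_vec y a = xor_vec (take m1 y) (take m1 a) @ xor_vec (drop m1 y) (drop m1 a)" if "length a = m1 + m2" for a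
    using that ly by (intro nth_equalityI) (auto simp: nth_append)
  show "\<exists>!a. ?Q a"
  proof (rule ex1I[of _ "a1 @ a2"])
    show "?Q (a1 @ a2)"
    proof (intro conjI)
      show "length (a1 @ a2) = m1 + m2" using a1 a2 by simp
      show "supp_in J (a1 @ a2)"
        unfolding supp_in_def J_def shiftset_def
      proof (intro allI impI)
        fix i assume i: "i < length (a1 @ a2)" and ai: "(a1 @ a2) ! i"
        show "i \<in> J1 \<union> (\<lambda>j. m1 + j) ` J2"
        proof (cases "i < m1")
          case True then show ?thesis using a1 ai unfolding supp_in_def by (auto simp: nth_append)
        next
          case False
          then have "i - m1 \<in> J2" using a1 a2 ai i unfolding supp_in_def by (auto simp: nth_append)
          then show ?thesis using False by (metis UnI2 image_eqI le_add_diff_inverse not_less)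
        qed
      qed
      show "xor_vec y (a1 @ a2) \<in> prodset V1 V2"
        using split[of "a1 @ a2"] a1 a2 unfolding prodset_def by auto
    qed
  next
    fix a assume Qa: "?Q a"
    have la: "length a = m1 + m2" using Qa by simp
    have xs: "xor_vec (take m1 y) (take m1 a) \<in> V1 \<and> xor_vec (drop m1 y) (drop m1 a) \<in> V2"
    proof -
      have "xor_vec y a \<in> prodset V1 V2" using Qa by simp
      moreover have "length (xor_vec y a) = m1 + m2" using la ly by simp
      ultimately have "take m1 (xor_vec y a) \<in> V1 \<and> drop m1 (xor_vec y a) \<in> V2"
        using prodset_mem[OF V1m] by blast
      then show ?thesis using split[OF la] la ly by simp
    qed
    have "take m1 a = a1"
    proof (rule u1)
      show "length (take m1 a) = m1" using la by simp
      show "supp_in J1 (take m1 a)"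
        unfolding supp_in_def
      proof (intro allI impI)
        fix i assume i: "i < length (take m1 a)" and ai: "take m1 a ! i"
        have im: "i < m1" using i by simp
        then have "i \<in> J" using Qa i ai unfolding supp_in_def by auto
        then show "i \<in> J1" using im unfolding J_def shiftset_def by auto
      qed
      show "xor_vec (take m1 y) (take m1 a) \<in> V1" using xs by simp
    qed
    moreover have "drop m1 a = a2"
    proof (rule u2)
      show "length (drop m1 a) = m2" using la by simp
      show "supp_in J2 (drop m1 a)"
        unfolding supp_in_def
      proof (intro allI impI)
        fix i assume i: "i < length (drop m1 a)" and ai: "drop m1 a ! i"
        have "m1 + i \<in> J" using Qa i ai unfolding supp_in_def by auto
        then show "i \<in> J2" using assms(5) unfolding J_def shiftset_def by auto
      qed
      show "xor_vec (drop m1 y) (drop m1 a) \<in> V2" using xs by simp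
    qed
    ultimately show "a = a1 @ a2" by (metis append_take_drop_id)
  qed
qed

lemma card_shift:
  assumes "J1 \<subseteq> {..<m1}" "finite J1" "finite J2"
  shows "card (J1 \<union> shiftset m1 J2) = card J1 + card J2"
proof -
  have "J1 \<inter> shiftset m1 J2 = {}" using assms(1) unfolding shiftset_def by auto
  moreover have "card (shiftset m1 J2) = card J2" unfolding shiftset_def by (simp add: card_image)
  ultimately show ?thesis using assms by (simp add: card_Un_disjoint shiftset_def)
qed

lemma T_split:
  assumes "length y = m1 + m2"
  shows "T_tensor (m1 + m2) y = T_tensor m1 (take m1 y) * T_tensor m2 (drop m1 y)"
  using assms prod_add_split[of "\<lambda>j. (if y ! j then omega else 1) / complex_of_real (sqrt 2)" m1 m2]
  by (simp add: T_tensor_def)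

lemma psiV_prod:
  assumes "V1 \<subseteq> {x. length x = m1}" "V2 \<subseteq> {x. length x = m2}"
  shows "psiV (prodset V1 V2) (m1 + m2) = tensor m1 m2 (psiV V1 m1) (psiV V2 m2)"
proof
  fix y
  show "psiV (prodset V1 V2) (m1 + m2) y = tensor m1 m2 (psiV V1 m1) (psiV V2 m2) y"
  proof (cases "length y = m1 + m2")
    case True
    then show ?thesis using prodset_mem[OF assms(1) True, of V2] T_split[OF True]
      by (simp add: psiV_def tensor_def)
  next
    case False
    have "y \<notin> prodset V1 V2" using False assms unfolding prodset_def by (auto simp: subset_iff)
    then show ?thesis using False by (simp add: psiV_def tensor_def)
  qed
qed

fun Vp :: "bool list set \<Rightarrow> nat \<Rightarrow> bool list set" where
  "Vp V 0 = {[]}"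
| "Vp V (Suc t) = prodset V (Vp V t)"

fun Jp :: "nat \<Rightarrow> nat set \<Rightarrow> nat \<Rightarrow> nat set" where
  "Jp m J 0 = {}"
| "Jp m J (Suc t) = J \<union> shiftset m (Jp m J t)"

lemma power_props:
  assumes "linear_code m V" "J \<subseteq> {..<m}" "card J = K" "DecP m V J"
  shows "linear_code (m * t) (Vp V t) \<and> DecP (m * t) (Vp V t) (Jp m J t) \<and> Jp m J t \<subseteq> {..<m * t}
         \<and> card (Jp m J t) = K * t \<and> stab_rank (m * t) (psiV (Vp V t) (m * t)) \<le> stab_rank m (psiV V m) ^ t"
proof (induction t)
  case 0
  have lc: "linear_code 0 {[]}" unfolding linear_code_def by (simp add: xor_vec_def)
  have dc: "DecP 0 {[]} {}" unfolding DecP_def by (auto simp: xor_vec_def supp_in_def)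
  have "psiV {[]} 0 = smul 1 (ket0 0)" by (auto simp: psiV_def ket0_def smul_def T_tensor_def)
  then have "decomp 0 (psiV {[]} 0) 1" using decomp_1[OF stab_states.init] by metis
  then have "stab_rank 0 (psiV {[]} 0) \<le> 1" by (rule rank_le)
  then show ?case using lc dc by simp
next
  case (Suc t)
  have IH: "linear_code (m * t) (Vp V t)" "DecP (m * t) (Vp V t) (Jp m J t)" "Jp m J t \<subseteq> {..<m * t}"
    "card (Jp m J t) = K * t" "stab_rank (m * t) (psiV (Vp V t) (m * t)) \<le> stab_rank m (psiV V m) ^ t"
    using Suc.IH by auto
  have ms: "m * Suc t = m + m * t" by simp
  have Vm: "V \<subseteq> {x. length x = m}" using assms(1) unfolding linear_code_def by auto
  have Vtm: "Vp V t \<subseteq> {x. length x = m * t}" using IH(1) unfolding linear_code_def by auto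
  have fJ: "finite J" using assms(2) finite_subset by blast
  have fJt: "finite (Jp m J t)" using IH(3) finite_subset by blast
  have l: "linear_code (m * Suc t) (Vp V (Suc t))" unfolding ms using linear_prod[OF assms(1) IH(1)] by simp
  have d: "DecP (m * Suc t) (Vp V (Suc t)) (Jp m J (Suc t))"
    unfolding ms using dec_prod[OF assms(1) IH(1) assms(4) IH(2) assms(2)] by simp
  have s: "Jp m J (Suc t) \<subseteq> {..<m * Suc t}" using assms(2) IH(3) unfolding ms by (auto simp: shiftset_def)
  have c: "card (Jp m J (Suc t)) = K * Suc t" using card_shift[OF assms(2) fJ fJt] assms(3) IH(4) by simp
  have "psiV (Vp V (Suc t)) (m * Suc t) = tensor m (m * t) (psiV V m) (psiV (Vp V t) (m * t))"
    unfolding ms using psiV_prod[OF Vm Vtm] by simp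
  then have "stab_rank (m * Suc t) (psiV (Vp V (Suc t)) (m * Suc t)) \<le> stab_rank m (psiV V m) * stab_rank (m * t) (psiV (Vp V t) (m * t))"
    using rank_tensor[OF valid_psiV[OF Vm] valid_psiV[OF Vtm]] unfolding ms by simp
  also have "\<dots> \<le> stab_rank m (psiV V m) * stab_rank m (psiV V m) ^ t" using IH(5) by simp
  finally show ?case using l d s c by simp
qed

lemma main_ineq:
  assumes "linear_code m V" "J \<subseteq> {..<m}" "card J = K" "DecP m V J"
  shows "stab_rank (m * t) (T_tensor (m * t)) \<le> stab_rank m (psiV V m) ^ t * stab_rank (2 * K * t) (T_tensor (2 * K * t))"
proof -
  have p: "linear_code (m * t) (Vp V t)" "DecP (m * t) (Vp V t) (Jp m J t)" "Jp m J t \<subseteq> {..<m * t}"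
    "card (Jp m J t) = K * t" "stab_rank (m * t) (psiV (Vp V t) (m * t)) \<le> stab_rank m (psiV V m) ^ t"
    using power_props[OF assms] by auto
  have "stab_rank (m * t) (T_tensor (m * t)) \<le> stab_rank (m * t) (psiV (Vp V t) (m * t)) * stab_rank (2 * (K * t)) (T_tensor (2 * (K * t)))"
    by (rule single_shot[OF p(1) p(3) p(4) p(2)])
  also have "\<dots> \<le> stab_rank m (psiV V m) ^ t * stab_rank (2 * (K * t)) (T_tensor (2 * (K * t)))"
    using p(5) by (rule mult_right_mono) simp
  finally show ?thesis by (simp add: mult.assoc)
qed


lemma growth_bound:
  fixes r c E :: real and D T0 :: nat
  assumes r: "r > 1" and c: "c > 0" and b: "\<forall>t\<ge>T0. c * r ^ t \<le> E * (1 + real t) ^ D"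
  shows False
proof -
  have E: "E > 0"
  proof (rule ccontr)
    assume "\<not> E > 0"
    then have "E * (1 + real T0) ^ D \<le> 0" by (simp add: mult_nonpos_nonneg)
    moreover have "c * r ^ T0 > 0" using r c by simp
    ultimately show False using b by force
  qed
  define a where "a = ln r"
  have a: "a > 0" using r unfolding a_def by simp
  have lim1: "filterlim (\<lambda>t::nat. a * real t) at_top sequentially"
    by (rule filterlim_tendsto_pos_mult_at_top[OF tendsto_const a filterlim_real_sequentially])
  have lim: "((\<lambda>t::nat. (a * real t) ^ D / exp (a * real t)) \<longlongrightarrow> 0) sequentially"
    using filterlim_compose[OF tendsto_power_div_exp_0 lim1] by simp
  define \<epsilon> where "\<epsilon> = c * a ^ D / (E * 2 ^ D)"
  have \<epsilon>: "\<epsilon> > 0" unfolding \<epsilon>_def using c a E by simp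
  have "eventually (\<lambda>t. (a * real t) ^ D / exp (a * real t) < \<epsilon>) sequentially"
    using order_tendstoD(2)[OF lim \<epsilon>] .
  then obtain N where N: "\<And>t. t \<ge> N \<Longrightarrow> (a * real t) ^ D / exp (a * real t) < \<epsilon>"
    unfolding eventually_sequentially by blast
  define t where "t = max N (max T0 1)"
  have t1: "t \<ge> 1" "t \<ge> T0" "t \<ge> N" unfolding t_def by auto
  have ex: "exp (a * real t) = r ^ t"
  proof -
    have "exp (a * real t) = exp (real t * a)" by (simp add: mult.commute)
    also have "\<dots> = exp a ^ t" by (rule exp_of_nat_mult)
    also have "exp a = r" unfolding a_def using r by simp
    finally show ?thesis .
  qed
  have "c * r ^ t \<le> E * (1 + real t) ^ D" using b t1 by simp
  also have "(1 + real t) ^ D \<le> (2 * real t) ^ D" using t1 by (intro power_mono) auto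
  finally have "c * r ^ t \<le> E * (2 * real t) ^ D" using E by (simp add: mult_left_mono order_trans)
  then have "c * exp (a * real t) \<le> E * 2 ^ D * real t ^ D" using ex by (simp add: power_mult_distrib)
  then have "c * a ^ D * exp (a * real t) \<le> E * 2 ^ D * (a * real t) ^ D"
    using a by (simp add: power_mult_distrib)
  then have "\<epsilon> \<le> (a * real t) ^ D / exp (a * real t)"
    unfolding \<epsilon>_def using E by (simp add: field_simps)
  then show False using N[OF t1(3)] by simp
qed

lemma poly_bound: "\<bar>poly p (x::real)\<bar> \<le> (\<Sum>i\<le>degree p. \<bar>coeff p i\<bar>) * (1 + \<bar>x\<bar>) ^ degree p"
proof -
  have "\<bar>poly p x\<bar> = \<bar>\<Sum>i\<le>degree p. coeff p i * x ^ i\<bar>" by (simp add: poly_altdef)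
  also have "\<dots> \<le> (\<Sum>i\<le>degree p. \<bar>coeff p i * x ^ i\<bar>)" by (rule sum_abs)
  also have "\<dots> \<le> (\<Sum>i\<le>degree p. \<bar>coeff p i\<bar> * (1 + \<bar>x\<bar>) ^ degree p)"
  proof (intro sum_mono)
    fix i assume i: "i \<in> {..degree p}"
    have "\<bar>x\<bar> ^ i \<le> (1 + \<bar>x\<bar>) ^ i" by (intro power_mono) auto
    also have "\<dots> \<le> (1 + \<bar>x\<bar>) ^ degree p" using i by (intro power_increasing) auto
    finally show "\<bar>coeff p i * x ^ i\<bar> \<le> \<bar>coeff p i\<bar> * (1 + \<bar>x\<bar>) ^ degree p"
      by (simp add: abs_mult power_abs mult_left_mono)
  qed
  also have "\<dots> = (\<Sum>i\<le>degree p. \<bar>coeff p i\<bar>) * (1 + \<bar>x\<bar>) ^ degree p" by (simp add: sum_distrib_right)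
  finally show ?thesis .
qed


lemma rank_T0: "stab_rank 0 (T_tensor 0) \<le> 1"
proof -
  have "T_tensor 0 = smul 1 (ket0 0)" by (auto simp: T_tensor_def ket0_def smul_def)
  then have "decomp 0 (T_tensor 0) 1" using decomp_1[OF stab_states.init] by metis
  then show ?thesis by (rule rank_le)
qed

lemma powr_split:
  fixes g d :: real and t a b :: nat
  shows "(2::real) powr (g * (d * real t + e * real t)) = (2 powr (g * d)) ^ t * 2 powr (g * e * real t)"
proof -
  have "(2::real) powr (g * (d * real t + e * real t)) = 2 powr (g * d * real t) * 2 powr (g * e * real t)"
    by (simp add: powr_add[symmetric] algebra_simps)
  also have "2 powr (g * d * real t) = (2 powr (g * d)) powr real t" by (simp add: powr_powr)
  also have "\<dots> = (2 powr (g * d)) ^ t" by (simp add: powr_realpow)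
  finally show ?thesis .
qed

theorem theorem4:
  fixes \<gamma> :: real
  assumes "\<gamma> > 0"
    and "\<exists>p q :: real poly. p \<noteq> 0 \<and>
           (\<lambda>n. real (stab_rank n (T_tensor n))) \<in> \<Omega>(\<lambda>n. 2 powr (\<gamma> * real n) / poly p (real n)) \<and>
           (\<lambda>n. real (stab_rank n (T_tensor n))) \<in> O(\<lambda>n. poly q (real n) * 2 powr (\<gamma> * real n))"
  shows "\<forall>(m::nat) (k::nat) L. linear_code m L \<and> code_dim L k \<and> real k < real m / 2 \<longrightarrow>
           \<gamma> \<le> log 2 (real (stab_rank m (magic_code_state m k L))) / (real m - 2 * real k)"
proof (intro allI impI)
  fix m k :: nat and L assume H: "linear_code m L \<and> code_dim L k \<and> real k < real m / 2"
  have lin: "linear_code m L" and cd: "code_dim L k" using H by auto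
  have km: "2 * k < m" using H by linarith
  define d where "d = real m - 2 * real k"
  have d: "d > 0" unfolding d_def using km by linarith
  obtain p q :: "real poly" where p0: "p \<noteq> 0"
    and om: "(\<lambda>n. real (stab_rank n (T_tensor n))) \<in> \<Omega>(\<lambda>n. 2 powr (\<gamma> * real n) / poly p (real n))"
    and bo: "(\<lambda>n. real (stab_rank n (T_tensor n))) \<in> O(\<lambda>n. poly q (real n) * 2 powr (\<gamma> * real n))"
    using assms(2) by blast
  define R where "R = (\<lambda>n. real (stab_rank n (T_tensor n)))"
  obtain c where c: "c > 0" and ev1: "eventually (\<lambda>n. norm (R n) \<ge> c * norm (2 powr (\<gamma> * real n) / poly p (real n))) sequentially"
    using om unfolding bigomega_def R_def by auto
  obtain C where C: "C > 0" and ev2: "eventually (\<lambda>n. norm (R n) \<le> C * norm (poly q (real n) * 2 powr (\<gamma> * real n))) sequentially"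
    using bo unfolding bigo_def R_def by auto
  obtain N1 where N1: "\<And>n. n \<ge> N1 \<Longrightarrow> c * \<bar>2 powr (\<gamma> * real n) / poly p (real n)\<bar> \<le> R n"
    using ev1 unfolding eventually_sequentially R_def by auto
  obtain N2 where N2: "\<And>n. n \<ge> N2 \<Longrightarrow> R n \<le> C * (\<bar>poly q (real n)\<bar> * 2 powr (\<gamma> * real n))"
    using ev2 unfolding eventually_sequentially R_def by (auto simp: abs_mult)
  have fr: "finite {x. poly p x = 0}" using p0 by (rule poly_roots_finite)
  define M where "M = Max (insert 0 {x. poly p x = 0})"
  have M: "x \<le> M" if "poly p x = 0" for x unfolding M_def using fr that by (intro Max_ge) auto
  define N0 where "N0 = nat \<lceil>M\<rceil> + 1"
  have N0: "poly p (real n) \<noteq> 0" if "n \<ge> N0" for n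
  proof
    assume "poly p (real n) = 0"
    then have "real n \<le> M" by (rule M)
    moreover have "real n > M" using that unfolding N0_def by linarith
    ultimately show False by simp
  qed
  have Rnn: "R n \<ge> 0" for n unfolding R_def by simp
  define V where "V = dual m L"
  have Lm: "L \<subseteq> {x. length x = m}" using lin unfolding linear_code_def by auto
  have linV: "linear_code m V" unfolding V_def using Lm by (rule linear_dual)
  obtain J where J: "J \<subseteq> {..<m}" "card J = k" "DecP m V J"
    using info_set[OF lin] cd unfolding code_dim_def V_def by blast
  define X where "X = stab_rank m (magic_code_state m k L)"
  have AX: "stab_rank m (psiV V m) \<le> X" unfolding X_def V_def using rank_psiV_magic[OF lin cd] .
  have ineq: "R (m * t) \<le> real X ^ t * R (2 * k * t)" for t
  proof -
    have "stab_rank (m * t) (T_tensor (m * t)) \<le> stab_rank m (psiV V m) ^ t * stab_rank (2 * k * t) (T_tensor (2 * k * t))"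
      by (rule main_ineq[OF linV J(1) J(2) J(3)])
    also have "\<dots> \<le> X ^ t * stab_rank (2 * k * t) (T_tensor (2 * k * t))"
      using AX by (intro mult_right_mono power_mono) auto
    finally have "real (stab_rank (m * t) (T_tensor (m * t))) \<le> real (X ^ t * stab_rank (2 * k * t) (T_tensor (2 * k * t)))"
      by (simp only: of_nat_le_iff)
    then show ?thesis unfolding R_def by simp
  qed
  have up: "R (2 * k * t) \<le> (1 + C * \<bar>poly q (real (2 * k * t))\<bar>) * 2 powr (\<gamma> * real (2 * k * t))" if "t \<ge> N2" "t \<ge> 1" for t
  proof (cases "k = 0")
    case True
    have "R 0 \<le> 1" unfolding R_def using rank_T0 by simp
    moreover have "0 \<le> C * \<bar>poly q 0\<bar>" using C by simp
    ultimately show ?thesis using True by simp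
  next
    case False
    have le: "t \<le> 2 * k * t" using mult_le_mono1[of 1 "2 * k" t] False by simp
    then have "2 * k * t \<ge> N2" using that by linarith
    then have a1: "R (2 * k * t) \<le> C * (\<bar>poly q (real (2 * k * t))\<bar> * 2 powr (\<gamma> * real (2 * k * t)))" by (rule N2)
    have a2: "0 \<le> (2::real) powr (\<gamma> * real (2 * k * t))" by simp
    have a3: "(1 + C * \<bar>poly q (real (2 * k * t))\<bar>) * 2 powr (\<gamma> * real (2 * k * t))
      = 2 powr (\<gamma> * real (2 * k * t)) + C * (\<bar>poly q (real (2 * k * t))\<bar> * 2 powr (\<gamma> * real (2 * k * t)))"
      by (simp add: algebra_simps)
    show ?thesis unfolding a3 using a1 a2 by linarith
  qed
  define B where "B = 2 powr (\<gamma> * d)"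
  have B0: "B > 0" unfolding B_def by simp
  define Sp where "Sp = (\<Sum>i\<le>degree p. \<bar>coeff p i\<bar>) * (1 + real m) ^ degree p"
  define Sq where "Sq = (\<Sum>i\<le>degree q. \<bar>coeff q i\<bar>) * (1 + 2 * real k) ^ degree q"
  have Sp0: "Sp \<ge> 0" "Sq \<ge> 0" unfolding Sp_def Sq_def by (auto intro!: mult_nonneg_nonneg sum_nonneg)
  have pb: "\<bar>poly p (real (m * t))\<bar> \<le> Sp * (1 + real t) ^ degree p" for t
  proof -
    have "\<bar>poly p (real (m * t))\<bar> \<le> (\<Sum>i\<le>degree p. \<bar>coeff p i\<bar>) * (1 + real (m * t)) ^ degree p"
      using poly_bound[of p "real (m * t)"] by simp
    also have "(1 + real (m * t)) ^ degree p \<le> ((1 + real m) * (1 + real t)) ^ degree p"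
      by (intro power_mono) (auto simp: algebra_simps)
    finally show ?thesis unfolding Sp_def
      by (simp add: power_mult_distrib mult.assoc mult_left_mono sum_nonneg order_trans)
  qed
  have qb: "\<bar>poly q (real (2 * k * t))\<bar> \<le> Sq * (1 + real t) ^ degree q" for t
  proof -
    have "\<bar>poly q (real (2 * k * t))\<bar> \<le> (\<Sum>i\<le>degree q. \<bar>coeff q i\<bar>) * (1 + real (2 * k * t)) ^ degree q"
      using poly_bound[of q "real (2 * k * t)"] by simp
    also have "(1 + real (2 * k * t)) ^ degree q \<le> ((1 + 2 * real k) * (1 + real t)) ^ degree q"
      by (intro power_mono) (auto simp: algebra_simps)
    finally show ?thesis unfolding Sq_def
      by (simp add: power_mult_distrib mult.assoc mult_left_mono sum_nonneg order_trans)
  qed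
  define E where "E = (1 + C * Sq) * Sp"
  define D where "D = degree p + degree q"
  define T0 where "T0 = max N0 (max N1 N2) + 1"
  have main: "c * B ^ t \<le> real X ^ t * (E * (1 + real t) ^ D)" if t: "t \<ge> T0" for t
  proof -
    have t1: "t \<ge> 1" "t \<ge> N2" using t unfolding T0_def by auto
    have m1: "m \<ge> 1" using km by simp
    have tm: "t \<le> m * t" using mult_le_mono1[of 1 m t] m1 by simp
    have "N0 \<le> t" "N1 \<le> t" using t unfolding T0_def by auto
    then have mt: "m * t \<ge> N0" "m * t \<ge> N1" using tm by linarith+
    have pn: "poly p (real (m * t)) \<noteq> 0" using N0[OF mt(1)] .
    have "c * \<bar>2 powr (\<gamma> * real (m * t)) / poly p (real (m * t))\<bar> \<le> R (m * t)" using N1[OF mt(2)] .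
    then have low: "c * 2 powr (\<gamma> * real (m * t)) \<le> R (m * t) * \<bar>poly p (real (m * t))\<bar>"
      using pn by (simp add: field_simps abs_div)
    have Rup: "R (m * t) \<le> real X ^ t * ((1 + C * \<bar>poly q (real (2 * k * t))\<bar>) * 2 powr (\<gamma> * real (2 * k * t)))"
    proof -
      have "real X ^ t * R (2 * k * t) \<le> real X ^ t * ((1 + C * \<bar>poly q (real (2 * k * t))\<bar>) * 2 powr (\<gamma> * real (2 * k * t)))"
        using up[OF t1(2) t1(1)] by (rule mult_left_mono) simp
      then show ?thesis using ineq[of t] by linarith
    qed
    then have "c * 2 powr (\<gamma> * real (m * t)) \<le> real X ^ t * ((1 + C * \<bar>poly q (real (2 * k * t))\<bar>) * 2 powr (\<gamma> * real (2 * k * t))) * \<bar>poly p (real (m * t))\<bar>"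
    proof -
      have "R (m * t) * \<bar>poly p (real (m * t))\<bar> \<le> real X ^ t * ((1 + C * \<bar>poly q (real (2 * k * t))\<bar>) * 2 powr (\<gamma> * real (2 * k * t))) * \<bar>poly p (real (m * t))\<bar>"
        using Rup by (rule mult_right_mono) simp
      then show ?thesis using low by linarith
    qed
    moreover have "2 powr (\<gamma> * real (m * t)) = B ^ t * 2 powr (\<gamma> * real (2 * k * t))"
    proof -
      have "real (m * t) = d * real t + 2 * real k * real t" unfolding d_def by (simp add: algebra_simps)
      then show ?thesis unfolding B_def using powr_split[of \<gamma> d t "2 * real k"] by (simp add: algebra_simps)
    qed
    ultimately have "c * B ^ t * 2 powr (\<gamma> * real (2 * k * t)) \<le> (real X ^ t * ((1 + C * \<bar>poly q (real (2 * k * t))\<bar>) * \<bar>poly p (real (m * t))\<bar>)) * 2 powr (\<gamma> * real (2 * k * t))"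
      by (simp add: algebra_simps)
    then have e1: "c * B ^ t \<le> real X ^ t * ((1 + C * \<bar>poly q (real (2 * k * t))\<bar>) * \<bar>poly p (real (m * t))\<bar>)"
      by (simp add: mult_le_cancel_right)
    have "(1 + C * \<bar>poly q (real (2 * k * t))\<bar>) \<le> (1 + C * Sq) * (1 + real t) ^ degree q"
    proof -
      have "1 + C * \<bar>poly q (real (2 * k * t))\<bar> \<le> 1 + C * (Sq * (1 + real t) ^ degree q)"
        using qb[of t] C by simp
      also have "\<dots> \<le> (1 + real t) ^ degree q + C * Sq * (1 + real t) ^ degree q"
        by (simp add: one_le_power)
      finally show ?thesis by (simp add: algebra_simps)
    qed
    moreover have "\<bar>poly p (real (m * t))\<bar> \<le> Sp * (1 + real t) ^ degree p" by (rule pb)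
    ultimately have "(1 + C * \<bar>poly q (real (2 * k * t))\<bar>) * \<bar>poly p (real (m * t))\<bar> \<le> ((1 + C * Sq) * (1 + real t) ^ degree q) * (Sp * (1 + real t) ^ degree p)"
      using C Sp0 by (intro mult_mono) auto
    also have "\<dots> = E * (1 + real t) ^ D" unfolding E_def D_def by (simp add: power_add algebra_simps)
    finally have "(1 + C * \<bar>poly q (real (2 * k * t))\<bar>) * \<bar>poly p (real (m * t))\<bar> \<le> E * (1 + real t) ^ D" .
    then have "real X ^ t * ((1 + C * \<bar>poly q (real (2 * k * t))\<bar>) * \<bar>poly p (real (m * t))\<bar>) \<le> real X ^ t * (E * (1 + real t) ^ D)"
      by (rule mult_left_mono) simp
    then show ?thesis using e1 by linarith
  qed
  have BX: "B \<le> real X"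
  proof (rule ccontr)
    assume nB: "\<not> B \<le> real X"
    show False
    proof (cases "X = 0")
      case True
      have "c * B ^ T0 \<le> 0" using main[of T0] True unfolding T0_def by simp
      moreover have "c * B ^ T0 > 0" using c B0 by simp
      ultimately show False by simp
    next
      case False
      then have X0: "real X > 0" by simp
      define r where "r = B / real X"
      have r: "r > 1" unfolding r_def using nB X0 by simp
      have "\<forall>t\<ge>T0. c * r ^ t \<le> E * (1 + real t) ^ D"
      proof (intro allI impI)
        fix t assume "t \<ge> T0"
        then have "c * B ^ t \<le> real X ^ t * (E * (1 + real t) ^ D)" by (rule main)
        moreover have "B ^ t = r ^ t * real X ^ t" unfolding r_def using X0 by (simp add: power_divide)
        ultimately have "real X ^ t * (c * r ^ t) \<le> real X ^ t * (E * (1 + real t) ^ D)" by (simp add: algebra_simps)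
        then show "c * r ^ t \<le> E * (1 + real t) ^ D" using X0 by simp
      qed
      then show False using growth_bound[OF r c] by blast
    qed
  qed
  have "\<gamma> * d = log 2 B" unfolding B_def by simp
  also have "\<dots> \<le> log 2 (real X)" using BX B0 by simp
  finally have "\<gamma> * d \<le> log 2 (real X)" .
  then show "\<gamma> \<le> log 2 (real (stab_rank m (magic_code_state m k L))) / (real m - 2 * real k)"
    using d unfolding X_def d_def by (simp add: pos_le_divide_eq)
qed


end
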